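(* In the setting described in the context, assume the problem is extremely ill-posed, i.e. $a_k\asymp e^{-pk^s}$ as $k\to\infty$ with $p>0$ and $s\ge1$, and let $\beta>0$. Take $\lambda_k=\rho_n^2k^{-1-2\alpha}$ with $\alpha>0$ and any positive sequence $\rho_n$ with $\rho_n^2n\to\infty$. Then for any $K>0$ and any $M_n\to\infty$, \[\sup_{f_0\in S^\beta:\|f_0\|_\beta\le K}\mathbb{E}_{f_0}\Pi_n\big(f:\|f-f_0\|_{H_1}\ge M_n\varepsilon_n\mid U^n\big)\to 0,\] where \[\varepsilon_n=\varepsilon_{n,1}\vee\varepsilon_{n,2}=(\log(\rho_n^2n))^{-\beta/s}\vee\rho_n(\log(\rho_n^2n))^{-\alpha/s}.\] In particular: (i) if $\rho_n=1$, then $\varepsilon_n=(\log n)^{-(\alpha\wedge\beta)/s}$; (ii) if $n^{-1/2+\delta}\lesssim\rho_n\lesssim(\log n)^{(\alpha-\beta)/s}$ for some $\delta>0$, then $\varepsilon_n=(\log n)^{-\beta/s}$. Furthermore, if instead $\lambda_k=\exp(-\alpha k^s)$ with $\alpha>0$, the same convergence holds with $\varepsilon_n=(\log n)^{-\beta/s}$.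
   Context: Let $H_1,H_2\subset L^2([0,1])$ be Hilbert spaces of functions on $[0,1]$ and $A:H_1\to H_2$ an injective compact linear operator. Let $\{\varphi_k\}_{k\ge1}$ be an orthonormal eigenbasis of $A^*A$ in $H_1$, $A^*A\varphi_k=a_k^2\varphi_k$ with $a_k>0$, and let $\psi_k:=A\varphi_k/a_k$ (an orthonormal system, $A\varphi_k=a_k\psi_k$). For $f\in H_1$ write $f_k=\langle f,\varphi_k\rangle$, identify $f$ with $(f_k)_k$, so $\|f\|_{H_1}^2=\sum_kf_k^2$. For $\beta\ge0$, $S^\beta$ is the set of $f=\sum_kf_k\varphi_k$ with $\|f\|_\beta:=(\sum_k f_k^2k^{2\beta})^{1/2}<\infty$. Observations: for $n\ge2$, design points $x_i=i/n$, and $Y_i=Af(x_i)+\xi_i$, $i=1,\dots,n$, with $\xi_i$ i.i.d. $\mathcal N(0,1)$ ($Af$ continuous). Put $\langle g,h\rangle_d:=\frac1n\sum_{i=1}^ng(x_i)h(x_i)$. Standing assumption on the conjugate basis: (i) $\langle\psi_j,\psi_k\rangle_d=\delta_{jk}$ for $1\le j,k\le n-1$; (ii) for $1\le k\le n-1$ and fixed $l\in\mathbb N$, among $j\in\{ln,\dots,(l+1)n-1\}$ there is exactly one $\tilde j=ln+\bar k$ ($\bar k$ depending only on the parity of $l$) with $0<|\langle\psi_{\tilde j},\psi_k\rangle_d|<M$ for a fixed constant $M$, and $\langle\psi_j,\psi_k\rangle_d=0$ for all other such $j$. Transformed data: $U_k:=\frac1n\sum_{i=1}^nY_i\psi_k(x_i)$,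 $k=1,\dots,n-1$, $U^n=(U_1,\dots,U_{n-1})$; thus $U_k=a_kf_k+R_k(f)+\zeta_k/\sqrt n$ with $R_k(f)=\langle A\sum_{j\ge n}f_j\varphi_j,\psi_k\rangle_d$ and $\zeta_k=n^{-1/2}\sum_{i=1}^n\xi_i\psi_k(x_i)$. $\mathbb E_{f_0}$ denotes expectation when the data are generated with $f=f_0$. Prior: $f_k\sim\mathcal N(0,\lambda_k)$ independently for $k<n$, $f_k=0$ for $k\ge n$, independent of the noise. The posterior is $\Pi_n(\cdot\mid U^n)=\bigotimes_{k\in\mathbb N}\mathcal N(\hat f_k,\sigma_k^2)$ (on coefficients) with $\hat f_k=\frac{na_k\lambda_k\mathbf 1\{k<n\}}{na_k^2\lambda_k+1}U_k$, $\sigma_k^2=\frac{\lambda_k\mathbf 1\{k<n\}}{na_k^2\lambda_k+1}$. Notation: $a\vee b=\max$, $a\wedge b=\min$; $a_n\lesssim b_n$ means $a_n\le Cb_n$ for a constant $C$; $a_n\asymp b_n$ means $a_n/b_n$ is bounded away from $0$ and $\infty$. *)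

theory Defs
  imports "HOL-Probability.Probability" "HOL-Library.Landau_Symbols"
begin

text \<open>Coefficient sequences are indexed by k = 1,2,...; the value at index 0 is ignored.\<close>

definition Sb_norm :: "real \<Rightarrow> (nat \<Rightarrow> real) \<Rightarrow> real" where
  "Sb_norm \<beta> f = sqrt (\<Sum>k. (f (Suc k))\<^sup>2 * real (Suc k) powr (2 * \<beta>))"

definition in_Sb :: "real \<Rightarrow> (nat \<Rightarrow> real) \<Rightarrow> bool" where
  "in_Sb \<beta> f \<longleftrightarrow> summable (\<lambda>k. (f (Suc k))\<^sup>2 * real (Suc k) powr (2 * \<beta>))"

definition H1_norm :: "(nat \<Rightarrow> real) \<Rightarrow> real" where
  "H1_norm h = sqrt (\<Sum>k. (h (Suc k))\<^sup>2)"

definition design_pt :: "nat \<Rightarrow> nat \<Rightarrow> real" where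
  "design_pt n i = real i / real n"

definition ip_d :: "nat \<Rightarrow> (real \<Rightarrow> real) \<Rightarrow> (real \<Rightarrow> real) \<Rightarrow> real" where
  "ip_d n g h = (1 / real n) * (\<Sum>i=1..n. g (design_pt n i) * h (design_pt n i))"

definition A_eval :: "(nat \<Rightarrow> real) \<Rightarrow> (nat \<Rightarrow> real \<Rightarrow> real) \<Rightarrow> (nat \<Rightarrow> real) \<Rightarrow> real \<Rightarrow> real" where
  "A_eval a \<psi> f x = (\<Sum>j. f (Suc j) * a (Suc j) * \<psi> (Suc j) x)"

definition U_data :: "(nat \<Rightarrow> real) \<Rightarrow> (nat \<Rightarrow> real \<Rightarrow> real) \<Rightarrow> nat \<Rightarrow> (nat \<Rightarrow> real)
    \<Rightarrow> (nat \<Rightarrow> real) \<Rightarrow> nat \<Rightarrow> real" where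
  "U_data a \<psi> n f0 \<xi> k = (1 / real n) *
     (\<Sum>i=1..n. (A_eval a \<psi> f0 (design_pt n i) + \<xi> i) * \<psi> k (design_pt n i))"

text \<open>Posterior mean and variance (for 1 <= k < n); lam n k is the prior variance lambda_k.\<close>
definition post_mean :: "(nat \<Rightarrow> real) \<Rightarrow> (nat \<Rightarrow> real \<Rightarrow> real) \<Rightarrow> (nat \<Rightarrow> nat \<Rightarrow> real) \<Rightarrow> nat
    \<Rightarrow> (nat \<Rightarrow> real) \<Rightarrow> (nat \<Rightarrow> real) \<Rightarrow> nat \<Rightarrow> real" where
  "post_mean a \<psi> lam n f0 \<xi> k =
     real n * a k * lam n k / (real n * (a k)\<^sup>2 * lam n k + 1) * U_data a \<psi> n f0 \<xi> k"

definition post_var :: "(nat \<Rightarrow> real) \<Rightarrow> (nat \<Rightarrow> nat \<Rightarrow> real) \<Rightarrow> nat \<Rightarrow> nat \<Rightarrow> real" where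
  "post_var a lam n k = lam n k / (real n * (a k)\<^sup>2 * lam n k + 1)"

text \<open>Posterior law of the nontrivial coordinates f_1..f_{n-1} (the others are 0 a.s.).\<close>
definition posterior :: "(nat \<Rightarrow> real) \<Rightarrow> (nat \<Rightarrow> real \<Rightarrow> real) \<Rightarrow> (nat \<Rightarrow> nat \<Rightarrow> real) \<Rightarrow> nat
    \<Rightarrow> (nat \<Rightarrow> real) \<Rightarrow> (nat \<Rightarrow> real) \<Rightarrow> (nat \<Rightarrow> real) measure" where
  "posterior a \<psi> lam n f0 \<xi> = (\<Pi>\<^sub>M k\<in>{1..<n}.
      density lborel (normal_density (post_mean a \<psi> lam n f0 \<xi> k) (sqrt (post_var a lam n k))))"

definition extend_draw :: "nat \<Rightarrow> (nat \<Rightarrow> real) \<Rightarrow> nat \<Rightarrow> real" where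
  "extend_draw n g k = (if 1 \<le> k \<and> k < n then g k else 0)"

definition post_mass :: "(nat \<Rightarrow> real) \<Rightarrow> (nat \<Rightarrow> real \<Rightarrow> real) \<Rightarrow> (nat \<Rightarrow> nat \<Rightarrow> real) \<Rightarrow> nat
    \<Rightarrow> (nat \<Rightarrow> real) \<Rightarrow> (nat \<Rightarrow> real) \<Rightarrow> real \<Rightarrow> real" where
  "post_mass a \<psi> lam n f0 \<xi> r = measure (posterior a \<psi> lam n f0 \<xi>)
     {g \<in> space (posterior a \<psi> lam n f0 \<xi>). H1_norm (\<lambda>k. extend_draw n g k - f0 k) \<ge> r}"

definition noise :: "nat \<Rightarrow> (nat \<Rightarrow> real) measure" where
  "noise n = (\<Pi>\<^sub>M i\<in>{1..n}. density lborel std_normal_density)"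

definition exp_post_mass :: "(nat \<Rightarrow> real) \<Rightarrow> (nat \<Rightarrow> real \<Rightarrow> real) \<Rightarrow> (nat \<Rightarrow> nat \<Rightarrow> real) \<Rightarrow> nat
    \<Rightarrow> (nat \<Rightarrow> real) \<Rightarrow> real \<Rightarrow> real" where
  "exp_post_mass a \<psi> lam n f0 r = (\<integral>\<xi>. post_mass a \<psi> lam n f0 \<xi> r \<partial>noise n)"

definition contracts :: "(nat \<Rightarrow> real) \<Rightarrow> (nat \<Rightarrow> real \<Rightarrow> real) \<Rightarrow> real \<Rightarrow> (nat \<Rightarrow> nat \<Rightarrow> real)
    \<Rightarrow> (nat \<Rightarrow> real) \<Rightarrow> (nat \<Rightarrow> real) \<Rightarrow> real \<Rightarrow> bool" where
  "contracts a \<psi> \<beta> lam eps M K \<longleftrightarrow>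
     (\<lambda>n. SUP f0\<in>{f0. in_Sb \<beta> f0 \<and> Sb_norm \<beta> f0 \<le> K}. exp_post_mass a \<psi> lam n f0 (M n * eps n))
       \<longlonglongrightarrow> 0"

definition design_cond :: "(nat \<Rightarrow> real \<Rightarrow> real) \<Rightarrow> bool" where
  "design_cond \<psi> \<longleftrightarrow>
     (\<forall>n\<ge>2. \<forall>j k. 1 \<le> j \<and> j < n \<and> 1 \<le> k \<and> k < n \<longrightarrow>
        ip_d n (\<psi> j) (\<psi> k) = (if j = k then 1 else 0)) \<and>
     (\<exists>M>0. \<forall>n\<ge>2. \<forall>k. 1 \<le> k \<and> k < n \<longrightarrow>
        (\<exists>kb :: bool \<Rightarrow> nat. \<forall>l\<ge>1. kb (even l) < n \<and>
           0 < \<bar>ip_d n (\<psi> (l * n + kb (even l))) (\<psi> k)\<bar> \<and>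
           \<bar>ip_d n (\<psi> (l * n + kb (even l))) (\<psi> k)\<bar> < M \<and>
           (\<forall>j. l * n \<le> j \<and> j < (l + 1) * n \<and> j \<noteq> l * n + kb (even l) \<longrightarrow>
              ip_d n (\<psi> j) (\<psi> k) = 0)))"

end

theory Submission
  imports Defs
begin


lemma normal_sq:
  fixes m \<sigma> c :: real assumes "\<sigma> > 0"
  shows "integrable (density lborel (normal_density m \<sigma>)) (\<lambda>x. (x - c)\<^sup>2)"
    and "(\<integral>x. (x - c)\<^sup>2 \<partial>density lborel (normal_density m \<sigma>)) = (m - c)\<^sup>2 + \<sigma>\<^sup>2"
proof -
  have eq: "\<And>x. normal_density m \<sigma> x * (x - c)\<^sup>2 =
     normal_density m \<sigma> x * (x - m)^(2*1) + (2*(m-c)) * (normal_density m \<sigma> x * (x - m)^(2*0+1))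
     + (m-c)\<^sup>2 * normal_density m \<sigma> x"
    by (simp add: power2_eq_square algebra_simps)
  have i1: "integrable lborel (\<lambda>x. normal_density m \<sigma> x * (x - m)^(2*1))"
    using integrable_normal_moment[OF assms] by blast
  have i2: "integrable lborel (\<lambda>x. normal_density m \<sigma> x * (x - m)^(2*0+1))"
    using integrable_normal_moment[OF assms] by blast
  have i3: "integrable lborel (\<lambda>x. normal_density m \<sigma> x)" using integrable_normal_density[OF assms] .
  have int: "integrable lborel (\<lambda>x. normal_density m \<sigma> x * (x - c)\<^sup>2)"
    unfolding eq by (intro Bochner_Integration.integrable_add integrable_mult_right i1 i2 i3)
  show "integrable (density lborel (normal_density m \<sigma>)) (\<lambda>x. (x - c)\<^sup>2)"
    by (subst integrable_density) (use int in auto)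
  have "(\<integral>x. (x - c)\<^sup>2 \<partial>density lborel (normal_density m \<sigma>)) =
        (\<integral>x. normal_density m \<sigma> x * (x - c)\<^sup>2 \<partial>lborel)"
    by (subst integral_density) auto
  also have "\<dots> = (\<integral>x. normal_density m \<sigma> x * (x - m)^(2*1) \<partial>lborel)
     + (2*(m-c)) * (\<integral>x. normal_density m \<sigma> x * (x - m)^(2*0+1) \<partial>lborel)
     + (m-c)\<^sup>2 * (\<integral>x. normal_density m \<sigma> x \<partial>lborel)"
    unfolding eq by (simp only: Bochner_Integration.integral_add[OF Bochner_Integration.integrable_add[OF i1 integrable_mult_right[OF i2]] integrable_mult_right[OF i3]] Bochner_Integration.integral_add[OF i1 integrable_mult_right[OF i2]] integral_mult_right_zero)
  also have "\<dots> = \<sigma>\<^sup>2 + (m - c)\<^sup>2"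
    using integral_normal_moment_even[OF assms, of m 1] integral_normal_moment_odd[OF assms, of m 0]
      integral_normal_density[OF assms]
    by (simp add: power2_eq_square)
  finally show "(\<integral>x. (x - c)\<^sup>2 \<partial>density lborel (normal_density m \<sigma>)) = (m - c)\<^sup>2 + \<sigma>\<^sup>2"
    by simp
qed


lemma std_moments:
  "integrable (density lborel std_normal_density) (\<lambda>x. x)"
  "(\<integral>x. x \<partial>density lborel std_normal_density) = 0"
  "integrable (density lborel std_normal_density) (\<lambda>x. x * x)"
  "(\<integral>x. x * x \<partial>density lborel std_normal_density) = 1"
proof -
  show "integrable (density lborel std_normal_density) (\<lambda>x. x)"
    by (subst integrable_density) (use integrable_std_normal_moment[of 1] in auto)
  show "(\<integral>x. x \<partial>density lborel std_normal_density) = 0"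
    by (subst integral_density) (use integral_std_normal_moment_odd[of 0] in auto)
  show "integrable (density lborel std_normal_density) (\<lambda>x. x * x)"
    by (subst integrable_density) (use integrable_std_normal_moment[of 2] in \<open>auto simp: power2_eq_square\<close>)
  show "(\<integral>x. x * x \<partial>density lborel std_normal_density) = 1"
    by (subst integral_density) (use integral_std_normal_moment_even[of 1] in \<open>auto simp: power2_eq_square\<close>)
qed

lemma prob_std: "prob_space (density lborel std_normal_density)"
  by (rule prob_space_normal_density) simp

interpretation stdN: product_sigma_finite "\<lambda>_::nat. density lborel std_normal_density"
  unfolding product_sigma_finite_def using prob_std by (simp add: prob_space_imp_sigma_finite)

lemma noise_prob: "prob_space (noise n)"
  unfolding noise_def by (rule prob_space_PiM) (rule prob_std)

lemma noise_quad:
  assumes "i \<in> {1..n}" "j \<in> {1..n}"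
  shows "integrable (noise n) (\<lambda>x. x i * x j)"
    and "(\<integral>x. x i * x j \<partial>noise n) = (if i = j then 1 else 0)"
proof -
  let ?N = "density lborel std_normal_density"
  interpret P: prob_space ?N by (rule prob_std)
  define f where "f l = (\<lambda>y::real. (if l = i then y else 1) * (if l = j then y else 1))" for l
  have fi: "integrable ?N (f l)" for l
  proof -
    have "f l = (if l = i \<and> l = j then (\<lambda>y. y*y) else if l = i \<or> l = j then (\<lambda>y. y) else (\<lambda>y. 1))"
      by (auto simp: f_def fun_eq_iff)
    then show ?thesis using std_moments(1,3) by (simp split: if_splits)
  qed
  have prodeq: "(\<Prod>l\<in>{1..n}. f l (x l)) = x i * x j" for x
    using assms by (simp add: f_def prod.distrib prod.delta)
  have "integrable (noise n) (\<lambda>x. \<Prod>l\<in>{1..n}. f l (x l))"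
    unfolding noise_def by (rule stdN.product_integrable_prod) (auto intro: fi)
  then show "integrable (noise n) (\<lambda>x. x i * x j)" by (simp only: prodeq)
  have intf: "integral\<^sup>L ?N (f l) = (if l = i \<and> l = j then 1 else if l = i \<or> l = j then 0 else 1)" for l
  proof -
    have "f l = (if l = i \<and> l = j then (\<lambda>y. y*y) else if l = i \<or> l = j then (\<lambda>y. y) else (\<lambda>y. 1))"
      by (auto simp: f_def fun_eq_iff)
    moreover have "measure ?N UNIV = 1" using P.prob_space by simp
    ultimately show ?thesis using std_moments(2,4) by (simp split: if_splits)
  qed
  have "(\<integral>x. x i * x j \<partial>noise n) = (\<integral>x. (\<Prod>l\<in>{1..n}. f l (x l)) \<partial>noise n)"
    by (simp only: prodeq)
  also have "\<dots> = (\<Prod>l\<in>{1..n}. integral\<^sup>L ?N (f l))"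
    unfolding noise_def by (rule stdN.product_integral_prod) (auto intro: fi)
  also have "\<dots> = (if i = j then 1 else 0)"
  proof (cases "i = j")
    case True
    have "\<forall>l\<in>{1..n}. integral\<^sup>L ?N (f l) = 1" using True by (simp add: intf)
    then have "(\<Prod>l\<in>{1..n}. integral\<^sup>L ?N (f l)) = 1" by (rule prod.neutral)
    then show ?thesis using True by simp
  next
    case False
    have "integral\<^sup>L ?N (f i) = 0" using False by (simp add: intf)
    then have "(\<Prod>l\<in>{1..n}. integral\<^sup>L ?N (f l)) = 0" using assms
      by (metis finite_atLeastAtMost prod_zero_iff)
    then show ?thesis using False by simp
  qed
  finally show "(\<integral>x. x i * x j \<partial>noise n) = (if i = j then 1 else 0)" .
qed

lemma noise_lin:
  assumes "i \<in> {1..n}"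
  shows "integrable (noise n) (\<lambda>x. x i)"
    and "(\<integral>x. x i \<partial>noise n) = 0"
proof -
  let ?N = "density lborel std_normal_density"
  interpret P: prob_space ?N by (rule prob_std)
  define f where "f l = (\<lambda>y::real. (if l = i then y else 1))" for l
  have fi: "integrable ?N (f l)" for l
    by (cases "l = i") (simp_all add: f_def std_moments(1))
  have prodeq: "(\<Prod>l\<in>{1..n}. f l (x l)) = x i" for x
    using assms by (simp add: f_def prod.delta)
  have "integrable (noise n) (\<lambda>x. \<Prod>l\<in>{1..n}. f l (x l))"
    unfolding noise_def by (rule stdN.product_integrable_prod) (auto intro: fi)
  then show "integrable (noise n) (\<lambda>x. x i)" by (simp only: prodeq)
  have "(\<integral>x. x i \<partial>noise n) = (\<integral>x. (\<Prod>l\<in>{1..n}. f l (x l)) \<partial>noise n)"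
    by (simp only: prodeq)
  also have "\<dots> = (\<Prod>l\<in>{1..n}. integral\<^sup>L ?N (f l))"
    unfolding noise_def by (rule stdN.product_integral_prod) (auto intro: fi)
  also have "\<dots> = 0"
  proof -
    have "integral\<^sup>L ?N (f i) = 0" using std_moments(2) by (simp add: f_def)
    then show ?thesis using assms by (subst prod_zero_iff) auto
  qed
  finally show "(\<integral>x. x i \<partial>noise n) = 0" .
qed

lemma noise_sq:
  fixes \<alpha> \<beta> :: real and w :: "nat \<Rightarrow> real"
  shows "integrable (noise n) (\<lambda>x. (\<alpha> + \<beta> * (\<Sum>i\<in>{1..n}. w i * x i))\<^sup>2)"
    and "(\<integral>x. (\<alpha> + \<beta> * (\<Sum>i\<in>{1..n}. w i * x i))\<^sup>2 \<partial>noise n) = \<alpha>\<^sup>2 + \<beta>\<^sup>2 * (\<Sum>i\<in>{1..n}. (w i)\<^sup>2)"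
proof -
  interpret P: prob_space "noise n" by (rule noise_prob)
  have eq: "(\<alpha> + \<beta> * (\<Sum>i\<in>{1..n}. w i * x i))\<^sup>2 =
     \<alpha>\<^sup>2 + (\<Sum>i\<in>{1..n}. (2*\<alpha>*\<beta>*w i) * x i) + (\<Sum>i\<in>{1..n}. \<Sum>j\<in>{1..n}. (\<beta>\<^sup>2 * w i * w j) * (x i * x j))" for x
  proof -
    have "(\<Sum>i\<in>{1..n}. w i * x i)\<^sup>2 = (\<Sum>i\<in>{1..n}. \<Sum>j\<in>{1..n}. (w i * x i) * (w j * x j))"
      by (simp add: power2_eq_square sum_product)
    then have "(\<beta> * (\<Sum>i\<in>{1..n}. w i * x i))\<^sup>2 = (\<Sum>i\<in>{1..n}. \<Sum>j\<in>{1..n}. (\<beta>\<^sup>2 * w i * w j) * (x i * x j))"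
      by (simp only: power_mult_distrib) (simp add: sum_distrib_left mult_ac)
    moreover have "2 * \<alpha> * (\<beta> * (\<Sum>i\<in>{1..n}. w i * x i)) = (\<Sum>i\<in>{1..n}. (2*\<alpha>*\<beta>*w i) * x i)"
      by (simp add: sum_distrib_left mult_ac)
    ultimately show ?thesis by (simp add: power2_sum)
  qed
  have i1: "integrable (noise n) (\<lambda>x. \<Sum>i\<in>{1..n}. (2*\<alpha>*\<beta>*w i) * x i)"
    by (intro Bochner_Integration.integrable_sum integrable_mult_right noise_lin(1)) auto
  have i2: "integrable (noise n) (\<lambda>x. \<Sum>i\<in>{1..n}. \<Sum>j\<in>{1..n}. (\<beta>\<^sup>2 * w i * w j) * (x i * x j))"
    by (intro Bochner_Integration.integrable_sum integrable_mult_right noise_quad(1)) auto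
  show "integrable (noise n) (\<lambda>x. (\<alpha> + \<beta> * (\<Sum>i\<in>{1..n}. w i * x i))\<^sup>2)"
    unfolding eq by (intro Bochner_Integration.integrable_add i1 i2) auto
  have e1: "(\<integral>x. (\<alpha> + \<beta> * (\<Sum>i\<in>{1..n}. w i * x i))\<^sup>2 \<partial>noise n) =
     \<alpha>\<^sup>2 + (\<integral>x. (\<Sum>i\<in>{1..n}. (2*\<alpha>*\<beta>*w i) * x i) \<partial>noise n)
       + (\<integral>x. (\<Sum>i\<in>{1..n}. \<Sum>j\<in>{1..n}. (\<beta>\<^sup>2 * w i * w j) * (x i * x j)) \<partial>noise n)"
  proof -
    have i0: "integrable (noise n) (\<lambda>x. \<alpha>\<^sup>2)" by simp
    show ?thesis unfolding eq
      apply (subst Bochner_Integration.integral_add[OF Bochner_Integration.integrable_add[OF i0 i1] i2])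
      apply (subst Bochner_Integration.integral_add[OF i0 i1])
      apply (simp add: P.prob_space)
      done
  qed
  have e2: "(\<integral>x. (\<Sum>i\<in>{1..n}. (2*\<alpha>*\<beta>*w i) * x i) \<partial>noise n) = 0"
    by (subst Bochner_Integration.integral_sum) (auto simp: noise_lin)
  have "(\<integral>x. (\<Sum>i\<in>{1..n}. \<Sum>j\<in>{1..n}. (\<beta>\<^sup>2 * w i * w j) * (x i * x j)) \<partial>noise n)
      = (\<Sum>i\<in>{1..n}. \<Sum>j\<in>{1..n}. (\<beta>\<^sup>2 * w i * w j) * (if i = j then 1 else 0))"
    apply (subst Bochner_Integration.integral_sum)
     apply (intro Bochner_Integration.integrable_sum integrable_mult_right noise_quad(1); simp)
    apply (intro sum.cong refl)
    apply (subst Bochner_Integration.integral_sum)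
     apply (intro integrable_mult_right noise_quad(1); simp)
    apply (intro sum.cong refl)
    apply (subst integral_mult_right_zero)
    apply (subst noise_quad(2); simp)
    done
  also have "\<dots> = \<beta>\<^sup>2 * (\<Sum>i\<in>{1..n}. (w i)\<^sup>2)"
    by (simp add: sum_distrib_left power2_eq_square if_distrib sum.delta mult.assoc cong: if_cong)
  finally have e3: "(\<integral>x. (\<Sum>i\<in>{1..n}. \<Sum>j\<in>{1..n}. (\<beta>\<^sup>2 * w i * w j) * (x i * x j)) \<partial>noise n) = \<beta>\<^sup>2 * (\<Sum>i\<in>{1..n}. (w i)\<^sup>2)" .
  show "(\<integral>x. (\<alpha> + \<beta> * (\<Sum>i\<in>{1..n}. w i * x i))\<^sup>2 \<partial>noise n) = \<alpha>\<^sup>2 + \<beta>\<^sup>2 * (\<Sum>i\<in>{1..n}. (w i)\<^sup>2)"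
    using e1 e2 e3 by linarith
qed


lemma H1_extend:
  fixes f0 g :: "nat \<Rightarrow> real"
  assumes sf: "summable (\<lambda>k. (f0 (Suc k))\<^sup>2)"
  shows "H1_norm (\<lambda>k. extend_draw n g k - f0 k) =
     sqrt ((\<Sum>k\<in>{1..<n}. (g k - f0 k)\<^sup>2) + (\<Sum>k. if n \<le> Suc k then (f0 (Suc k))\<^sup>2 else 0))"
proof -
  define A where "A k = (if Suc k < n then (g (Suc k) - f0 (Suc k))\<^sup>2 else 0)" for k
  define B where "B k = (if n \<le> Suc k then (f0 (Suc k))\<^sup>2 else 0)" for k
  have hk: "(extend_draw n g (Suc k) - f0 (Suc k))\<^sup>2 = A k + B k" for k
    by (auto simp: A_def B_def extend_draw_def)
  have sA: "summable A"
    by (rule summable_finite[of "{..<n}"]) (auto simp: A_def)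
  have sB: "summable B"
    by (rule summable_comparison_test[OF _ sf]) (auto simp: B_def intro!: exI[of _ 0])
  have "(\<Sum>k. A k) = (\<Sum>k<n. A k)"
    by (rule suminf_finite) (auto simp: A_def)
  also have "\<dots> = (\<Sum>k\<in>{1..<n}. (g k - f0 k)\<^sup>2)"
  proof (cases n)
    case 0 then show ?thesis by simp
  next
    case (Suc n')
    have "sum A {..<n'} = (\<Sum>k<n'. (g (Suc k) - f0 (Suc k))\<^sup>2)"
      by (rule sum.cong) (auto simp: A_def Suc)
    then have "(\<Sum>k<n. A k) = (\<Sum>k<n'. (g (Suc k) - f0 (Suc k))\<^sup>2) + A n'"
      using Suc by simp
    also have "A n' = 0" using Suc by (simp add: A_def)
    also have "(\<Sum>k<n'. (g (Suc k) - f0 (Suc k))\<^sup>2) = (\<Sum>k\<in>{0..<n'}. (g (Suc k) - f0 (Suc k))\<^sup>2)"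
      by (simp add: atLeast0LessThan)
    also have "\<dots> = (\<Sum>k\<in>{Suc 0..<Suc n'}. (g k - f0 k)\<^sup>2)"
      by (rule sum.shift_bounds_Suc_ivl[symmetric])
    finally show ?thesis using Suc by simp
  qed
  finally have eA: "(\<Sum>k. A k) = (\<Sum>k\<in>{1..<n}. (g k - f0 k)\<^sup>2)" .
  have "(\<Sum>k. (extend_draw n g (Suc k) - f0 (Suc k))\<^sup>2) = (\<Sum>k. A k + B k)"
    by (simp add: hk)
  also have "\<dots> = (\<Sum>k. A k) + (\<Sum>k. B k)" by (rule suminf_add[OF sA sB, symmetric])
  finally have X: "(\<Sum>k. (extend_draw n g (Suc k) - f0 (Suc k))\<^sup>2) = (\<Sum>k\<in>{1..<n}. (g k - f0 k)\<^sup>2) + (\<Sum>k. if n \<le> Suc k then (f0 (Suc k))\<^sup>2 else 0)"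
    unfolding eA B_def .
  show ?thesis unfolding H1_norm_def X ..
qed

lemma sqrt_ge_iff: "0 < r \<Longrightarrow> 0 \<le> X \<Longrightarrow> (r \<le> sqrt X) = (r\<^sup>2 \<le> X)"
  by (metis abs_of_pos real_sqrt_abs real_sqrt_le_iff less_imp_le)

lemma post_mass_bound:
  fixes f0 \<xi> :: "nat \<Rightarrow> real"
  assumes r: "r > 0" and vpos: "\<forall>k\<in>{1..<n}. post_var a lam n k > 0"
    and sf: "summable (\<lambda>k. (f0 (Suc k))\<^sup>2)"
  shows "post_mass a \<psi> lam n f0 \<xi> r \<le>
    ((\<Sum>k\<in>{1..<n}. (post_mean a \<psi> lam n f0 \<xi> k - f0 k)\<^sup>2 + post_var a lam n k)
       + (\<Sum>k. if n \<le> Suc k then (f0 (Suc k))\<^sup>2 else 0)) / r\<^sup>2"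
proof -
  define m where "m k = post_mean a \<psi> lam n f0 \<xi> k" for k
  define sd where "sd k = (if k \<in> {1..<n} then sqrt (post_var a lam n k) else 1)" for k
  define T where "T = (\<Sum>k. if n \<le> Suc k then (f0 (Suc k))\<^sup>2 else 0)"
  define Mk where "Mk k = density lborel (normal_density (m k) (sd k))" for k
  have sdpos: "sd k > 0" for k using vpos by (auto simp: sd_def)
  have Tnn: "T \<ge> 0" unfolding T_def
    by (rule suminf_nonneg) (auto intro!: summable_comparison_test[OF _ sf] exI[of _ 0])
  have Peq: "posterior a \<psi> lam n f0 \<xi> = PiM {1..<n} Mk"
    unfolding posterior_def Mk_def by (rule PiM_cong) (auto simp: sd_def m_def)
  interpret PS: product_sigma_finite Mk
    unfolding product_sigma_finite_def Mk_def
    using sdpos by (auto intro!: prob_space_imp_sigma_finite prob_space_normal_density)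
  interpret Pr: prob_space "PiM {1..<n} Mk"
    by (rule prob_space_PiM) (auto simp: Mk_def intro!: prob_space_normal_density sdpos)
  define Q where "Q g = (\<Sum>k\<in>{1..<n}. (g k - f0 k)\<^sup>2)" for g :: "nat \<Rightarrow> real"
  have one: "integrable (PiM {1..<n} Mk) (\<lambda>g. (g k - f0 k)\<^sup>2) \<and>
      (\<integral>g. (g k - f0 k)\<^sup>2 \<partial>PiM {1..<n} Mk) = (m k - f0 k)\<^sup>2 + post_var a lam n k" if k: "k \<in> {1..<n}" for k
  proof -
    define f where "f l = (\<lambda>x::real. if l = k then (x - f0 k)\<^sup>2 else 1)" for l
    have prodeq: "(\<Prod>l\<in>{1..<n}. f l (g l)) = (g k - f0 k)\<^sup>2" for g
      using k by (simp add: f_def prod.delta)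
    have fi: "integrable (Mk l) (f l)" for l
    proof (cases "l = k")
      case True then show ?thesis using normal_sq(1)[OF sdpos] by (simp add: f_def Mk_def)
    next
      case False
      interpret prob_space "Mk l" unfolding Mk_def by (rule prob_space_normal_density[OF sdpos])
      show ?thesis using False by (simp add: f_def)
    qed
    have fint: "integral\<^sup>L (Mk l) (f l) = (if l = k then (m k - f0 k)\<^sup>2 + post_var a lam n k else 1)" for l
    proof (cases "l = k")
      case True
      have vk: "post_var a lam n k > 0" using vpos k by auto
      then show ?thesis using True normal_sq(2)[OF sdpos, of "m k" k "f0 k"] k
        by (simp add: f_def Mk_def sd_def)
    next
      case False
      interpret prob_space "Mk l" unfolding Mk_def by (rule prob_space_normal_density[OF sdpos])
      show ?thesis using False prob_space by (simp add: f_def Mk_def)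
    qed
    have "integrable (PiM {1..<n} Mk) (\<lambda>g. \<Prod>l\<in>{1..<n}. f l (g l))"
      by (rule PS.product_integrable_prod) (auto intro: fi)
    moreover have "(\<integral>g. (\<Prod>l\<in>{1..<n}. f l (g l)) \<partial>PiM {1..<n} Mk) = (\<Prod>l\<in>{1..<n}. integral\<^sup>L (Mk l) (f l))"
      by (rule PS.product_integral_prod) (auto intro: fi)
    moreover have "(\<Prod>l\<in>{1..<n}. integral\<^sup>L (Mk l) (f l)) = (m k - f0 k)\<^sup>2 + post_var a lam n k"
      using k by (simp add: fint prod.delta)
    ultimately show ?thesis by (simp only: prodeq)
  qed
  have iT: "integrable (PiM {1..<n} Mk) (\<lambda>_. T)" by (rule Pr.integrable_const)
  have iQ: "integrable (PiM {1..<n} Mk) (\<lambda>g. Q g + T)"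
    unfolding Q_def using one by (intro Bochner_Integration.integrable_add Bochner_Integration.integrable_sum iT) auto
  have intQ: "(\<integral>g. Q g + T \<partial>PiM {1..<n} Mk) = (\<Sum>k\<in>{1..<n}. (m k - f0 k)\<^sup>2 + post_var a lam n k) + T"
  proof -
    have iQ0: "integrable (PiM {1..<n} Mk) Q"
      unfolding Q_def using one by (intro Bochner_Integration.integrable_sum) auto
    have "(\<integral>g. Q g + T \<partial>PiM {1..<n} Mk) = (\<integral>g. Q g \<partial>PiM {1..<n} Mk) + T"
      by (simp only: Bochner_Integration.integral_add[OF iQ0 iT] lebesgue_integral_const Pr.prob_space scaleR_one)
    also have "(\<integral>g. Q g \<partial>PiM {1..<n} Mk) = (\<Sum>k\<in>{1..<n}. (m k - f0 k)\<^sup>2 + post_var a lam n k)"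
      unfolding Q_def using one by (subst Bochner_Integration.integral_sum) auto
    finally show ?thesis .
  qed
  have seteq: "{g \<in> space (PiM {1..<n} Mk). H1_norm (\<lambda>k. extend_draw n g k - f0 k) \<ge> r}
      = {g \<in> space (PiM {1..<n} Mk). Q g + T \<ge> r\<^sup>2}"
  proof -
    have "H1_norm (\<lambda>k. extend_draw n g k - f0 k) = sqrt (Q g + T)" for g
      unfolding Q_def T_def by (rule H1_extend[OF sf])
    moreover have "Q g + T \<ge> 0" for g using Tnn by (simp add: Q_def sum_nonneg)
    ultimately show ?thesis using r sqrt_ge_iff by auto
  qed
  have "post_mass a \<psi> lam n f0 \<xi> r = measure (PiM {1..<n} Mk) {g \<in> space (PiM {1..<n} Mk). Q g + T \<ge> r\<^sup>2}"
    unfolding post_mass_def Peq seteq ..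
  also have "\<dots> \<le> (\<integral>g. Q g + T \<partial>PiM {1..<n} Mk) / r\<^sup>2"
    by (rule integral_Markov_inequality_measure[OF iQ, of "space (PiM {1..<n} Mk)"])
       (use r Tnn in \<open>auto simp: Q_def intro!: sum_nonneg AE_I2 add_nonneg_nonneg\<close>)
  also have "\<dots> = ((\<Sum>k\<in>{1..<n}. (post_mean a \<psi> lam n f0 \<xi> k - f0 k)\<^sup>2 + post_var a lam n k)
       + (\<Sum>k. if n \<le> Suc k then (f0 (Suc k))\<^sup>2 else 0)) / r\<^sup>2"
    by (subst intQ) (simp only: m_def T_def)
  finally show ?thesis .
qed


lemma U_data_split:
  "U_data a \<psi> n f0 \<xi> k = (1 / real n) * (\<Sum>i=1..n. A_eval a \<psi> f0 (design_pt n i) * \<psi> k (design_pt n i))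
     + (\<Sum>i\<in>{1..n}. (\<psi> k (design_pt n i) / real n) * \<xi> i)"
proof -
  have "(\<Sum>i=1..n. (A_eval a \<psi> f0 (design_pt n i) + \<xi> i) * \<psi> k (design_pt n i)) =
     (\<Sum>i=1..n. A_eval a \<psi> f0 (design_pt n i) * \<psi> k (design_pt n i)) + (\<Sum>i=1..n. \<xi> i * \<psi> k (design_pt n i))"
    by (simp add: distrib_right sum.distrib)
  moreover have "(1 / real n) * (\<Sum>i=1..n. \<xi> i * \<psi> k (design_pt n i)) = (\<Sum>i\<in>{1..n}. (\<psi> k (design_pt n i) / real n) * \<xi> i)"
    by (simp add: sum_distrib_left mult_ac)
  ultimately show ?thesis unfolding U_data_def by (simp add: distrib_left)
qed

lemma exp_bound:
  fixes f0 :: "nat \<Rightarrow> real"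
  assumes r: "r > 0" and vpos: "\<forall>k\<in>{1..<n}. post_var a lam n k > 0"
    and sf: "summable (\<lambda>k. (f0 (Suc k))\<^sup>2)"
    and ipkk: "\<forall>k\<in>{1..<n}. ip_d n (\<psi> k) (\<psi> k) = 1"
  shows "exp_post_mass a \<psi> lam n f0 r \<le>
    ((\<Sum>k\<in>{1..<n}. (real n * a k * lam n k / (real n * (a k)\<^sup>2 * lam n k + 1) *
          ((1 / real n) * (\<Sum>i=1..n. A_eval a \<psi> f0 (design_pt n i) * \<psi> k (design_pt n i))) - f0 k)\<^sup>2
        + (real n * a k * lam n k / (real n * (a k)\<^sup>2 * lam n k + 1))\<^sup>2 / real n
        + post_var a lam n k)
       + (\<Sum>k. if n \<le> Suc k then (f0 (Suc k))\<^sup>2 else 0)) / r\<^sup>2"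
proof -
  interpret NP: prob_space "noise n" by (rule noise_prob)
  define c where "c k = real n * a k * lam n k / (real n * (a k)\<^sup>2 * lam n k + 1)" for k
  define D where "D k = (1 / real n) * (\<Sum>i=1..n. A_eval a \<psi> f0 (design_pt n i) * \<psi> k (design_pt n i))" for k
  define w where "w k i = \<psi> k (design_pt n i) / real n" for k i
  define T where "T = (\<Sum>k. if n \<le> Suc k then (f0 (Suc k))\<^sup>2 else 0)"
  define B where "B \<xi> = ((\<Sum>k\<in>{1..<n}. (post_mean a \<psi> lam n f0 \<xi> k - f0 k)\<^sup>2 + post_var a lam n k) + T) / r\<^sup>2" for \<xi>
  have pm: "post_mean a \<psi> lam n f0 \<xi> k - f0 k = (c k * D k - f0 k) + c k * (\<Sum>i\<in>{1..n}. w k i * \<xi> i)" for \<xi> k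
    unfolding post_mean_def U_data_split c_def D_def w_def by (simp add: algebra_simps)
  have ww: "(\<Sum>i\<in>{1..n}. (w k i)\<^sup>2) = 1 / real n" if "k \<in> {1..<n}" for k
  proof -
    have "(\<Sum>i\<in>{1..n}. (w k i)\<^sup>2) = (1 / real n) * ip_d n (\<psi> k) (\<psi> k)"
      unfolding w_def ip_d_def by (simp add: power2_eq_square sum_distrib_left sum_divide_distrib)
    then show ?thesis using ipkk that by simp
  qed
  have Tnn: "T \<ge> 0" unfolding T_def
    by (rule suminf_nonneg) (auto intro!: summable_comparison_test[OF _ sf] exI[of _ 0])
  have ik: "integrable (noise n) (\<lambda>\<xi>. (post_mean a \<psi> lam n f0 \<xi> k - f0 k)\<^sup>2)" for k
    unfolding pm by (rule noise_sq(1))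
  have iB: "integrable (noise n) B"
    unfolding B_def
    by (intro integrable_divide Bochner_Integration.integrable_add Bochner_Integration.integrable_sum ik NP.integrable_const)
  have intB: "(\<integral>\<xi>. B \<xi> \<partial>noise n) = ((\<Sum>k\<in>{1..<n}. (c k * D k - f0 k)\<^sup>2 + (c k)\<^sup>2 / real n + post_var a lam n k) + T) / r\<^sup>2"
  proof -
    have i1: "integrable (noise n) (\<lambda>\<xi>. \<Sum>k\<in>{1..<n}. (post_mean a \<psi> lam n f0 \<xi> k - f0 k)\<^sup>2 + post_var a lam n k)"
      by (intro Bochner_Integration.integrable_add Bochner_Integration.integrable_sum ik NP.integrable_const)
    have "(\<integral>\<xi>. B \<xi> \<partial>noise n) = (\<integral>\<xi>. (\<Sum>k\<in>{1..<n}. (post_mean a \<psi> lam n f0 \<xi> k - f0 k)\<^sup>2 + post_var a lam n k) + T \<partial>noise n) / r\<^sup>2"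
      unfolding B_def by (rule integral_divide_zero)
    also have "(\<integral>\<xi>. (\<Sum>k\<in>{1..<n}. (post_mean a \<psi> lam n f0 \<xi> k - f0 k)\<^sup>2 + post_var a lam n k) + T \<partial>noise n)
        = (\<integral>\<xi>. (\<Sum>k\<in>{1..<n}. (post_mean a \<psi> lam n f0 \<xi> k - f0 k)\<^sup>2 + post_var a lam n k) \<partial>noise n) + T"
      by (simp only: Bochner_Integration.integral_add[OF i1 NP.integrable_const] lebesgue_integral_const NP.prob_space scaleR_one)
    also have "(\<integral>\<xi>. (\<Sum>k\<in>{1..<n}. (post_mean a \<psi> lam n f0 \<xi> k - f0 k)\<^sup>2 + post_var a lam n k) \<partial>noise n)
        = (\<Sum>k\<in>{1..<n}. (\<integral>\<xi>. (post_mean a \<psi> lam n f0 \<xi> k - f0 k)\<^sup>2 + post_var a lam n k \<partial>noise n))"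
      by (rule Bochner_Integration.integral_sum) (intro Bochner_Integration.integrable_add ik NP.integrable_const)
    also have "\<dots> = (\<Sum>k\<in>{1..<n}. (c k * D k - f0 k)\<^sup>2 + (c k)\<^sup>2 / real n + post_var a lam n k)"
    proof (rule sum.cong[OF refl])
      fix k assume k: "k \<in> {1..<n}"
      have "(\<integral>\<xi>. (post_mean a \<psi> lam n f0 \<xi> k - f0 k)\<^sup>2 + post_var a lam n k \<partial>noise n)
          = (\<integral>\<xi>. (post_mean a \<psi> lam n f0 \<xi> k - f0 k)\<^sup>2 \<partial>noise n) + post_var a lam n k"
        by (simp only: Bochner_Integration.integral_add[OF ik NP.integrable_const] lebesgue_integral_const NP.prob_space scaleR_one)
      also have "(\<integral>\<xi>. (post_mean a \<psi> lam n f0 \<xi> k - f0 k)\<^sup>2 \<partial>noise n) = (c k * D k - f0 k)\<^sup>2 + (c k)\<^sup>2 * (1 / real n)"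
        unfolding pm noise_sq(2) ww[OF k] ..
      finally show "(\<integral>\<xi>. (post_mean a \<psi> lam n f0 \<xi> k - f0 k)\<^sup>2 + post_var a lam n k \<partial>noise n)
          = (c k * D k - f0 k)\<^sup>2 + (c k)\<^sup>2 / real n + post_var a lam n k" by simp
    qed
    finally show ?thesis by simp
  qed
  have le: "post_mass a \<psi> lam n f0 \<xi> r \<le> B \<xi>" for \<xi>
    unfolding B_def T_def by (rule post_mass_bound[OF r vpos sf])
  have Bnn: "0 \<le> B \<xi>" for \<xi>
    unfolding B_def using Tnn by (intro divide_nonneg_nonneg add_nonneg_nonneg sum_nonneg) (use vpos in \<open>auto intro: less_imp_le\<close>)
  have "exp_post_mass a \<psi> lam n f0 r \<le> (\<integral>\<xi>. B \<xi> \<partial>noise n)"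
  proof (cases "integrable (noise n) (\<lambda>\<xi>. post_mass a \<psi> lam n f0 \<xi> r)")
    case True
    then show ?thesis unfolding exp_post_mass_def by (rule integral_mono[OF _ iB le])
  next
    case False
    then show ?thesis unfolding exp_post_mass_def
      by (simp add: not_integrable_integral_eq Bnn integral_nonneg)
  qed
  then show ?thesis unfolding intB c_def D_def T_def .
qed


lemma pow_gap:
  fixes k m s :: real
  assumes "1 \<le> k" "k \<le> m" "1 \<le> s"
  shows "m - k \<le> m powr s - k powr s"
proof -
  define t where "t = m / k"
  have t1: "t \<ge> 1" using assms by (simp add: t_def)
  have mt: "m = k * t" using assms by (simp add: t_def)
  have ts: "t powr s \<ge> t" using powr_mono[OF assms(3) t1] t1 by simp
  have ks: "k powr s \<ge> k" using powr_mono[OF assms(3) assms(1)] assms by simp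
  have "m powr s = k powr s * t powr s" using assms t1 by (simp add: mt powr_mult)
  then have "m powr s - k powr s = k powr s * (t powr s - 1)" by (simp add: algebra_simps)
  also have "\<dots> \<ge> k powr s * (t - 1)" using ts by (intro mult_left_mono) auto
  also have "k powr s * (t - 1) \<ge> k * (t - 1)" using ks t1 by (intro mult_right_mono) auto
  finally show ?thesis using mt by (simp add: algebra_simps)
qed

lemma a_bounds:
  fixes a :: "nat \<Rightarrow> real" and p s :: real
  assumes a_pos: "\<forall>k\<ge>1. a k > 0"
    and a_rate: "a \<in> \<Theta>(\<lambda>k. exp (- p * real k powr s))"
  shows "\<exists>Cl Cu. Cl > 0 \<and> Cu > 0 \<and> (\<forall>k\<ge>1. Cl * exp (- p * real k powr s) \<le> a k \<and> a k \<le> Cu * exp (- p * real k powr s))"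
proof -
  define g where "g k = exp (- p * real k powr s)" for k :: nat
  have gpos: "g k > 0" for k by (simp add: g_def)
  from bigthetaD1[OF a_rate] obtain c1 where c1: "c1 > 0" "eventually (\<lambda>k. norm (a k) \<le> c1 * norm (g k)) at_top"
    unfolding g_def by (elim landau_o.bigE)
  from bigthetaD2[OF a_rate, unfolded bigomega_iff_bigo] obtain c2 where c2: "c2 > 0" "eventually (\<lambda>k. norm (g k) \<le> c2 * norm (a k)) at_top"
    unfolding g_def by (elim landau_o.bigE)
  obtain N where N: "\<forall>k\<ge>N. norm (a k) \<le> c1 * norm (g k) \<and> norm (g k) \<le> c2 * norm (a k)"
    using eventually_conj[OF c1(2) c2(2)] unfolding eventually_at_top_linorder by blast
  define S where "S = {1..max N 1}"
  have Sfin: "finite S" and Sne: "S \<noteq> {}" by (auto simp: S_def)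
  define Cu where "Cu = max c1 (Max ((\<lambda>k. a k / g k) ` S))"
  define Cl where "Cl = min (1 / c2) (Min ((\<lambda>k. a k / g k) ` S))"
  have Sp: "a k / g k > 0" if "k \<in> S" for k using that a_pos gpos by (auto simp: S_def)
  have Cupos: "Cu > 0" using c1 by (simp add: Cu_def)
  have Clpos: "Cl > 0" using c2 Sp Sfin Sne by (auto simp: Cl_def)
  have "Cl * g k \<le> a k \<and> a k \<le> Cu * g k" if k: "k \<ge> 1" for k
  proof (cases "k \<ge> N")
    case True
    have ak: "a k > 0" using a_pos k by auto
    from N True have "a k \<le> c1 * g k" "g k \<le> c2 * a k" using ak gpos[of k] by auto
    moreover have "Cl \<le> 1 / c2" "c1 \<le> Cu" by (auto simp: Cl_def Cu_def)
    ultimately show ?thesis using c2 gpos[of k] c1 ak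
      by (auto simp: field_simps intro: order.trans[OF mult_right_mono[of Cl "1/c2" "g k"]]
                intro!: order.trans[OF _ mult_right_mono[of c1 Cu "g k"]])
  next
    case False
    then have kS: "k \<in> S" using k by (auto simp: S_def)
    have "Cl \<le> a k / g k" unfolding Cl_def using Sfin kS by (auto intro!: min.coboundedI2)
    moreover have "a k / g k \<le> Cu" unfolding Cu_def using Sfin kS by (auto intro!: max.coboundedI2)
    ultimately show ?thesis using gpos[of k] by (simp add: field_simps)
  qed
  then show ?thesis using Clpos Cupos unfolding g_def by blast
qed


lemma design_bound:
  assumes "design_cond \<psi>"
  shows "\<exists>Md>0. \<forall>n\<ge>2. \<forall>k j. 1 \<le> k \<and> k < n \<and> n \<le> j \<longrightarrow> \<bar>ip_d n (\<psi> j) (\<psi> k)\<bar> \<le> Md"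
proof -
  from assms obtain M where M: "M > 0" and H: "\<forall>n\<ge>2. \<forall>k. 1 \<le> k \<and> k < n \<longrightarrow>
        (\<exists>kb :: bool \<Rightarrow> nat. \<forall>l\<ge>1. kb (even l) < n \<and>
           0 < \<bar>ip_d n (\<psi> (l * n + kb (even l))) (\<psi> k)\<bar> \<and>
           \<bar>ip_d n (\<psi> (l * n + kb (even l))) (\<psi> k)\<bar> < M \<and>
           (\<forall>j. l * n \<le> j \<and> j < (l + 1) * n \<and> j \<noteq> l * n + kb (even l) \<longrightarrow>
              ip_d n (\<psi> j) (\<psi> k) = 0))"
    unfolding design_cond_def by blast
  have "\<bar>ip_d n (\<psi> j) (\<psi> k)\<bar> \<le> M" if n: "n \<ge> 2" and k: "1 \<le> k" "k < n" and j: "n \<le> j" for n k j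
  proof -
    obtain kb :: "bool \<Rightarrow> nat" where kb: "\<forall>l\<ge>1. kb (even l) < n \<and>
           0 < \<bar>ip_d n (\<psi> (l * n + kb (even l))) (\<psi> k)\<bar> \<and>
           \<bar>ip_d n (\<psi> (l * n + kb (even l))) (\<psi> k)\<bar> < M \<and>
           (\<forall>j. l * n \<le> j \<and> j < (l + 1) * n \<and> j \<noteq> l * n + kb (even l) \<longrightarrow>
              ip_d n (\<psi> j) (\<psi> k) = 0)"
      using H n k by blast
    define l where "l = j div n"
    have "0 < l" using j n by (simp add: l_def div_greater_zero_iff)
    then have l1: "l \<ge> 1" by simp
    have lo: "l * n \<le> j" by (simp add: l_def)
    have jeq: "j = l * n + j mod n" by (simp add: l_def)
    have "j mod n < n" using n by simp
    then have hi: "j < (l + 1) * n" using jeq by (metis add_less_cancel_left distrib_right mult_1)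
    show ?thesis
    proof (cases "j = l * n + kb (even l)")
      case True then show ?thesis using kb l1 by fastforce
    next
      case False then show ?thesis using kb l1 lo hi M by force
    qed
  qed
  then show ?thesis using M by blast
qed


lemma sum_shift1: "(\<Sum>k\<in>{1..<n}. h k) = (\<Sum>k<n-1. h (Suc k))"
proof (cases n)
  case 0 then show ?thesis by simp
next
  case (Suc n')
  have "(\<Sum>k\<in>{Suc 0..<Suc n'}. h k) = (\<Sum>k\<in>{0..<n'}. h (Suc k))"
    by (rule sum.shift_bounds_Suc_ivl)
  then show ?thesis using Suc by (simp add: atLeast0LessThan)
qed

lemma Sb_facts:
  fixes f :: "nat \<Rightarrow> real"
  assumes fS: "in_Sb \<beta> f" and fK: "Sb_norm \<beta> f \<le> K"
  shows "(\<Sum>k. (f (Suc k))\<^sup>2 * real (Suc k) powr (2 * \<beta>)) \<le> K\<^sup>2"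
    and "0 \<le> K"
proof -
  let ?S = "(\<Sum>k. (f (Suc k))\<^sup>2 * real (Suc k) powr (2 * \<beta>))"
  have S0: "?S \<ge> 0" by (rule suminf_nonneg[OF fS[unfolded in_Sb_def]]) simp
  have "Sb_norm \<beta> f = sqrt ?S" by (simp add: Sb_norm_def)
  then have "sqrt ?S \<le> K" using fK by simp
  moreover have "0 \<le> sqrt ?S" using S0 by simp
  ultimately show "0 \<le> K" by linarith
  show "?S \<le> K\<^sup>2" using \<open>sqrt ?S \<le> K\<close> S0 \<open>0 \<le> K\<close>
    by (metis real_sqrt_le_iff real_sqrt_pow2 power2_le_imp_le real_sqrt_ge_zero sqrt_le_D)
qed

lemma Sb_term:
  fixes f :: "nat \<Rightarrow> real"
  assumes fS: "in_Sb \<beta> f" and fK: "Sb_norm \<beta> f \<le> K" and j: "j \<ge> 1"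
  shows "(f j)\<^sup>2 * real j powr (2 * \<beta>) \<le> K\<^sup>2"
proof -
  obtain j' where j': "j = Suc j'" using j by (cases j) auto
  have "(\<Sum>k\<in>{j'}. (f (Suc k))\<^sup>2 * real (Suc k) powr (2 * \<beta>)) \<le> (\<Sum>k. (f (Suc k))\<^sup>2 * real (Suc k) powr (2 * \<beta>))"
    using fS unfolding in_Sb_def by (intro sum_le_suminf) auto
  then show ?thesis using Sb_facts[OF fS fK] j' by simp
qed

lemma Sb_sum:
  fixes f :: "nat \<Rightarrow> real"
  assumes fS: "in_Sb \<beta> f" and fK: "Sb_norm \<beta> f \<le> K"
  shows "(\<Sum>k\<in>{1..<n}. (f k)\<^sup>2 * real k powr (2 * \<beta>)) \<le> K\<^sup>2"
proof -
  have "(\<Sum>k\<in>{1..<n}. (f k)\<^sup>2 * real k powr (2 * \<beta>)) = (\<Sum>k<n-1. (f (Suc k))\<^sup>2 * real (Suc k) powr (2 * \<beta>))"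
    by (rule sum_shift1)
  also have "\<dots> \<le> (\<Sum>k. (f (Suc k))\<^sup>2 * real (Suc k) powr (2 * \<beta>))"
    using fS unfolding in_Sb_def by (intro sum_le_suminf) auto
  finally show ?thesis using Sb_facts[OF fS fK] by linarith
qed

lemma Sb_abs:
  fixes f :: "nat \<Rightarrow> real"
  assumes fS: "in_Sb \<beta> f" and fK: "Sb_norm \<beta> f \<le> K" and j: "j \<ge> n" "n \<ge> 1" and b: "\<beta> > 0"
  shows "\<bar>f j\<bar> \<le> K * real n powr (-\<beta>)"
proof -
  have K0: "K \<ge> 0" using Sb_facts[OF fS fK] by simp
  have jpos: "real j > 0" using j by simp
  have "(f j)\<^sup>2 * real j powr (2 * \<beta>) \<le> K\<^sup>2" using Sb_term[OF fS fK] j by simp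
  moreover have "real j powr (2 * \<beta>) = (real j powr \<beta>)\<^sup>2"
    by (simp add: power2_eq_square powr_add[symmetric])
  ultimately have "(\<bar>f j\<bar> * real j powr \<beta>)\<^sup>2 \<le> K\<^sup>2" by (simp add: power_mult_distrib)
  then have "\<bar>f j\<bar> * real j powr \<beta> \<le> K" using K0 by (rule power2_le_imp_le)
  moreover have "real n powr \<beta> \<le> real j powr \<beta>" using j b by (intro powr_mono2) auto
  ultimately have "\<bar>f j\<bar> * real n powr \<beta> \<le> K"
    by (meson abs_ge_zero mult_left_mono order_trans)
  moreover have "real n powr \<beta> > 0" using j by simp
  ultimately show ?thesis by (simp add: powr_minus field_simps)
qed

lemma Sb_tail:
  fixes f :: "nat \<Rightarrow> real"
  assumes fS: "in_Sb \<beta> f" and fK: "Sb_norm \<beta> f \<le> K" and n: "n \<ge> 1" and b: "\<beta> > 0"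
  shows "(\<Sum>k. if n \<le> Suc k then (f (Suc k))\<^sup>2 else 0) \<le> K\<^sup>2 * real n powr (-2 * \<beta>)"
proof -
  let ?g = "\<lambda>k. real n powr (-2 * \<beta>) * ((f (Suc k))\<^sup>2 * real (Suc k) powr (2 * \<beta>))"
  have sg: "summable ?g" using fS unfolding in_Sb_def by (rule summable_mult)
  have le: "(if n \<le> Suc k then (f (Suc k))\<^sup>2 else 0) \<le> ?g k" for k
  proof (cases "n \<le> Suc k")
    case True
    have "1 \<le> real n powr (-2 * \<beta>) * real (Suc k) powr (2 * \<beta>)"
    proof -
      have "real n powr (2 * \<beta>) \<le> real (Suc k) powr (2 * \<beta>)" using True n b by (intro powr_mono2) auto
      moreover have "real n powr (-2 * \<beta>) * real n powr (2 * \<beta>) = 1" using n by (simp add: powr_add[symmetric])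
      moreover have "real n powr (-2 * \<beta>) \<ge> 0" by simp
      ultimately show ?thesis by (metis mult_left_mono)
    qed
    then have "(f (Suc k))\<^sup>2 * 1 \<le> (f (Suc k))\<^sup>2 * (real n powr (-2 * \<beta>) * real (Suc k) powr (2 * \<beta>))"
      by (intro mult_left_mono) auto
    then show ?thesis using True by (simp add: mult_ac)
  qed simp
  have s1: "summable (\<lambda>k. if n \<le> Suc k then (f (Suc k))\<^sup>2 else 0)"
    by (rule summable_comparison_test[OF _ sg]) (use le in \<open>auto intro!: exI[of _ 0]\<close>)
  have "(\<Sum>k. if n \<le> Suc k then (f (Suc k))\<^sup>2 else 0) \<le> (\<Sum>k. ?g k)"
    by (rule suminf_le[OF le s1 sg])
  also have "\<dots> = real n powr (-2 * \<beta>) * (\<Sum>k. (f (Suc k))\<^sup>2 * real (Suc k) powr (2 * \<beta>))"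
    using fS unfolding in_Sb_def by (rule suminf_mult)
  also have "\<dots> \<le> real n powr (-2 * \<beta>) * K\<^sup>2"
    using Sb_facts[OF fS fK] by (intro mult_left_mono) auto
  finally show ?thesis by (simp add: mult_ac)
qed

lemma term_alg:
  fixes a lam nn f R kp B1 :: real
  assumes a: "a > 0" and l: "lam > 0" and nn: "nn > 0" and kp: "kp > 0"
    and B: "1 / (kp * (1 + nn * a\<^sup>2 * lam)) \<le> B1"
  shows "(nn * a * lam / (nn * a\<^sup>2 * lam + 1) * (a * f + R) - f)\<^sup>2
          + (nn * a * lam / (nn * a\<^sup>2 * lam + 1))\<^sup>2 / nn + lam / (nn * a\<^sup>2 * lam + 1)
        \<le> 2 * ((f\<^sup>2 * kp) * B1) + 2 * (R\<^sup>2 / a\<^sup>2) + 2 * (lam / (nn * a\<^sup>2 * lam + 1))"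
proof -
  define x where "x = nn * a\<^sup>2 * lam"
  have x0: "x > 0" using a l nn by (simp add: x_def)
  define c where "c = nn * a * lam / (x + 1)"
  have ca: "c * a = x / (x + 1)" using x0 by (simp add: c_def x_def power2_eq_square field_simps)
  have c0: "c \<ge> 0" using a l nn x0 by (simp add: c_def)
  have ca1: "c * a - 1 = - 1 / (x + 1)" using ca x0 by (simp add: field_simps)
  have "c * (a * f + R) - f = (c * a - 1) * f + c * R" by (simp add: algebra_simps)
  then have e1: "c * (a * f + R) - f = - f / (x + 1) + c * R" using ca1 by simp
  have sq: "(u + w)\<^sup>2 \<le> 2 * u\<^sup>2 + 2 * w\<^sup>2" for u w :: real
    using sum_squares_ge_zero[of "u - w" 0] by (simp add: power2_eq_square algebra_simps)
  have u: "(- f / (x + 1))\<^sup>2 \<le> (f\<^sup>2 * kp) * B1"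
  proof -
    have "(- f / (x + 1))\<^sup>2 = f\<^sup>2 / (x + 1)\<^sup>2" by (simp add: power_divide)
    also have "\<dots> \<le> f\<^sup>2 / (x + 1)"
      using x0 by (intro divide_left_mono) (auto simp: power2_eq_square)
    also have "\<dots> = (f\<^sup>2 * kp) * (1 / (kp * (1 + x)))" using kp x0 by (simp add: add.commute)
    also have "\<dots> \<le> (f\<^sup>2 * kp) * B1" using B kp by (intro mult_left_mono) (auto simp: x_def)
    finally show ?thesis .
  qed
  have w: "(c * R)\<^sup>2 \<le> R\<^sup>2 / a\<^sup>2"
  proof -
    have "c * a \<le> 1" using ca x0 by simp
    then have "c \<le> 1 / a" using a by (simp add: field_simps)
    then have "c\<^sup>2 \<le> (1 / a)\<^sup>2" using c0 by (intro power_mono) auto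
    then have "c\<^sup>2 * R\<^sup>2 \<le> (1 / a)\<^sup>2 * R\<^sup>2" by (intro mult_right_mono) auto
    then show ?thesis by (simp add: power_mult_distrib power_divide)
  qed
  have v: "c\<^sup>2 / nn \<le> lam / (x + 1)"
  proof -
    have h: "(nn * a * lam)\<^sup>2 / nn = lam * x" using nn by (simp add: x_def power2_eq_square field_simps)
    have "c\<^sup>2 / nn = (nn * a * lam)\<^sup>2 / nn / (x + 1)\<^sup>2"
      by (simp add: c_def power_divide)
    then have "c\<^sup>2 / nn = lam * x / (x + 1)\<^sup>2" using h by simp
    also have "\<dots> \<le> lam * (x + 1) / (x + 1)\<^sup>2" using x0 l
      by (intro divide_right_mono mult_left_mono) auto
    also have "\<dots> = lam / (x + 1)" using x0 by (simp add: power2_eq_square)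
    finally show ?thesis .
  qed
  have "(c * (a * f + R) - f)\<^sup>2 \<le> 2 * (f\<^sup>2 * kp * B1) + 2 * (R\<^sup>2 / a\<^sup>2)"
    using sq[of "- f / (x + 1)" "c * R"] u w unfolding e1 by linarith
  then show ?thesis using v unfolding c_def x_def by linarith
qed


lemma geo_rev:
  fixes r :: real assumes r: "0 \<le> r" "r < 1"
  shows "(\<Sum>k\<in>{1..<n}. r ^ (n - k)) \<le> 1 / (1 - r)"
proof -
  have "(\<Sum>k\<in>{1..<n}. r ^ (n - k)) = (\<Sum>m\<in>{1..<n}. r ^ m)"
    by (rule sum.reindex_bij_witness[of _ "\<lambda>m. n - m" "\<lambda>k. n - k"]) auto
  also have "\<dots> \<le> (\<Sum>m<n. r ^ m)" using r by (intro sum_mono2) auto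
  also have "\<dots> = (1 - r ^ n) / (1 - r)" using r by (simp add: sum_gp_strict)
  also have "\<dots> \<le> 1 / (1 - r)" using r by (intro divide_right_mono) auto
  finally show ?thesis .
qed

lemma exp_pow_gap:
  fixes p s :: real and m n :: nat
  assumes p: "p > 0" and s: "s \<ge> 1" and n: "1 \<le> n" and nm: "n \<le> m"
  shows "exp (- p * real m powr s) \<le> exp (- p * real n powr s) * exp (- p) ^ (m - n)"
proof -
  have "real m - real n \<le> real m powr s - real n powr s" using pow_gap[of "real n" "real m" s] n nm s by simp
  then have "p * (real m - real n) \<le> p * (real m powr s - real n powr s)"
    using p by (intro mult_left_mono) auto
  then have "- p * real m powr s \<le> - p * real n powr s + real (m - n) * (- p)"
    using nm by (simp add: of_nat_diff algebra_simps)
  then have "exp (- p * real m powr s) \<le> exp (- p * real n powr s + real (m - n) * (- p))" by simp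
  also have "\<dots> = exp (- p * real n powr s) * exp (- p) ^ (m - n)"
    by (simp only: exp_add exp_of_nat_mult)
  finally show ?thesis .
qed

lemma inv_exp_sq: "1 / exp (- x) ^ 2 = exp (2 * (x::real))"
proof -
  have "exp (- x) ^ 2 = exp (- (2 * x))"
    using exp_of_nat_mult[of 2 "- x"] by simp
  then show ?thesis by (simp add: exp_minus field_simps)
qed

definition Atail :: "(nat \<Rightarrow> real) \<Rightarrow> nat \<Rightarrow> real" where
  "Atail a n = (\<Sum>j. if n \<le> Suc j then a (Suc j) else 0)"

context
  fixes a :: "nat \<Rightarrow> real" and p s Cl Cu :: real
  assumes p: "p > 0" and s: "s \<ge> 1" and Cl: "Cl > 0" and Cu: "Cu > 0"
    and ab: "\<forall>k\<ge>1. Cl * exp (- p * real k powr s) \<le> a k \<and> a k \<le> Cu * exp (- p * real k powr s)"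
begin

lemma a_pos': assumes "k \<ge> 1" shows "a k > 0"
proof -
  have "Cl * exp (- p * real k powr s) \<le> a k" using ab assms by auto
  moreover have "Cl * exp (- p * real k powr s) > 0" using Cl by simp
  ultimately show ?thesis by linarith
qed

lemma a_summable: "summable (\<lambda>j. a (Suc j))"
proof -
  have q: "exp (- p) < 1" "0 \<le> exp (-p)" using p by auto
  have le: "norm (a (Suc j)) \<le> Cu * exp (- p) ^ j" for j
  proof -
    have "exp (- p * real (Suc j) powr s) \<le> exp (- p * real 1 powr s) * exp (- p) ^ (Suc j - 1)"
      by (rule exp_pow_gap[OF p s]) auto
    also have "\<dots> \<le> 1 * exp (- p) ^ j" using p by simp
    finally have "exp (- p * real (Suc j) powr s) \<le> exp (- p) ^ j" by simp
    then have "Cu * exp (- p * real (Suc j) powr s) \<le> Cu * exp (- p) ^ j" using Cu by (intro mult_left_mono) auto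
    moreover have "a (Suc j) \<le> Cu * exp (- p * real (Suc j) powr s)" using ab by auto
    ultimately have "a (Suc j) \<le> Cu * exp (- p) ^ j" by linarith
    then show ?thesis using a_pos'[of "Suc j"] by simp
  qed
  show ?thesis
    by (rule summable_comparison_test[OF _ summable_mult[OF summable_geometric]])
       (use le q in \<open>auto intro!: exI[of _ 0]\<close>)
qed


lemma Atail_summable: "summable (\<lambda>j. if n \<le> Suc j then a (Suc j) else 0)"
  by (rule summable_comparison_test[OF _ a_summable]) (auto intro!: exI[of _ 0] simp: a_pos' less_imp_le)

lemma Atail_nonneg: "Atail a n \<ge> 0"
  unfolding Atail_def by (rule suminf_nonneg[OF Atail_summable]) (simp add: a_pos' less_imp_le)

lemma Atail_le:
  assumes n: "n \<ge> 1"
  shows "Atail a n \<le> Cu * exp (- p * real n powr s) / (1 - exp (- p))"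
proof -
  define q where "q = exp (- p)"
  have q: "0 \<le> q" "q < 1" using p by (auto simp: q_def)
  define g where "g j = (if n \<le> Suc j then Cu * exp (- p * real n powr s) * q ^ (Suc j - n) else 0)" for j
  have le: "(if n \<le> Suc j then a (Suc j) else 0) \<le> g j" for j
  proof (cases "n \<le> Suc j")
    case True
    have "a (Suc j) \<le> Cu * exp (- p * real (Suc j) powr s)" using ab by auto
    also have "\<dots> \<le> Cu * (exp (- p * real n powr s) * q ^ (Suc j - n))"
      unfolding q_def by (intro mult_left_mono exp_pow_gap[OF p s n True]) (use Cu in auto)
    finally show ?thesis using True by (simp add: g_def mult.assoc)
  qed (simp add: g_def)
  have "(\<lambda>i. g (i + (n - 1))) sums (Cu * exp (- p * real n powr s) * (1 / (1 - q)))"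
  proof -
    have "g (i + (n - 1)) = Cu * exp (- p * real n powr s) * q ^ i" for i
      using n by (simp add: g_def Suc_diff_le)
    moreover have "(\<lambda>i. Cu * exp (- p * real n powr s) * q ^ i) sums (Cu * exp (- p * real n powr s) * (1 / (1 - q)))"
      by (rule sums_mult[OF geometric_sums]) (use q in simp)
    ultimately show ?thesis by simp
  qed
  then have "g sums (Cu * exp (- p * real n powr s) * (1 / (1 - q)) + (\<Sum>i<n - 1. g i))"
    by (simp add: sums_iff_shift)
  moreover have "(\<Sum>i<n - 1. g i) = 0" by (auto simp: g_def intro!: sum.neutral)
  ultimately have gs: "g sums (Cu * exp (- p * real n powr s) / (1 - q))" by simp
  have "Atail a n \<le> Cu * exp (- p * real n powr s) / (1 - q)"
    unfolding Atail_def by (rule sums_le[OF le summable_sums[OF Atail_summable] gs])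
  then show ?thesis by (simp add: q_def)
qed

lemma inv_sq_sum:
  assumes n: "n \<ge> 1"
  shows "(\<Sum>k\<in>{1..<n}. 1 / (a k)\<^sup>2) \<le> exp (2 * p * real n powr s) / (Cl\<^sup>2 * (1 - (exp (- p))\<^sup>2))"
proof -
  define q where "q = exp (- p)"
  have q0: "0 \<le> q" "q < 1" using p by (auto simp: q_def)
  have q: "0 \<le> q\<^sup>2" "q\<^sup>2 < 1" using q0 power_less_one_iff[of q 2] by auto
  have "1 / (a k)\<^sup>2 \<le> exp (2 * p * real n powr s) / Cl\<^sup>2 * (q\<^sup>2) ^ (n - k)" if k: "k \<in> {1..<n}" for k
  proof -
    have ak: "a k \<ge> Cl * exp (- p * real k powr s)" using ab k by auto
    have pos: "Cl * exp (- p * real k powr s) > 0" using Cl by simp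
    have "1 / (a k)\<^sup>2 \<le> 1 / (Cl * exp (- p * real k powr s))\<^sup>2"
      using ak pos by (intro divide_left_mono power_mono mult_pos_pos) auto
    also have "\<dots> = (1 / exp (- p * real k powr s) ^ 2) / Cl\<^sup>2"
      by (simp add: power_mult_distrib divide_divide_eq_left mult.commute)
    also have "1 / exp (- p * real k powr s) ^ 2 = exp (2 * p * real k powr s)"
      using inv_exp_sq[of "p * real k powr s"] by simp
    also have "exp (2 * p * real k powr s) \<le> exp (2 * p * real n powr s) * (q\<^sup>2) ^ (n - k)"
    proof -
      have "real n - real k \<le> real n powr s - real k powr s" using pow_gap[of "real k" "real n" s] k s by simp
      then have "(2 * p) * (real n - real k) \<le> (2 * p) * (real n powr s - real k powr s)"
        using p by (intro mult_left_mono) auto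
      then have "2 * p * real k powr s \<le> 2 * p * real n powr s + real (n - k) * (- 2 * p)"
        using k by (simp add: of_nat_diff algebra_simps)
      then have "exp (2 * p * real k powr s) \<le> exp (2 * p * real n powr s + real (n - k) * (- 2 * p))" by simp
      also have "\<dots> = exp (2 * p * real n powr s) * exp (- 2 * p) ^ (n - k)"
        by (simp only: exp_add exp_of_nat_mult)
      also have "exp (- 2 * p) = q\<^sup>2"
        using exp_of_nat_mult[of 2 "- p"] by (simp add: q_def)
      finally show ?thesis .
    qed
    then have "exp (2 * p * real k powr s) / Cl\<^sup>2 \<le> exp (2 * p * real n powr s) * (q\<^sup>2) ^ (n - k) / Cl\<^sup>2"
      by (intro divide_right_mono) auto
    finally show ?thesis by simp
  qed
  then have "(\<Sum>k\<in>{1..<n}. 1 / (a k)\<^sup>2) \<le> (\<Sum>k\<in>{1..<n}. exp (2 * p * real n powr s) / Cl\<^sup>2 * (q\<^sup>2) ^ (n - k))"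
    by (rule sum_mono)
  also have "\<dots> = exp (2 * p * real n powr s) / Cl\<^sup>2 * (\<Sum>k\<in>{1..<n}. (q\<^sup>2) ^ (n - k))"
    by (simp add: sum_distrib_left)
  also have "\<dots> \<le> exp (2 * p * real n powr s) / Cl\<^sup>2 * (1 / (1 - q\<^sup>2))"
    by (intro mult_left_mono geo_rev q) auto
  finally show ?thesis by (simp add: q_def)
qed

lemma G0_bound:
  assumes n: "n \<ge> 1"
  shows "(Atail a n)\<^sup>2 * (\<Sum>k\<in>{1..<n}. 1 / (a k)\<^sup>2) \<le> Cu\<^sup>2 / ((1 - exp (- p))\<^sup>2 * Cl\<^sup>2 * (1 - (exp (- p))\<^sup>2))"
proof -
  define q where "q = exp (- p)"
  have q0: "0 \<le> q" "q < 1" using p by (auto simp: q_def)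
  have q: "q < 1" "q\<^sup>2 < 1" "q \<ge> 0" using q0 power_less_one_iff[of q 2] by auto
  define E where "E = exp (- p * real n powr s)"
  have E: "E > 0" by (simp add: E_def)
  have E2: "exp (2 * p * real n powr s) = 1 / E\<^sup>2"
    using inv_exp_sq[of "p * real n powr s"] by (simp add: E_def)
  have A: "(Atail a n)\<^sup>2 \<le> (Cu * E / (1 - q))\<^sup>2"
    using Atail_le[OF n] Atail_nonneg by (intro power_mono) (auto simp: E_def q_def)
  have S: "(\<Sum>k\<in>{1..<n}. 1 / (a k)\<^sup>2) \<le> (1 / E\<^sup>2) / (Cl\<^sup>2 * (1 - q\<^sup>2))"
    using inv_sq_sum[OF n] by (simp add: E2 q_def)
  have "(Atail a n)\<^sup>2 * (\<Sum>k\<in>{1..<n}. 1 / (a k)\<^sup>2) \<le> (Cu * E / (1 - q))\<^sup>2 * ((1 / E\<^sup>2) / (Cl\<^sup>2 * (1 - q\<^sup>2)))"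
    using A S by (intro mult_mono) (auto intro!: sum_nonneg)
  also have "\<dots> = Cu\<^sup>2 / ((1 - q)\<^sup>2 * Cl\<^sup>2 * (1 - q\<^sup>2))"
  proof -
    have e: "E\<^sup>2 \<noteq> 0" using E by simp
    have b: "(1 - q)\<^sup>2 \<noteq> 0" "Cl\<^sup>2 * (1 - q\<^sup>2) \<noteq> 0" using q Cl by auto
    have "(Cu * E / (1 - q))\<^sup>2 = Cu\<^sup>2 * E\<^sup>2 / (1 - q)\<^sup>2" by (simp add: power_divide power_mult_distrib)
    moreover have "(A * e / B) * ((1 / e) / C) = A / (B * C)" if "e \<noteq> 0" "B \<noteq> 0" "C \<noteq> 0" for A B C e :: real
      using that by (simp add: field_simps)
    ultimately show ?thesis using e b by (simp add: mult.assoc)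
  qed
  finally show ?thesis by (simp add: q_def)
qed

end


lemma D_expand:
  fixes a :: "nat \<Rightarrow> real" and \<psi> :: "nat \<Rightarrow> real \<Rightarrow> real" and f :: "nat \<Rightarrow> real"
  assumes n2: "n \<ge> 2" and k: "1 \<le> k" "k < n"
    and apos: "\<forall>j\<ge>1. a j > 0"
    and asum: "summable (\<lambda>j. a (Suc j))"
    and Af: "\<forall>x\<in>{0..1}. summable (\<lambda>j. f (Suc j) * a (Suc j) * \<psi> (Suc j) x)"
    and orth: "\<forall>j. 1 \<le> j \<and> j < n \<longrightarrow> ip_d n (\<psi> j) (\<psi> k) = (if j = k then 1 else 0)"
    and Mdb: "\<forall>j. n \<le> j \<longrightarrow> \<bar>ip_d n (\<psi> j) (\<psi> k)\<bar> \<le> Md"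
    and fb: "\<forall>j. n \<le> j \<longrightarrow> \<bar>f j\<bar> \<le> Kf"
  shows "\<bar>(1 / real n) * (\<Sum>i=1..n. A_eval a \<psi> f (design_pt n i) * \<psi> k (design_pt n i)) - a k * f k\<bar>
          \<le> Md * Kf * (\<Sum>j. if n \<le> Suc j then a (Suc j) else 0)"
proof -
  define t where "t i j = f (Suc j) * a (Suc j) * \<psi> (Suc j) (design_pt n i)" for i j
  define e where "e j = f (Suc j) * a (Suc j) * ip_d n (\<psi> (Suc j)) (\<psi> k)" for j
  define Dk where "Dk = (1 / real n) * (\<Sum>i=1..n. A_eval a \<psi> f (design_pt n i) * \<psi> k (design_pt n i))"
  have xin: "design_pt n i \<in> {0..1}" if "i \<in> {1..n}" for i
    using that n2 by (auto simp: design_pt_def)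
  have ts: "(\<lambda>j. t i j) sums A_eval a \<psi> f (design_pt n i)" if "i \<in> {1..n}" for i
    unfolding t_def A_eval_def using Af xin[OF that] by (intro summable_sums) auto
  have "(\<lambda>j. \<Sum>i\<in>{1..n}. t i j * \<psi> k (design_pt n i)) sums (\<Sum>i\<in>{1..n}. A_eval a \<psi> f (design_pt n i) * \<psi> k (design_pt n i))"
    by (rule sums_sum) (rule sums_mult2[OF ts])
  then have "(\<lambda>j. (1 / real n) * (\<Sum>i\<in>{1..n}. t i j * \<psi> k (design_pt n i))) sums Dk"
    unfolding Dk_def by (rule sums_mult)
  moreover have "(1 / real n) * (\<Sum>i\<in>{1..n}. t i j * \<psi> k (design_pt n i)) = e j" for j
    unfolding t_def e_def ip_d_def by (simp add: sum_distrib_left mult_ac)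
  ultimately have es: "e sums Dk" by simp
  define e1 where "e1 j = (if j = k - 1 then f (Suc j) * a (Suc j) else 0)" for j
  define e2 where "e2 j = (if n \<le> Suc j then e j else 0)" for j
  have esplit: "e j = e1 j + e2 j" for j
  proof (cases "n \<le> Suc j")
    case True
    then have "j \<noteq> k - 1" using k by auto
    then show ?thesis using True by (simp add: e1_def e2_def)
  next
    case False
    then have ipj: "ip_d n (\<psi> (Suc j)) (\<psi> k) = (if Suc j = k then 1 else 0)" using orth by auto
    have "(Suc j = k) = (j = k - 1)" using k by auto
    then show ?thesis using False ipj by (simp add: e_def e1_def e2_def)
  qed
  have e1s: "e1 sums (f k * a k)"
  proof -
    have "e1 sums (f (Suc (k - 1)) * a (Suc (k - 1)))"
      unfolding e1_def by (rule sums_single)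
    then show ?thesis using k by simp
  qed
  have e2s: "e2 sums (Dk - f k * a k)"
  proof -
    have "(\<lambda>j. e j - e1 j) sums (Dk - f k * a k)" by (rule sums_diff[OF es e1s])
    then show ?thesis by (simp add: esplit)
  qed
  define g where "g j = Md * Kf * (if n \<le> Suc j then a (Suc j) else 0)" for j
  have Atsum: "summable (\<lambda>j. if n \<le> Suc j then a (Suc j) else 0)"
    by (rule summable_comparison_test[OF _ asum]) (auto intro!: exI[of _ 0] simp: apos less_imp_le)
  have gs: "g sums (Md * Kf * (\<Sum>j. if n \<le> Suc j then a (Suc j) else 0))"
    unfolding g_def by (rule sums_mult[OF summable_sums[OF Atsum]])
  have bnd: "\<bar>e2 j\<bar> \<le> g j" for j
  proof (cases "n \<le> Suc j")
    case True
    have aj: "a (Suc j) > 0" using apos by auto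
    have "\<bar>e2 j\<bar> = \<bar>f (Suc j)\<bar> * a (Suc j) * \<bar>ip_d n (\<psi> (Suc j)) (\<psi> k)\<bar>"
      using True aj by (simp add: e2_def e_def abs_mult)
    also have "\<dots> \<le> Kf * a (Suc j) * Md"
      using fb Mdb True aj by (intro mult_mono) auto
    finally show ?thesis using True by (simp add: g_def mult_ac)
  next
    case False
    have "0 \<le> \<bar>e2 0\<bar>" by simp
    then show ?thesis using False by (simp add: e2_def g_def)
  qed
  have up: "Dk - f k * a k \<le> Md * Kf * (\<Sum>j. if n \<le> Suc j then a (Suc j) else 0)"
    by (rule sums_le[OF _ e2s gs]) (use bnd in \<open>auto simp: abs_le_iff\<close>)
  have lo: "- (Md * Kf * (\<Sum>j. if n \<le> Suc j then a (Suc j) else 0)) \<le> Dk - f k * a k"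
  proof -
    have lt: "- g j \<le> e2 j" for j using bnd[of j] abs_le_iff[of "e2 j" "g j"] by linarith
    show ?thesis by (rule sums_le[OF _ sums_minus[OF gs] e2s]) (use lt in auto)
  qed
  show ?thesis using up lo unfolding Dk_def by (simp add: abs_le_iff mult.commute)
qed


lemma det_bound:
  fixes a :: "nat \<Rightarrow> real" and \<psi> :: "nat \<Rightarrow> real \<Rightarrow> real" and f :: "nat \<Rightarrow> real"
    and lam :: "nat \<Rightarrow> nat \<Rightarrow> real"
  assumes n2: "n \<ge> 2" and p: "p > 0" and s: "s \<ge> 1" and Cl: "Cl > 0" and Cu: "Cu > 0"
    and ab: "\<forall>k\<ge>1. Cl * exp (- p * real k powr s) \<le> a k \<and> a k \<le> Cu * exp (- p * real k powr s)"
    and b: "\<beta> > 0"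
    and Mdb: "\<forall>k j. 1 \<le> k \<and> k < n \<and> n \<le> j \<longrightarrow> \<bar>ip_d n (\<psi> j) (\<psi> k)\<bar> \<le> Md"
    and orth: "\<forall>j k. 1 \<le> j \<and> j < n \<and> 1 \<le> k \<and> k < n \<longrightarrow> ip_d n (\<psi> j) (\<psi> k) = (if j = k then 1 else 0)"
    and Af: "\<forall>x\<in>{0..1}. summable (\<lambda>j. f (Suc j) * a (Suc j) * \<psi> (Suc j) x)"
    and fS: "in_Sb \<beta> f" and fK: "Sb_norm \<beta> f \<le> K"
    and lpos: "\<forall>k\<in>{1..<n}. lam n k > 0"
    and B1: "\<forall>k\<in>{1..<n}. 1 / (real k powr (2 * \<beta>) * (1 + real n * (a k)\<^sup>2 * lam n k)) \<le> B1"
  shows "(\<Sum>k\<in>{1..<n}. (real n * a k * lam n k / (real n * (a k)\<^sup>2 * lam n k + 1) *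
          ((1 / real n) * (\<Sum>i=1..n. A_eval a \<psi> f (design_pt n i) * \<psi> k (design_pt n i))) - f k)\<^sup>2
        + (real n * a k * lam n k / (real n * (a k)\<^sup>2 * lam n k + 1))\<^sup>2 / real n
        + post_var a lam n k)
       + (\<Sum>k. if n \<le> Suc k then (f (Suc k))\<^sup>2 else 0)
     \<le> 2 * K\<^sup>2 * B1 + 2 * (\<Sum>k\<in>{1..<n}. post_var a lam n k)
       + (2 * Md\<^sup>2 * (Cu\<^sup>2 / ((1 - exp (- p))\<^sup>2 * Cl\<^sup>2 * (1 - (exp (- p))\<^sup>2))) + 1) * K\<^sup>2 * real n powr (-2 * \<beta>)"
proof -
  define G0 where "G0 = Cu\<^sup>2 / ((1 - exp (- p))\<^sup>2 * Cl\<^sup>2 * (1 - (exp (- p))\<^sup>2))"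
  define At where "At = Atail a n"
  define Kf where "Kf = K * real n powr (-\<beta>)"
  have apos: "\<forall>j\<ge>1. a j > 0" using a_pos'[OF p s Cl Cu ab] by auto
  have n1: "n \<ge> 1" using n2 by simp
  have K0: "K \<ge> 0" using Sb_facts[OF fS fK] by simp
  have Kf0: "Kf \<ge> 0" using K0 by (simp add: Kf_def)
  have At0: "At \<ge> 0" unfolding At_def by (rule Atail_nonneg[OF p s Cl Cu ab])
  have G0b: "At\<^sup>2 * (\<Sum>k\<in>{1..<n}. 1 / (a k)\<^sup>2) \<le> G0"
    unfolding At_def G0_def by (rule G0_bound[OF p s Cl Cu ab n1])
  define Dk where "Dk k = (1 / real n) * (\<Sum>i=1..n. A_eval a \<psi> f (design_pt n i) * \<psi> k (design_pt n i))" for k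
  define R where "R k = Dk k - a k * f k" for k
  have Rb: "\<bar>R k\<bar> \<le> Md * Kf * At" if k: "k \<in> {1..<n}" for k
  proof -
    have "\<bar>Dk k - a k * f k\<bar> \<le> Md * Kf * (\<Sum>j. if n \<le> Suc j then a (Suc j) else 0)"
      unfolding Dk_def
    proof (rule D_expand[OF n2 _ _ apos a_summable[OF p s Cl Cu ab] Af])
      show "1 \<le> k" "k < n" using k by auto
      show "\<forall>j. 1 \<le> j \<and> j < n \<longrightarrow> ip_d n (\<psi> j) (\<psi> k) = (if j = k then 1 else 0)" using orth k by auto
      show "\<forall>j. n \<le> j \<longrightarrow> \<bar>ip_d n (\<psi> j) (\<psi> k)\<bar> \<le> Md" using Mdb k by auto
      show "\<forall>j. n \<le> j \<longrightarrow> \<bar>f j\<bar> \<le> Kf" unfolding Kf_def using Sb_abs[OF fS fK _ n1 b] by auto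
    qed
    then show ?thesis unfolding R_def At_def by (simp add: Atail_def)
  qed
  have Rsq: "(R k)\<^sup>2 \<le> (Md * Kf * At)\<^sup>2" if "k \<in> {1..<n}" for k
  proof -
    have "\<bar>R k\<bar>\<^sup>2 \<le> (Md * Kf * At)\<^sup>2"
      using Rb[OF that] by (intro power_mono) auto
    then show ?thesis by simp
  qed
  have trm: "(real n * a k * lam n k / (real n * (a k)\<^sup>2 * lam n k + 1) * Dk k - f k)\<^sup>2
        + (real n * a k * lam n k / (real n * (a k)\<^sup>2 * lam n k + 1))\<^sup>2 / real n
        + post_var a lam n k
      \<le> 2 * (((f k)\<^sup>2 * real k powr (2 * \<beta>)) * B1) + 2 * ((R k)\<^sup>2 / (a k)\<^sup>2) + 2 * post_var a lam n k"
    if k: "k \<in> {1..<n}" for k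
  proof -
    have "Dk k = a k * f k + R k" by (simp add: R_def)
    moreover have "a k > 0" using apos k by auto
    moreover have "lam n k > 0" using lpos k by auto
    moreover have "real n > 0" using n2 by simp
    moreover have "real k powr (2 * \<beta>) > 0" using k by simp
    moreover have "1 / (real k powr (2 * \<beta>) * (1 + real n * (a k)\<^sup>2 * lam n k)) \<le> B1" using B1 k by auto
    ultimately show ?thesis unfolding post_var_def by (simp only:) (rule term_alg)
  qed
  have B1pos: "B1 \<ge> 0"
  proof -
    have "1 \<in> {1..<n}" using n2 by simp
    then have "1 / (real 1 powr (2 * \<beta>) * (1 + real n * (a 1)\<^sup>2 * lam n 1)) \<le> B1" using B1 by blast
    moreover have "0 \<le> 1 / (real 1 powr (2 * \<beta>) * (1 + real n * (a 1)\<^sup>2 * lam n 1))"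
    proof -
      have "lam n 1 > 0" using lpos n2 by auto
      then have "0 \<le> real n * (a 1)\<^sup>2 * lam n 1" by simp
      then show ?thesis by simp
    qed
    ultimately show ?thesis by linarith
  qed
  have sum1: "(\<Sum>k\<in>{1..<n}. 2 * (((f k)\<^sup>2 * real k powr (2 * \<beta>)) * B1)) \<le> 2 * K\<^sup>2 * B1"
  proof -
    have "(\<Sum>k\<in>{1..<n}. 2 * (((f k)\<^sup>2 * real k powr (2 * \<beta>)) * B1)) = 2 * B1 * (\<Sum>k\<in>{1..<n}. (f k)\<^sup>2 * real k powr (2 * \<beta>))"
      by (simp add: sum_distrib_left mult_ac)
    also have "\<dots> \<le> 2 * B1 * K\<^sup>2" using Sb_sum[OF fS fK] B1pos by (intro mult_left_mono) auto
    finally show ?thesis by (simp add: mult_ac)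
  qed
  have sum2: "(\<Sum>k\<in>{1..<n}. 2 * ((R k)\<^sup>2 / (a k)\<^sup>2)) \<le> 2 * Md\<^sup>2 * G0 * K\<^sup>2 * real n powr (-2 * \<beta>)"
  proof -
    have "(\<Sum>k\<in>{1..<n}. 2 * ((R k)\<^sup>2 / (a k)\<^sup>2)) \<le> (\<Sum>k\<in>{1..<n}. 2 * ((Md * Kf * At)\<^sup>2 * (1 / (a k)\<^sup>2)))"
      using Rsq by (intro sum_mono mult_left_mono) (auto simp: divide_right_mono)
    also have "\<dots> = 2 * (Md * Kf)\<^sup>2 * (At\<^sup>2 * (\<Sum>k\<in>{1..<n}. 1 / (a k)\<^sup>2))"
      by (simp add: sum_distrib_left power_mult_distrib mult_ac)
    also have "\<dots> \<le> 2 * (Md * Kf)\<^sup>2 * G0" using G0b by (intro mult_left_mono) auto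
    also have "(Md * Kf)\<^sup>2 = Md\<^sup>2 * K\<^sup>2 * real n powr (-2 * \<beta>)"
    proof -
      have "(real n powr (-\<beta>))\<^sup>2 = real n powr (-2 * \<beta>)"
        by (simp add: power2_eq_square powr_add[symmetric])
      then show ?thesis by (simp add: Kf_def power_mult_distrib)
    qed
    finally show ?thesis by (simp add: mult_ac)
  qed
  have T: "(\<Sum>k. if n \<le> Suc k then (f (Suc k))\<^sup>2 else 0) \<le> K\<^sup>2 * real n powr (-2 * \<beta>)"
    by (rule Sb_tail[OF fS fK n1 b])
  have "(\<Sum>k\<in>{1..<n}. (real n * a k * lam n k / (real n * (a k)\<^sup>2 * lam n k + 1) * Dk k - f k)\<^sup>2
        + (real n * a k * lam n k / (real n * (a k)\<^sup>2 * lam n k + 1))\<^sup>2 / real n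
        + post_var a lam n k)
      \<le> (\<Sum>k\<in>{1..<n}. 2 * (((f k)\<^sup>2 * real k powr (2 * \<beta>)) * B1) + 2 * ((R k)\<^sup>2 / (a k)\<^sup>2) + 2 * post_var a lam n k)"
    by (rule sum_mono) (rule trm)
  also have "\<dots> = (\<Sum>k\<in>{1..<n}. 2 * (((f k)\<^sup>2 * real k powr (2 * \<beta>)) * B1)) + (\<Sum>k\<in>{1..<n}. 2 * ((R k)\<^sup>2 / (a k)\<^sup>2))
      + 2 * (\<Sum>k\<in>{1..<n}. post_var a lam n k)"
    by (simp add: sum.distrib sum_distrib_left)
  finally have main: "(\<Sum>k\<in>{1..<n}. (real n * a k * lam n k / (real n * (a k)\<^sup>2 * lam n k + 1) * Dk k - f k)\<^sup>2
        + (real n * a k * lam n k / (real n * (a k)\<^sup>2 * lam n k + 1))\<^sup>2 / real n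
        + post_var a lam n k) \<le> 2 * K\<^sup>2 * B1 + 2 * Md\<^sup>2 * G0 * K\<^sup>2 * real n powr (-2 * \<beta>) + 2 * (\<Sum>k\<in>{1..<n}. post_var a lam n k)"
    using sum1 sum2 by linarith
  show ?thesis using main T unfolding Dk_def G0_def by (simp add: algebra_simps)
qed


lemma in_Sb_summable_sq:
  assumes "in_Sb \<beta> f" "\<beta> > 0"
  shows "summable (\<lambda>k. (f (Suc k))\<^sup>2)"
proof (rule summable_comparison_test[OF _ assms(1)[unfolded in_Sb_def]])
  show "\<exists>N. \<forall>n\<ge>N. norm ((f (Suc n))\<^sup>2) \<le> (f (Suc n))\<^sup>2 * real (Suc n) powr (2 * \<beta>)"
  proof (intro exI allI impI)
    fix n :: nat
    have "1 \<le> real (Suc n) powr (2 * \<beta>)" using assms(2) by (intro ge_one_powr_ge_zero) auto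
    then have "(f (Suc n))\<^sup>2 * 1 \<le> (f (Suc n))\<^sup>2 * real (Suc n) powr (2 * \<beta>)" by (intro mult_left_mono) auto
    then show "norm ((f (Suc n))\<^sup>2) \<le> (f (Suc n))\<^sup>2 * real (Suc n) powr (2 * \<beta>)" by simp
  qed
qed

lemma contracts_gen:
  fixes a :: "nat \<Rightarrow> real" and \<psi> :: "nat \<Rightarrow> real \<Rightarrow> real" and p s \<beta> K :: real
    and lam :: "nat \<Rightarrow> nat \<Rightarrow> real" and eps M :: "nat \<Rightarrow> real"
  assumes a_pos: "\<forall>k\<ge>1. a k > 0"
    and design: "design_cond \<psi>"
    and Af_def: "\<forall>f. in_Sb \<beta> f \<longrightarrow> (\<forall>x\<in>{0..1}. summable (\<lambda>j. f (Suc j) * a (Suc j) * \<psi> (Suc j) x))"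
    and p_pos: "p > 0" and s_ge: "s \<ge> 1"
    and a_rate: "a \<in> \<Theta>(\<lambda>k. exp (- p * real k powr s))"
    and beta_pos: "\<beta> > 0" and K: "K > 0"
    and Mlim: "filterlim M at_top sequentially"
    and lpos: "\<forall>n\<ge>2. \<forall>k\<in>{1..<n}. lam n k > 0"
    and epos: "eventually (\<lambda>n. eps n > 0) sequentially"
    and an: "\<exists>C. eventually (\<lambda>n. (\<forall>k\<in>{1..<n}. 1 / (real k powr (2 * \<beta>) * (1 + real n * (a k)\<^sup>2 * lam n k)) \<le> C * (eps n)\<^sup>2)
               \<and> (\<Sum>k\<in>{1..<n}. post_var a lam n k) \<le> C * (eps n)\<^sup>2
               \<and> real n powr (-2 * \<beta>) \<le> C * (eps n)\<^sup>2) sequentially"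
  shows "contracts a \<psi> \<beta> lam eps M K"
proof -
  obtain Cl Cu where Cl: "Cl > 0" and Cu: "Cu > 0"
    and ab: "\<forall>k\<ge>1. Cl * exp (- p * real k powr s) \<le> a k \<and> a k \<le> Cu * exp (- p * real k powr s)"
    using a_bounds[OF a_pos a_rate] by blast
  obtain Md where Md: "Md > 0" and Mdb: "\<forall>n\<ge>2. \<forall>k j. 1 \<le> k \<and> k < n \<and> n \<le> j \<longrightarrow> \<bar>ip_d n (\<psi> j) (\<psi> k)\<bar> \<le> Md"
    using design_bound[OF design] by blast
  have orth: "\<forall>n\<ge>2. \<forall>j k. 1 \<le> j \<and> j < n \<and> 1 \<le> k \<and> k < n \<longrightarrow> ip_d n (\<psi> j) (\<psi> k) = (if j = k then 1 else 0)"
    using design unfolding design_cond_def by blast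
  obtain C where C: "eventually (\<lambda>n. (\<forall>k\<in>{1..<n}. 1 / (real k powr (2 * \<beta>) * (1 + real n * (a k)\<^sup>2 * lam n k)) \<le> C * (eps n)\<^sup>2)
               \<and> (\<Sum>k\<in>{1..<n}. post_var a lam n k) \<le> C * (eps n)\<^sup>2
               \<and> real n powr (-2 * \<beta>) \<le> C * (eps n)\<^sup>2) sequentially"
    using an by blast
  define G where "G = 2 * Md\<^sup>2 * (Cu\<^sup>2 / ((1 - exp (- p))\<^sup>2 * Cl\<^sup>2 * (1 - (exp (- p))\<^sup>2))) + 1"
  define W where "W = 2 * K\<^sup>2 * C + 2 * C + G * K\<^sup>2 * C"
  define Ball where "Ball = {f0. in_Sb \<beta> f0 \<and> Sb_norm \<beta> f0 \<le> K}"
  have Mpos: "eventually (\<lambda>n. M n > 0) sequentially"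
    using Mlim by (simp add: filterlim_at_top_dense)
  have ev: "eventually (\<lambda>n. \<forall>f0\<in>Ball. 0 \<le> exp_post_mass a \<psi> lam n f0 (M n * eps n)
                 \<and> exp_post_mass a \<psi> lam n f0 (M n * eps n) \<le> W / (M n)\<^sup>2) sequentially"
    using C epos Mpos eventually_ge_at_top[of 2]
  proof eventually_elim
    case (elim n)
    have n2: "n \<ge> 2" using elim by simp
    have en: "eps n > 0" and Mn: "M n > 0" using elim by auto
    have B1: "\<forall>k\<in>{1..<n}. 1 / (real k powr (2 * \<beta>) * (1 + real n * (a k)\<^sup>2 * lam n k)) \<le> C * (eps n)\<^sup>2"
      and V: "(\<Sum>k\<in>{1..<n}. post_var a lam n k) \<le> C * (eps n)\<^sup>2"
      and NB: "real n powr (-2 * \<beta>) \<le> C * (eps n)\<^sup>2" using elim by auto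
    have C0: "C \<ge> 0"
    proof -
      have "0 < real n powr (-2 * \<beta>)" using n2 by simp
      then have "0 < C * (eps n)\<^sup>2" using NB by linarith
      then show ?thesis using en by (simp add: zero_less_mult_iff)
    qed
    show ?case
    proof
      fix f0 assume f0: "f0 \<in> Ball"
      then have fS: "in_Sb \<beta> f0" and fK: "Sb_norm \<beta> f0 \<le> K" by (auto simp: Ball_def)
      define r where "r = M n * eps n"
      have r: "r > 0" using en Mn by (simp add: r_def)
      have lp: "\<forall>k\<in>{1..<n}. lam n k > 0" using lpos n2 by auto
      have vpos: "\<forall>k\<in>{1..<n}. post_var a lam n k > 0"
      proof
        fix k assume k: "k \<in> {1..<n}"
        then have l: "lam n k > 0" using lp by auto
        have x: "0 \<le> real n * (a k)\<^sup>2 * lam n k" using l by simp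
        have "real n * (a k)\<^sup>2 * lam n k + 1 > 0" using x by linarith
        then show "post_var a lam n k > 0" unfolding post_var_def using l by (rule divide_pos_pos[rotated])
      qed
      have sf: "summable (\<lambda>k. (f0 (Suc k))\<^sup>2)" by (rule in_Sb_summable_sq[OF fS beta_pos])
      have ipkk: "\<forall>k\<in>{1..<n}. ip_d n (\<psi> k) (\<psi> k) = 1" using orth n2 by auto
      have Af: "\<forall>x\<in>{0..1}. summable (\<lambda>j. f0 (Suc j) * a (Suc j) * \<psi> (Suc j) x)" using Af_def fS by blast
      have e1: "exp_post_mass a \<psi> lam n f0 r \<le>
        ((\<Sum>k\<in>{1..<n}. (real n * a k * lam n k / (real n * (a k)\<^sup>2 * lam n k + 1) *
          ((1 / real n) * (\<Sum>i=1..n. A_eval a \<psi> f0 (design_pt n i) * \<psi> k (design_pt n i))) - f0 k)\<^sup>2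
        + (real n * a k * lam n k / (real n * (a k)\<^sup>2 * lam n k + 1))\<^sup>2 / real n
        + post_var a lam n k)
       + (\<Sum>k. if n \<le> Suc k then (f0 (Suc k))\<^sup>2 else 0)) / r\<^sup>2"
        by (rule exp_bound[OF r vpos sf ipkk])
      have e2: "(\<Sum>k\<in>{1..<n}. (real n * a k * lam n k / (real n * (a k)\<^sup>2 * lam n k + 1) *
          ((1 / real n) * (\<Sum>i=1..n. A_eval a \<psi> f0 (design_pt n i) * \<psi> k (design_pt n i))) - f0 k)\<^sup>2
        + (real n * a k * lam n k / (real n * (a k)\<^sup>2 * lam n k + 1))\<^sup>2 / real n
        + post_var a lam n k)
       + (\<Sum>k. if n \<le> Suc k then (f0 (Suc k))\<^sup>2 else 0)
       \<le> 2 * K\<^sup>2 * (C * (eps n)\<^sup>2) + 2 * (\<Sum>k\<in>{1..<n}. post_var a lam n k) + G * K\<^sup>2 * real n powr (-2 * \<beta>)"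
        unfolding G_def
        by (rule det_bound[where Md=Md and lam=lam and f=f0 and \<psi>=\<psi> and a=a and n=n, OF n2 p_pos s_ge Cl Cu ab beta_pos _ _ Af fS fK lp B1])
           (use Mdb orth n2 in auto)
      have q1: "exp (- p) < 1" "0 \<le> exp (- p)" using p_pos by auto
      then have q2: "(exp (- p))\<^sup>2 < 1" using power_less_one_iff[of "exp (- p)" 2] by auto
      have G0: "G \<ge> 0" unfolding G_def using q2
        by (intro add_nonneg_nonneg mult_nonneg_nonneg divide_nonneg_nonneg) auto
      have "2 * K\<^sup>2 * (C * (eps n)\<^sup>2) + 2 * (\<Sum>k\<in>{1..<n}. post_var a lam n k) + G * K\<^sup>2 * real n powr (-2 * \<beta>)
          \<le> 2 * K\<^sup>2 * (C * (eps n)\<^sup>2) + 2 * (C * (eps n)\<^sup>2) + G * K\<^sup>2 * (C * (eps n)\<^sup>2)"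
        using V NB G0 by (intro add_mono mult_left_mono order_refl) auto
      also have "\<dots> = W * (eps n)\<^sup>2" by (simp add: W_def algebra_simps)
      finally have "exp_post_mass a \<psi> lam n f0 r \<le> W * (eps n)\<^sup>2 / r\<^sup>2"
        using e1 e2 r by (meson divide_right_mono order.trans zero_le_power2)
      also have "W * (eps n)\<^sup>2 / r\<^sup>2 = W / (M n)\<^sup>2" using en Mn by (simp add: r_def power_mult_distrib)
      finally have up: "exp_post_mass a \<psi> lam n f0 r \<le> W / (M n)\<^sup>2" .
      have lo: "0 \<le> exp_post_mass a \<psi> lam n f0 r"
        unfolding exp_post_mass_def post_mass_def by (intro integral_nonneg_AE AE_I2) simp
      show "0 \<le> exp_post_mass a \<psi> lam n f0 (M n * eps n) \<and> exp_post_mass a \<psi> lam n f0 (M n * eps n) \<le> W / (M n)\<^sup>2"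
        using up lo by (simp add: r_def)
    qed
  qed
  have zB: "(\<lambda>k. 0) \<in> Ball" using K by (simp add: Ball_def in_Sb_def Sb_norm_def)
  have ev2: "eventually (\<lambda>n. 0 \<le> (SUP f0\<in>Ball. exp_post_mass a \<psi> lam n f0 (M n * eps n))
       \<and> (SUP f0\<in>Ball. exp_post_mass a \<psi> lam n f0 (M n * eps n)) \<le> W / (M n)\<^sup>2) sequentially"
    using ev
  proof eventually_elim
    case (elim n)
    have bdd: "bdd_above ((\<lambda>f0. exp_post_mass a \<psi> lam n f0 (M n * eps n)) ` Ball)"
      using elim by (auto intro!: bdd_aboveI2)
    have "0 \<le> exp_post_mass a \<psi> lam n (\<lambda>k. 0) (M n * eps n)" using elim zB by auto
    also have "\<dots> \<le> (SUP f0\<in>Ball. exp_post_mass a \<psi> lam n f0 (M n * eps n))"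
      by (rule cSUP_upper[OF zB bdd])
    finally have l: "0 \<le> (SUP f0\<in>Ball. exp_post_mass a \<psi> lam n f0 (M n * eps n))" .
    have u: "(SUP f0\<in>Ball. exp_post_mass a \<psi> lam n f0 (M n * eps n)) \<le> W / (M n)\<^sup>2"
      using elim zB by (intro cSUP_least) auto
    show ?case using l u by simp
  qed
  have lim: "(\<lambda>n. W / (M n)\<^sup>2) \<longlonglongrightarrow> 0"
  proof -
    have "filterlim (\<lambda>n. (M n)\<^sup>2) at_top sequentially"
      using filterlim_pow_at_top[OF _ Mlim, of 2] by simp
    then have "filterlim (\<lambda>n. (M n)\<^sup>2) at_infinity sequentially"
      by (rule filterlim_at_top_imp_at_infinity)
    then show ?thesis by (rule tendsto_divide_0[OF tendsto_const])
  qed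
  show ?thesis unfolding contracts_def Ball_def[symmetric]
    by (rule tendsto_sandwich[OF _ _ tendsto_const lim]) (use ev2 in \<open>auto elim: eventually_mono\<close>)
qed


lemma pow_le_exp:
  fixes y c :: real and m :: nat
  assumes y: "y \<ge> 0" and c: "c > 0" and m: "m \<ge> 1"
  shows "y ^ m \<le> (real m / c) ^ m * exp (c * y)"
proof -
  have "c * y / real m \<le> exp (c * y / real m)"
    using exp_ge_add_one_self[of "c * y / real m"] by linarith
  then have "(c * y / real m) ^ m \<le> exp (c * y / real m) ^ m"
    using y c m by (intro power_mono) auto
  also have "exp (c * y / real m) ^ m = exp (c * y)"
    using exp_of_nat_mult[of m "c * y / real m", symmetric] m by simp
  finally have h: "(c * y / real m) ^ m \<le> exp (c * y)" .
  have yy: "real m / c * (c * y / real m) = y" using c m by (simp add: field_simps)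
  have "y ^ m = (real m / c) ^ m * (c * y / real m) ^ m"
    by (simp only: power_mult_distrib[symmetric] yy)
  also have "\<dots> \<le> (real m / c) ^ m * exp (c * y)"
    using h c by (intro mult_left_mono) auto
  finally show ?thesis .
qed

lemma PE:
  fixes \<gamma> c :: real
  assumes g: "\<gamma> \<ge> 0" and c: "c > 0"
  shows "\<exists>C>0. \<forall>y\<ge>0. y powr \<gamma> \<le> C * exp (c * y)"
proof -
  define m where "m = nat \<lceil>\<gamma>\<rceil> + 1"
  have m1: "m \<ge> 1" by (simp add: m_def)
  have gm: "\<gamma> \<le> real m" unfolding m_def using g by linarith
  define C where "C = max 1 ((real m / c) ^ m)"
  have C: "C > 0" by (simp add: C_def)
  have "y powr \<gamma> \<le> C * exp (c * y)" if y: "y \<ge> 0" for y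
  proof (cases "y \<ge> 1")
    case True
    have "y powr \<gamma> \<le> y powr (real m)" using True gm by (intro powr_mono) auto
    also have "\<dots> = y ^ m" using True by (simp add: powr_realpow)
    also have "\<dots> \<le> (real m / c) ^ m * exp (c * y)" by (rule pow_le_exp[OF y c m1])
    also have "\<dots> \<le> C * exp (c * y)" by (intro mult_right_mono) (auto simp: C_def)
    finally show ?thesis .
  next
    case False
    have "y powr \<gamma> \<le> 1" using False y g by (intro powr_le1) auto
    also have "1 \<le> exp (c * y)" using c y by simp
    also have "exp (c * y) = 1 * exp (c * y)" by simp
    also have "\<dots> \<le> C * exp (c * y)" by (intro mult_right_mono) (auto simp: C_def)
    finally show ?thesis .
  qed
  then show ?thesis using C by blast
qed

lemma bern_neg:
  fixes k g :: real
  assumes k: "k \<ge> 2" and g: "g > 0"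
  shows "g * k powr (-1 - g) \<le> (k - 1) powr (-g) - k powr (-g)"
proof -
  define u where "u = 1 / k"
  have u: "0 < u" "u < 1" using k by (auto simp: u_def)
  have "ln (1 - u) \<le> - u" using ln_le_minus_one[of "1 - u"] u by simp
  then have "g * ln (1 - u) \<le> g * (- u)" using g by (intro mult_left_mono) auto
  then have "1 + g * u \<le> 1 - g * ln (1 - u)" by simp
  also have "\<dots> \<le> exp (- g * ln (1 - u))" using exp_ge_add_one_self[of "- g * ln (1 - u)"] by simp
  also have "exp (- g * ln (1 - u)) = (1 - u) powr (-g)" using u by (simp add: powr_def)
  finally have b: "1 + g * u \<le> (1 - u) powr (-g)" .
  have ku: "k * (1 - u) = k - 1" using k by (simp add: u_def field_simps)
  have "(k - 1) powr (-g) = (k * (1 - u)) powr (-g)" by (simp only: ku)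
  also have "\<dots> = k powr (-g) * (1 - u) powr (-g)" using k u by (simp add: powr_mult)
  finally have e: "(k - 1) powr (-g) = k powr (-g) * (1 - u) powr (-g)" .
  have "k powr (-g) * (1 + g * u) \<le> k powr (-g) * (1 - u) powr (-g)"
    using b by (intro mult_left_mono) auto
  moreover have "k powr (-g) * (1 + g * u) = k powr (-g) + g * k powr (-1 - g)"
  proof -
    have "k powr (-1 - g) = k powr (-g + -1)" by (rule arg_cong[where f="\<lambda>x. k powr x"]) simp
    also have "\<dots> = k powr (-g) * k powr (-1)" using k by (simp only: powr_add)
    also have "k powr (-1) = u" using k by (simp add: u_def powr_minus_divide)
    finally show ?thesis by (simp add: algebra_simps)
  qed
  ultimately show ?thesis using e by linarith
qed

lemma tail_tel:
  fixes g :: real and m :: nat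
  assumes g: "g > 0" and m: "m \<ge> 1"
  shows "g * (\<Sum>k\<in>{m<..<N}. real k powr (-1 - g)) \<le> real m powr (-g) - real (max m (N - 1)) powr (-g)"
proof (induction N)
  case 0 then show ?case by simp
next
  case (Suc N)
  show ?case
  proof (cases "m < N")
    case True
    have set: "{m<..<Suc N} = insert N {m<..<N}" using True by auto
    have "g * (\<Sum>k\<in>{m<..<Suc N}. real k powr (-1 - g)) = g * (\<Sum>k\<in>{m<..<N}. real k powr (-1 - g)) + g * real N powr (-1 - g)"
      by (simp add: set algebra_simps)
    also have "\<dots> \<le> (real m powr (-g) - real (max m (N - 1)) powr (-g)) + ((real N - 1) powr (-g) - real N powr (-g))"
      using Suc.IH bern_neg[of "real N" g] True m g by (intro add_mono) auto
    also have "real (max m (N - 1)) = real N - 1" using True by (simp add: of_nat_diff)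
    also have "real (max m (Suc N - 1)) = real N" using True by simp
    ultimately show ?thesis by simp
  next
    case False
    then have "{m<..<Suc N} = {m<..<N}" by auto
    moreover have "max m (Suc N - 1) = m" "max m (N - 1) = m" using False by auto
    ultimately show ?thesis using Suc.IH by simp
  qed
qed

lemma tail_sum:
  fixes g t :: real
  assumes g: "g > 0" and t: "t \<ge> 1"
  shows "(\<Sum>k\<in>{k\<in>{1..<n}. t < real k}. real k powr (-1 - g)) \<le> (2 powr g / g) * t powr (-g)"
proof -
  define m where "m = nat \<lfloor>t\<rfloor>"
  have m1: "m \<ge> 1" using t by (simp add: m_def le_nat_floor)
  have rm: "real m = of_int \<lfloor>t\<rfloor>" using t by (simp add: m_def)
  have mt: "real m \<le> t" "t < real m + 1" unfolding rm by (rule of_int_floor_le, rule real_of_int_floor_add_one_gt)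
  have sub: "{k\<in>{1..<n}. t < real k} \<subseteq> {m<..<n}" using mt by auto
  have "(\<Sum>k\<in>{k\<in>{1..<n}. t < real k}. real k powr (-1 - g)) \<le> (\<Sum>k\<in>{m<..<n}. real k powr (-1 - g))"
    by (rule sum_mono2[OF _ sub]) auto
  also have "\<dots> \<le> real m powr (-g) / g"
  proof -
    have "g * (\<Sum>k\<in>{m<..<n}. real k powr (-1 - g)) \<le> real m powr (-g) - real (max m (n - 1)) powr (-g)"
      by (rule tail_tel[OF g m1])
    also have "\<dots> \<le> real m powr (-g)" by simp
    finally show ?thesis using g by (simp add: field_simps)
  qed
  also have "real m powr (-g) \<le> (t / 2) powr (-g)"
  proof (rule powr_mono2')
    show "t / 2 \<le> real m" using mt m1 by linarith
  qed (use g t in auto)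
  also have "(t / 2) powr (-g) = 2 powr g * t powr (-g)"
    using t by (simp add: powr_divide powr_minus_divide divide_simps)
  finally show ?thesis using g by (simp add: divide_right_mono field_simps)
qed

lemma count_sum:
  fixes t c :: real
  assumes c: "c \<ge> 0" and t: "t \<ge> 0"
  shows "(\<Sum>k\<in>{k\<in>{1..<n}. real k \<le> t}. c) \<le> t * c"
proof -
  have sub: "{k\<in>{1..<n}. real k \<le> t} \<subseteq> {1..nat \<lfloor>t\<rfloor>}"
    by (auto simp: le_nat_floor)
  have "card {k\<in>{1..<n}. real k \<le> t} \<le> card {1..nat \<lfloor>t\<rfloor>}" by (rule card_mono[OF _ sub]) auto
  then have "real (card {k\<in>{1..<n}. real k \<le> t}) \<le> real (nat \<lfloor>t\<rfloor>)" by simp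
  also have "\<dots> \<le> t" using t by simp
  finally show ?thesis using c by (simp add: mult_right_mono)
qed


lemma PE_s:
  fixes \<gamma> c s :: real
  assumes g: "\<gamma> \<ge> 0" and c: "c > 0" and s: "s > 0"
  shows "\<exists>C>0. \<forall>t\<ge>0. t powr \<gamma> \<le> C * exp (c * t powr s)"
proof -
  obtain C where C: "C > 0" "\<forall>y\<ge>0. y powr (\<gamma> / s) \<le> C * exp (c * y)"
    using PE[of "\<gamma> / s" c] g c s by auto
  have "t powr \<gamma> \<le> C * exp (c * t powr s)" if "t \<ge> 0" for t
  proof -
    have "(t powr s) powr (\<gamma> / s) = t powr \<gamma>" using s by (simp add: powr_powr)
    then show ?thesis using C(2)[rule_format, of "t powr s"] by simp
  qed
  then show ?thesis using C by blast
qed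

lemma inv_a_sq:
  fixes a p s Cl :: real and k :: real
  assumes Cl: "Cl > 0" and alow: "Cl * exp (- p * k powr s) \<le> a"
  shows "1 / a\<^sup>2 \<le> exp (2 * p * k powr s) / Cl\<^sup>2"
proof -
  have pos: "Cl * exp (- p * k powr s) > 0" using Cl by simp
  have "1 / a\<^sup>2 \<le> 1 / (Cl * exp (- p * k powr s))\<^sup>2"
    using alow pos by (intro divide_left_mono power_mono mult_pos_pos) auto
  also have "(Cl * exp (- p * k powr s))\<^sup>2 = Cl\<^sup>2 * exp (- (2 * p * k powr s))"
  proof -
    have "exp (- (2 * p * k powr s)) = exp (- p * k powr s + - p * k powr s)"
      by (rule arg_cong[where f=exp]) simp
    also have "\<dots> = exp (- p * k powr s) * exp (- p * k powr s)" by (rule exp_add)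
    finally have "exp (- p * k powr s) ^ 2 = exp (- (2 * p * k powr s))" by (simp add: power2_eq_square)
    then show ?thesis by (simp add: power_mult_distrib)
  qed
  also have "1 / (Cl\<^sup>2 * exp (- (2 * p * k powr s))) = exp (2 * p * k powr s) / Cl\<^sup>2"
    by (simp add: exp_minus field_simps)
  finally show ?thesis .
qed

lemma R1_point:
  fixes a :: "nat \<Rightarrow> real" and p s \<beta> \<alpha> Cl \<rho> L Cp1 Cp2 :: real and n :: nat
  assumes p: "p > 0" and s: "s \<ge> 1" and b: "\<beta> > 0" and al: "\<alpha> > 0" and Cl: "Cl > 0"
    and alow: "\<forall>k\<ge>1. Cl * exp (- p * real k powr s) \<le> a k"
    and rho: "\<rho> > 0" and n: "n \<ge> 1" and Ldef: "L = ln (\<rho>\<^sup>2 * real n)" and L4: "L \<ge> 4 * p"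
    and Cp1: "\<forall>t\<ge>0. t powr (1 + 2 * \<alpha> + 2 * \<beta>) \<le> Cp1 * exp (2 * p * t powr s)"
    and Cp2: "\<forall>t\<ge>0. t powr (1 + 2 * \<alpha>) \<le> Cp2 * exp (2 * p * t powr s)"
  shows "\<forall>k\<in>{1..<n}. 1 / (real k powr (2 * \<beta>) * (1 + real n * (a k)\<^sup>2 * (\<rho>\<^sup>2 * real k powr (-1 - 2 * \<alpha>))))
            \<le> max (Cp1 / Cl\<^sup>2) 1 * ((L / (4 * p)) powr (1 / s)) powr (-2 * \<beta>)"
    and "(\<Sum>k\<in>{1..<n}. (\<rho>\<^sup>2 * real k powr (-1 - 2 * \<alpha>)) / (real n * (a k)\<^sup>2 * (\<rho>\<^sup>2 * real k powr (-1 - 2 * \<alpha>)) + 1))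
            \<le> (Cp2 / Cl\<^sup>2 + 2 powr (2 * \<alpha>) / (2 * \<alpha>)) * \<rho>\<^sup>2 * ((L / (4 * p)) powr (1 / s)) powr (-2 * \<alpha>)"
proof -
  define t where "t = (L / (4 * p)) powr (1 / s)"
  have s0: "s > 0" using s by simp
  have Lpos: "L > 0" using L4 p by simp
  have t1: "t \<ge> 1" unfolding t_def using L4 p s0 by (intro ge_one_powr_ge_zero) (auto simp: field_simps)
  have ts: "t powr s = L / (4 * p)" unfolding t_def using Lpos p s0 by (simp add: powr_powr)
  have eL: "exp L = \<rho>\<^sup>2 * real n" using Ldef rho n by simp
  have eL2: "exp (2 * p * t powr s) * exp (2 * p * t powr s) = \<rho>\<^sup>2 * real n"
    unfolding ts eL[symmetric] exp_add[symmetric] using p by (simp add: field_simps)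
  have E0: "exp (2 * p * t powr s) > 0" by simp
  have sm: "1 / (real n * (a k)\<^sup>2) \<le> exp (2 * p * t powr s) / (Cl\<^sup>2 * real n)" if k: "k \<ge> 1" "real k \<le> t" for k
  proof -
    have "1 / (a k)\<^sup>2 \<le> exp (2 * p * real k powr s) / Cl\<^sup>2"
      using inv_a_sq[OF Cl] alow k by auto
    also have "exp (2 * p * real k powr s) \<le> exp (2 * p * t powr s)"
      using k p s0 by (auto intro!: mult_left_mono powr_mono2)
    then have "exp (2 * p * real k powr s) / Cl\<^sup>2 \<le> exp (2 * p * t powr s) / Cl\<^sup>2"
      by (intro divide_right_mono) auto
    finally have "1 / (a k)\<^sup>2 \<le> exp (2 * p * t powr s) / Cl\<^sup>2" .
    then have "(1 / (a k)\<^sup>2) / real n \<le> (exp (2 * p * t powr s) / Cl\<^sup>2) / real n"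
      by (intro divide_right_mono) auto
    then show ?thesis by (simp add: field_simps)
  qed
  have apos: "a k > 0" if "k \<ge> 1" for k
  proof -
    have "Cl * exp (- p * real k powr s) \<le> a k" using alow that by auto
    moreover have "Cl * exp (- p * real k powr s) > 0" using Cl by simp
    ultimately show ?thesis by linarith
  qed
  show "\<forall>k\<in>{1..<n}. 1 / (real k powr (2 * \<beta>) * (1 + real n * (a k)\<^sup>2 * (\<rho>\<^sup>2 * real k powr (-1 - 2 * \<alpha>))))
            \<le> max (Cp1 / Cl\<^sup>2) 1 * ((L / (4 * p)) powr (1 / s)) powr (-2 * \<beta>)"
  proof
    fix k assume kk: "k \<in> {1..<n}"
    then have k1: "k \<ge> 1" by simp
    define x where "x = real n * (a k)\<^sup>2 * (\<rho>\<^sup>2 * real k powr (-1 - 2 * \<alpha>))"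
    have x0: "x > 0" using apos[OF k1] rho n k1 by (simp add: x_def)
    have kb: "real k powr (2 * \<beta>) \<ge> 1" using k1 b by (intro ge_one_powr_ge_zero) auto
    have tb0: "t powr (-2 * \<beta>) > 0" using t1 by simp
    have "1 / (real k powr (2 * \<beta>) * (1 + x)) \<le> max (Cp1 / Cl\<^sup>2) 1 * t powr (-2 * \<beta>)"
    proof (cases "real k \<le> t")
      case True
      have d: "x \<le> real k powr (2 * \<beta>) * (1 + x)"
      proof -
        have "1 * (1 + x) \<le> real k powr (2 * \<beta>) * (1 + x)" using kb x0 by (intro mult_right_mono) auto
        then show ?thesis by simp
      qed
      have "1 / (real k powr (2 * \<beta>) * (1 + x)) \<le> 1 / x"
        by (rule divide_left_mono[OF d]) (use x0 kb k1 in \<open>auto intro!: mult_pos_pos\<close>)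
      also have "1 / x = real k powr (1 + 2 * \<alpha>) / \<rho>\<^sup>2 * (1 / (real n * (a k)\<^sup>2))"
      proof -
        have "real k powr (-1 - 2 * \<alpha>) = 1 / real k powr (1 + 2 * \<alpha>)"
          using k1 by (simp add: powr_minus_divide[symmetric])
        then show ?thesis using x0 rho n apos[OF k1] by (simp add: x_def field_simps)
      qed
      also have "\<dots> \<le> real k powr (1 + 2 * \<alpha>) / \<rho>\<^sup>2 * (exp (2 * p * t powr s) / (Cl\<^sup>2 * real n))"
        using sm[OF k1 True] by (intro mult_left_mono) auto
      also have "real k powr (1 + 2 * \<alpha>) \<le> t powr (1 + 2 * \<alpha>)"
        using True k1 al by (intro powr_mono2) auto
      then have "real k powr (1 + 2 * \<alpha>) / \<rho>\<^sup>2 * (exp (2 * p * t powr s) / (Cl\<^sup>2 * real n))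
          \<le> t powr (1 + 2 * \<alpha>) / \<rho>\<^sup>2 * (exp (2 * p * t powr s) / (Cl\<^sup>2 * real n))"
        using rho n by (intro mult_right_mono divide_right_mono) auto
      also have "t powr (1 + 2 * \<alpha>) / \<rho>\<^sup>2 * (exp (2 * p * t powr s) / (Cl\<^sup>2 * real n))
          = t powr (1 + 2 * \<alpha>) / (Cl\<^sup>2 * exp (2 * p * t powr s))"
        using eL2 E0 rho n Cl by (simp add: field_simps)
      also have "t powr (1 + 2 * \<alpha>) = t powr (1 + 2 * \<alpha> + 2 * \<beta>) * t powr (-2 * \<beta>)"
        using t1 by (simp add: powr_add[symmetric])
      also have "t powr (1 + 2 * \<alpha> + 2 * \<beta>) * t powr (-2 * \<beta>) / (Cl\<^sup>2 * exp (2 * p * t powr s))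
          \<le> Cp1 * exp (2 * p * t powr s) * t powr (-2 * \<beta>) / (Cl\<^sup>2 * exp (2 * p * t powr s))"
        using Cp1 t1 tb0 Cl by (intro divide_right_mono mult_right_mono) auto
      also have "\<dots> = (Cp1 / Cl\<^sup>2) * t powr (-2 * \<beta>)" using E0 Cl by (simp add: field_simps)
      also have "\<dots> \<le> max (Cp1 / Cl\<^sup>2) 1 * t powr (-2 * \<beta>)" using tb0 by (intro mult_right_mono) auto
      finally show ?thesis .
    next
      case False
      have d2: "real k powr (2 * \<beta>) \<le> real k powr (2 * \<beta>) * (1 + x)"
      proof -
        have "real k powr (2 * \<beta>) * 1 \<le> real k powr (2 * \<beta>) * (1 + x)" using kb x0 by (intro mult_left_mono) auto
        then show ?thesis by simp
      qed
      have kb0: "real k powr (2 * \<beta>) > 0" using kb by linarith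
      have "1 / (real k powr (2 * \<beta>) * (1 + x)) \<le> 1 / real k powr (2 * \<beta>)"
        by (rule divide_left_mono[OF d2]) (use x0 kb0 in \<open>auto intro!: mult_pos_pos\<close>)
      also have "\<dots> = real k powr (-2 * \<beta>)" using k1 by (simp add: powr_minus_divide)
      also have "\<dots> \<le> t powr (-2 * \<beta>)" using False t1 b by (intro powr_mono2') auto
      also have "\<dots> = 1 * t powr (-2 * \<beta>)" by simp
      also have "\<dots> \<le> max (Cp1 / Cl\<^sup>2) 1 * t powr (-2 * \<beta>)" using tb0 by (intro mult_right_mono) auto
      finally show ?thesis .
    qed
    then show "1 / (real k powr (2 * \<beta>) * (1 + real n * (a k)\<^sup>2 * (\<rho>\<^sup>2 * real k powr (-1 - 2 * \<alpha>))))
            \<le> max (Cp1 / Cl\<^sup>2) 1 * ((L / (4 * p)) powr (1 / s)) powr (-2 * \<beta>)"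
      by (simp add: x_def t_def)
  qed
  show "(\<Sum>k\<in>{1..<n}. (\<rho>\<^sup>2 * real k powr (-1 - 2 * \<alpha>)) / (real n * (a k)\<^sup>2 * (\<rho>\<^sup>2 * real k powr (-1 - 2 * \<alpha>)) + 1))
            \<le> (Cp2 / Cl\<^sup>2 + 2 powr (2 * \<alpha>) / (2 * \<alpha>)) * \<rho>\<^sup>2 * ((L / (4 * p)) powr (1 / s)) powr (-2 * \<alpha>)"
  proof -
    define h1 where "h1 k = (if real k \<le> t then exp (2 * p * t powr s) / (Cl\<^sup>2 * real n) else 0)" for k :: nat
    define h2 where "h2 k = (if t < real k then \<rho>\<^sup>2 * real k powr (-1 - 2 * \<alpha>) else 0)" for k :: nat
    have le: "(\<rho>\<^sup>2 * real k powr (-1 - 2 * \<alpha>)) / (real n * (a k)\<^sup>2 * (\<rho>\<^sup>2 * real k powr (-1 - 2 * \<alpha>)) + 1) \<le> h1 k + h2 k"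
      if kk: "k \<in> {1..<n}" for k
    proof -
      have k1: "k \<ge> 1" using kk by simp
      define lk where "lk = \<rho>\<^sup>2 * real k powr (-1 - 2 * \<alpha>)"
      have lk0: "lk > 0" using rho k1 by (simp add: lk_def)
      have d0: "real n * (a k)\<^sup>2 * lk > 0" using apos[OF k1] n lk0 by simp
      show ?thesis
      proof (cases "real k \<le> t")
        case True
        have "lk / (real n * (a k)\<^sup>2 * lk + 1) \<le> lk / (real n * (a k)\<^sup>2 * lk)"
          using d0 lk0 by (intro divide_left_mono) auto
        also have "\<dots> = 1 / (real n * (a k)\<^sup>2)" using lk0 by simp
        also have "\<dots> \<le> h1 k" using sm[OF k1 True] True by (simp add: h1_def)
        finally show ?thesis unfolding lk_def using True by (simp add: h2_def)
      next
        case False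
        have "lk / (real n * (a k)\<^sup>2 * lk + 1) \<le> lk / 1"
          using d0 lk0 by (intro divide_left_mono) auto
        then show ?thesis unfolding lk_def using False by (simp add: h1_def h2_def)
      qed
    qed
    have "(\<Sum>k\<in>{1..<n}. (\<rho>\<^sup>2 * real k powr (-1 - 2 * \<alpha>)) / (real n * (a k)\<^sup>2 * (\<rho>\<^sup>2 * real k powr (-1 - 2 * \<alpha>)) + 1))
       \<le> (\<Sum>k\<in>{1..<n}. h1 k) + (\<Sum>k\<in>{1..<n}. h2 k)"
      unfolding sum.distrib[symmetric] by (rule sum_mono) (rule le)
    also have "(\<Sum>k\<in>{1..<n}. h1 k) = (\<Sum>k\<in>{k\<in>{1..<n}. real k \<le> t}. exp (2 * p * t powr s) / (Cl\<^sup>2 * real n))"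
      unfolding h1_def by (rule sum.inter_filter[symmetric]) simp
    also have "\<dots> \<le> t * (exp (2 * p * t powr s) / (Cl\<^sup>2 * real n))"
      using t1 by (intro count_sum) auto
    also have "\<dots> \<le> (Cp2 / Cl\<^sup>2) * \<rho>\<^sup>2 * t powr (-2 * \<alpha>)"
    proof -
      have "t = t powr (1 + 2 * \<alpha>) * t powr (-2 * \<alpha>)" using t1 by (simp add: powr_add[symmetric])
      also have "\<dots> \<le> Cp2 * exp (2 * p * t powr s) * t powr (-2 * \<alpha>)"
        using Cp2 t1 by (intro mult_right_mono) auto
      finally have tt: "t \<le> Cp2 * exp (2 * p * t powr s) * t powr (-2 * \<alpha>)" .
      have "t * (exp (2 * p * t powr s) / (Cl\<^sup>2 * real n)) \<le> Cp2 * exp (2 * p * t powr s) * t powr (-2 * \<alpha>) * (exp (2 * p * t powr s) / (Cl\<^sup>2 * real n))"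
        using tt Cl n by (intro mult_right_mono) auto
      also have "\<dots> = (Cp2 / Cl\<^sup>2) * (exp (2 * p * t powr s) * exp (2 * p * t powr s) / real n) * t powr (-2 * \<alpha>)"
        using Cl n by (simp add: field_simps)
      also have "exp (2 * p * t powr s) * exp (2 * p * t powr s) / real n = \<rho>\<^sup>2" using eL2 n by simp
      finally show ?thesis by (simp add: mult_ac)
    qed
    also have "(\<Sum>k\<in>{1..<n}. h2 k) = \<rho>\<^sup>2 * (\<Sum>k\<in>{k\<in>{1..<n}. t < real k}. real k powr (-1 - 2 * \<alpha>))"
      unfolding h2_def sum_distrib_left by (rule sum.inter_filter[symmetric]) simp
    also have "\<dots> \<le> \<rho>\<^sup>2 * ((2 powr (2 * \<alpha>) / (2 * \<alpha>)) * t powr (-(2 * \<alpha>)))"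
      using tail_sum[of "2 * \<alpha>" t n] al t1 by (intro mult_left_mono) (auto simp: algebra_simps)
    finally show ?thesis by (simp add: t_def algebra_simps)
  qed
qed


lemma powr_t:
  fixes L p s x :: real
  assumes L: "L > 0" and p: "p > 0" and s: "s > 0"
  shows "((L / (4 * p)) powr (1 / s)) powr x = (4 * p) powr (- x / s) * L powr (x / s)"
proof -
  have "((L / (4 * p)) powr (1 / s)) powr x = (L / (4 * p)) powr (x / s)"
    by (simp add: powr_powr)
  also have "\<dots> = L powr (x / s) / (4 * p) powr (x / s)" using L p by (simp add: powr_divide)
  also have "\<dots> = (4 * p) powr (- x / s) * L powr (x / s)" using p by (simp add: powr_minus_divide field_simps)
  finally show ?thesis .
qed

lemma max_sq_ge:
  fixes u v :: real assumes "u \<ge> 0"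
  shows "u\<^sup>2 \<le> (max u v)\<^sup>2" and "v \<ge> 0 \<Longrightarrow> v\<^sup>2 \<le> (max u v)\<^sup>2"
  using assms by (auto intro!: power_mono simp: max_def)

lemma R1_an:
  fixes a :: "nat \<Rightarrow> real" and p s \<beta> \<alpha> Cl :: real and \<rho> :: "nat \<Rightarrow> real"
  assumes p: "p > 0" and s: "s \<ge> 1" and b: "\<beta> > 0" and al: "\<alpha> > 0" and Cl: "Cl > 0"
    and alow: "\<forall>k\<ge>1. Cl * exp (- p * real k powr s) \<le> a k"
    and rho: "\<forall>n. \<rho> n > 0"
    and rlim: "filterlim (\<lambda>n. (\<rho> n)\<^sup>2 * real n) at_top sequentially"
  shows "\<exists>C>0. eventually (\<lambda>n.
      (\<forall>k\<in>{1..<n}. 1 / (real k powr (2 * \<beta>) * (1 + real n * (a k)\<^sup>2 * ((\<rho> n)\<^sup>2 * real k powr (-1 - 2 * \<alpha>))))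
          \<le> C * (max (ln ((\<rho> n)\<^sup>2 * real n) powr (- \<beta> / s)) (\<rho> n * ln ((\<rho> n)\<^sup>2 * real n) powr (- \<alpha> / s)))\<^sup>2)
    \<and> (\<Sum>k\<in>{1..<n}. ((\<rho> n)\<^sup>2 * real k powr (-1 - 2 * \<alpha>)) / (real n * (a k)\<^sup>2 * ((\<rho> n)\<^sup>2 * real k powr (-1 - 2 * \<alpha>)) + 1))
          \<le> C * (max (ln ((\<rho> n)\<^sup>2 * real n) powr (- \<beta> / s)) (\<rho> n * ln ((\<rho> n)\<^sup>2 * real n) powr (- \<alpha> / s)))\<^sup>2
    \<and> real n powr (-2 * \<beta>) \<le> C * (max (ln ((\<rho> n)\<^sup>2 * real n) powr (- \<beta> / s)) (\<rho> n * ln ((\<rho> n)\<^sup>2 * real n) powr (- \<alpha> / s)))\<^sup>2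
    \<and> max (ln ((\<rho> n)\<^sup>2 * real n) powr (- \<beta> / s)) (\<rho> n * ln ((\<rho> n)\<^sup>2 * real n) powr (- \<alpha> / s)) > 0) sequentially"
proof -
  have s0: "s > 0" using s by simp
  obtain Cp1 where Cp1: "Cp1 > 0" "\<forall>t\<ge>0. t powr (1 + 2 * \<alpha> + 2 * \<beta>) \<le> Cp1 * exp (2 * p * t powr s)"
    using PE_s[of "1 + 2 * \<alpha> + 2 * \<beta>" "2 * p" s] al b p s0 by auto
  obtain Cp2 where Cp2: "Cp2 > 0" "\<forall>t\<ge>0. t powr (1 + 2 * \<alpha>) \<le> Cp2 * exp (2 * p * t powr s)"
    using PE_s[of "1 + 2 * \<alpha>" "2 * p" s] al p s0 by auto
  obtain Cq where Cq: "Cq > 0" "\<forall>y\<ge>0. y powr (2 * \<alpha> / s) \<le> Cq * exp (1/2 * y)"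
    using PE[of "2 * \<alpha> / s" "1/2"] al s0 by auto
  obtain Cr where Cr: "Cr > 0" "\<forall>y::real\<ge>0. y powr 1 \<le> Cr * exp (1/2 * y)"
    using PE[of 1 "1/2"] by auto
  define Ca where "Ca = max (Cp1 / Cl\<^sup>2) 1 * (4 * p) powr (2 * \<beta> / s)"
  define Cb where "Cb = (Cp2 / Cl\<^sup>2 + 2 powr (2 * \<alpha>) / (2 * \<alpha>)) * (4 * p) powr (2 * \<alpha> / s)"
  define Cc where "Cc = max 1 (Cq * Cr)"
  define C where "C = Ca + Cb + Cc"
  have Ca: "Ca > 0" using p by (simp add: Ca_def)
  have Cb: "Cb > 0"
  proof -
    have "Cp2 / Cl\<^sup>2 + 2 powr (2 * \<alpha>) / (2 * \<alpha>) > 0" using Cl Cp2 al by (intro add_pos_pos divide_pos_pos) auto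
    moreover have "(4 * p) powr (2 * \<alpha> / s) > 0" using p by simp
    ultimately show ?thesis by (simp add: Cb_def)
  qed
  have Cc: "Cc \<ge> 1" by (simp add: Cc_def)
  have C: "C > 0" using Ca Cb Cc by (simp add: C_def)
  have Llim: "filterlim (\<lambda>n. ln ((\<rho> n)\<^sup>2 * real n)) at_top sequentially"
    by (rule filterlim_compose[OF ln_at_top rlim])
  have evL: "eventually (\<lambda>n. ln ((\<rho> n)\<^sup>2 * real n) \<ge> 4 * p) sequentially"
    using Llim by (simp add: filterlim_at_top)
  have "eventually (\<lambda>n.
      (\<forall>k\<in>{1..<n}. 1 / (real k powr (2 * \<beta>) * (1 + real n * (a k)\<^sup>2 * ((\<rho> n)\<^sup>2 * real k powr (-1 - 2 * \<alpha>))))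
          \<le> C * (max (ln ((\<rho> n)\<^sup>2 * real n) powr (- \<beta> / s)) (\<rho> n * ln ((\<rho> n)\<^sup>2 * real n) powr (- \<alpha> / s)))\<^sup>2)
    \<and> (\<Sum>k\<in>{1..<n}. ((\<rho> n)\<^sup>2 * real k powr (-1 - 2 * \<alpha>)) / (real n * (a k)\<^sup>2 * ((\<rho> n)\<^sup>2 * real k powr (-1 - 2 * \<alpha>)) + 1))
          \<le> C * (max (ln ((\<rho> n)\<^sup>2 * real n) powr (- \<beta> / s)) (\<rho> n * ln ((\<rho> n)\<^sup>2 * real n) powr (- \<alpha> / s)))\<^sup>2
    \<and> real n powr (-2 * \<beta>) \<le> C * (max (ln ((\<rho> n)\<^sup>2 * real n) powr (- \<beta> / s)) (\<rho> n * ln ((\<rho> n)\<^sup>2 * real n) powr (- \<alpha> / s)))\<^sup>2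
    \<and> max (ln ((\<rho> n)\<^sup>2 * real n) powr (- \<beta> / s)) (\<rho> n * ln ((\<rho> n)\<^sup>2 * real n) powr (- \<alpha> / s)) > 0) sequentially"
    using evL eventually_ge_at_top[of 1]
  proof eventually_elim
    case (elim n)
    define L where "L = ln ((\<rho> n)\<^sup>2 * real n)"
    define r where "r = \<rho> n"
    define e where "e = max (L powr (- \<beta> / s)) (r * L powr (- \<alpha> / s))"
    have n1: "n \<ge> 1" and L4: "L \<ge> 4 * p" using elim by (auto simp: L_def)
    have Lpos: "L > 0" using L4 p by simp
    have r: "r > 0" using rho by (simp add: r_def)
    have eLb: "L powr (- \<beta> / s) > 0" using Lpos by simp
    have e0: "e > 0" unfolding e_def using eLb max.cobounded1[of "L powr (- \<beta> / s)" "r * L powr (- \<alpha> / s)"] by linarith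
    have e1: "L powr (-2 * \<beta> / s) \<le> e\<^sup>2"
    proof -
      have "(L powr (- \<beta> / s))\<^sup>2 = L powr (-2 * \<beta> / s)" using Lpos
        by (simp add: power2_eq_square powr_add[symmetric])
      then show ?thesis using max_sq_ge(1)[of "L powr (- \<beta> / s)" "r * L powr (- \<alpha> / s)"] eLb by (simp add: e_def)
    qed
    have e2: "r\<^sup>2 * L powr (-2 * \<alpha> / s) \<le> e\<^sup>2"
    proof -
      have "(r * L powr (- \<alpha> / s))\<^sup>2 = r\<^sup>2 * L powr (-2 * \<alpha> / s)" using Lpos
        by (simp add: power2_eq_square powr_add[symmetric] mult_ac)
      then show ?thesis using max_sq_ge(2)[of "L powr (- \<beta> / s)" "r * L powr (- \<alpha> / s)"] eLb r by (simp add: e_def)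
    qed
    note P = R1_point[OF p s b al Cl alow r n1 L_def[unfolded r_def[symmetric]] L4 Cp1(2) Cp2(2)]
    have tb: "((L / (4 * p)) powr (1 / s)) powr (-2 * \<beta>) = (4 * p) powr (2 * \<beta> / s) * L powr (-2 * \<beta> / s)"
      using powr_t[OF Lpos p s0, of "-2 * \<beta>"] by simp
    have ta: "((L / (4 * p)) powr (1 / s)) powr (-2 * \<alpha>) = (4 * p) powr (2 * \<alpha> / s) * L powr (-2 * \<alpha> / s)"
      using powr_t[OF Lpos p s0, of "-2 * \<alpha>"] by simp
    have A: "\<forall>k\<in>{1..<n}. 1 / (real k powr (2 * \<beta>) * (1 + real n * (a k)\<^sup>2 * (r\<^sup>2 * real k powr (-1 - 2 * \<alpha>)))) \<le> C * e\<^sup>2"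
    proof
      fix k assume k: "k \<in> {1..<n}"
      have "1 / (real k powr (2 * \<beta>) * (1 + real n * (a k)\<^sup>2 * (r\<^sup>2 * real k powr (-1 - 2 * \<alpha>))))
          \<le> max (Cp1 / Cl\<^sup>2) 1 * ((L / (4 * p)) powr (1 / s)) powr (-2 * \<beta>)" using P(1) k by blast
      also have "\<dots> = Ca * L powr (-2 * \<beta> / s)" by (subst tb) (simp add: Ca_def)
      also have "\<dots> \<le> Ca * e\<^sup>2" using e1 Ca by (intro mult_left_mono) auto
      also have "\<dots> \<le> C * e\<^sup>2" using Cb Cc by (intro mult_right_mono) (auto simp: C_def)
      finally show "1 / (real k powr (2 * \<beta>) * (1 + real n * (a k)\<^sup>2 * (r\<^sup>2 * real k powr (-1 - 2 * \<alpha>)))) \<le> C * e\<^sup>2" .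
    qed
    have B: "(\<Sum>k\<in>{1..<n}. (r\<^sup>2 * real k powr (-1 - 2 * \<alpha>)) / (real n * (a k)\<^sup>2 * (r\<^sup>2 * real k powr (-1 - 2 * \<alpha>)) + 1)) \<le> C * e\<^sup>2"
    proof -
      have "(\<Sum>k\<in>{1..<n}. (r\<^sup>2 * real k powr (-1 - 2 * \<alpha>)) / (real n * (a k)\<^sup>2 * (r\<^sup>2 * real k powr (-1 - 2 * \<alpha>)) + 1))
          \<le> (Cp2 / Cl\<^sup>2 + 2 powr (2 * \<alpha>) / (2 * \<alpha>)) * r\<^sup>2 * ((L / (4 * p)) powr (1 / s)) powr (-2 * \<alpha>)" by (rule P(2))
      also have "\<dots> = Cb * (r\<^sup>2 * L powr (-2 * \<alpha> / s))" by (subst ta) (simp add: Cb_def mult_ac)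
      also have "\<dots> \<le> Cb * e\<^sup>2" using e2 Cb by (intro mult_left_mono) auto
      also have "\<dots> \<le> C * e\<^sup>2" using Ca Cc by (intro mult_right_mono) (auto simp: C_def)
      finally show ?thesis .
    qed
    have Cc': "real n powr (-2 * \<beta>) \<le> Cc * e\<^sup>2"
    proof (cases "L \<le> real n powr s")
      case True
      have "real n powr (-2 * \<beta>) = (real n powr s) powr (-2 * \<beta> / s)" using s0 by (simp add: powr_powr)
      also have "\<dots> \<le> L powr (-2 * \<beta> / s)" using True Lpos b s0 by (intro powr_mono2') (auto simp: divide_nonpos_pos)
      also have "\<dots> \<le> e\<^sup>2" by (rule e1)
      also have "\<dots> \<le> Cc * e\<^sup>2" using Cc by (intro mult_left_le_one_le[THEN order.trans, OF _ _ order_refl] mult_right_mono[of 1 Cc, simplified]) auto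
      finally show ?thesis .
    next
      case False
      have nn: "real n \<le> real n powr s" using powr_mono[of 1 s "real n"] n1 s by simp
      have eLr: "exp L = r\<^sup>2 * real n" using r n1 by (simp add: L_def r_def)
      have q: "L powr (2 * \<alpha> / s) \<le> Cq * exp (1/2 * L)" using Cq(2) Lpos by auto
      have q0: "L powr (2 * \<alpha> / s) > 0" using Lpos by simp
      have nr: "real n \<le> Cr * exp (1/2 * real n)" using Cr(2)[rule_format, of "real n"] n1 by simp
      have "exp (1/2 * real n) \<le> exp (1/2 * L)" using False nn by simp
      then have nr2: "real n \<le> Cr * exp (1/2 * L)" using nr Cr by (meson mult_left_mono order.trans less_imp_le)
      have eh: "exp L = exp (1/2 * L) * exp (1/2 * L)" by (simp add: exp_add[symmetric])
      have "1 \<le> Cq * Cr * (r\<^sup>2 * L powr (-2 * \<alpha> / s))"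
      proof -
        have X: "r\<^sup>2 * L powr (-2 * \<alpha> / s) = exp L / (real n * L powr (2 * \<alpha> / s))"
          using eLr n1 Lpos by (simp add: powr_minus_divide field_simps)
        have "Cq * exp (1/2 * L) * (Cr * exp (1/2 * L)) \<ge> L powr (2 * \<alpha> / s) * real n"
          using q nr2 q0 n1 Cq(1) by (intro mult_mono) auto
        then have Y: "real n * L powr (2 * \<alpha> / s) \<le> Cq * Cr * exp L"
          unfolding eh by (simp add: mult_ac)
        have P0: "real n * L powr (2 * \<alpha> / s) > 0" using n1 q0 by simp
        have "Cq * Cr * (r\<^sup>2 * L powr (-2 * \<alpha> / s)) = (Cq * Cr * exp L) / (real n * L powr (2 * \<alpha> / s))"
          unfolding X by simp
        also have "\<dots> \<ge> 1" using Y P0 by (simp add: le_divide_eq)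
        finally show ?thesis .
      qed
      also have "\<dots> \<le> Cq * Cr * e\<^sup>2" using e2 Cq Cr by (intro mult_left_mono) auto
      finally have "1 \<le> Cq * Cr * e\<^sup>2" .
      moreover have "real n powr (-2 * \<beta>) \<le> 1" using powr_mono[of "-2 * \<beta>" 0 "real n"] n1 b by simp
      ultimately show ?thesis using Cc by (smt (verit) mult_right_mono zero_le_power2 Cc_def max.cobounded2)
    qed
    have Cf: "real n powr (-2 * \<beta>) \<le> C * e\<^sup>2"
      using Cc' Ca Cb by (smt (verit) C_def mult_right_mono zero_le_power2)
    show ?case using A B Cf e0 by (simp add: e_def L_def r_def)
  qed
  then show ?thesis using C by blast
qed


lemma powr_tD:
  fixes L D s x :: real
  assumes L: "L > 0" and D: "D > 0" and s: "s > 0"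
  shows "((L / D) powr (1 / s)) powr x = D powr (- x / s) * L powr (x / s)"
proof -
  have "((L / D) powr (1 / s)) powr x = (L / D) powr (x / s)" by (simp add: powr_powr)
  also have "\<dots> = L powr (x / s) / D powr (x / s)" using L D by (simp add: powr_divide)
  also have "\<dots> = D powr (- x / s) * L powr (x / s)" using D by (simp add: powr_minus_divide field_simps)
  finally show ?thesis .
qed

lemma inv_le:
  fixes P E C :: real
  assumes P0: "P > 0" and E0: "E > 0" and q: "P \<le> C * E"
  shows "1 / E \<le> C * (1 / P)"
proof -
  have "P / E \<le> C" using q E0 by (simp add: divide_le_eq)
  then have "(1 / E) * P \<le> C" by simp
  then have "1 / E \<le> C / P" using P0 by (simp add: le_divide_eq)
  then show ?thesis by simp
qed

lemma R4_point:
  fixes a :: "nat \<Rightarrow> real" and p s \<beta> \<alpha> Cl L Cq Cw Ce :: real and n :: nat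
  assumes p: "p > 0" and s: "s \<ge> 1" and b: "\<beta> > 0" and al: "\<alpha> > 0" and Cl: "Cl > 0"
    and alow: "\<forall>k\<ge>1. Cl * exp (- p * real k powr s) \<le> a k"
    and n: "n \<ge> 1" and Ldef: "L = ln (real n)" and L4: "L \<ge> 4 * p" and L2: "L \<ge> 2 * (2 * p + \<alpha>)"
    and Cq: "\<forall>y\<ge>0. y powr (2 * \<beta> / s) \<le> Cq * exp (1/2 * y)"
    and Cw: "\<forall>y\<ge>0. y powr ((1 + 2 * \<beta>) / s) \<le> Cw * exp (1/2 * y)"
    and Ce: "\<forall>y\<ge>0. y powr (1 + 2 * \<beta>) \<le> Ce * exp (\<alpha> * y)"
    and Cpos: "Cq > 0" "Cw > 0" "Ce > 0"
  shows "\<forall>k\<in>{1..<n}. 1 / (real k powr (2 * \<beta>) * (1 + real n * (a k)\<^sup>2 * exp (- \<alpha> * real k powr s)))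
            \<le> (Cq / Cl\<^sup>2 + (2 * (2 * p + \<alpha>)) powr (2 * \<beta> / s)) * L powr (-2 * \<beta> / s)"
    and "(\<Sum>k\<in>{1..<n}. exp (- \<alpha> * real k powr s) / (real n * (a k)\<^sup>2 * exp (- \<alpha> * real k powr s) + 1))
            \<le> (Cw * (4 * p) powr (- 1 / s) / Cl\<^sup>2 + Ce * (2 powr (2 * \<beta>) / (2 * \<beta>)) * (4 * p) powr (2 * \<beta> / s)) * L powr (-2 * \<beta> / s)"
proof -
  have s0: "s > 0" using s by simp
  have Lpos: "L > 0" using L4 p by simp
  have eL: "exp L = real n" using Ldef n by simp
  have apos: "a k > 0" if "k \<ge> 1" for k
  proof -
    have "Cl * exp (- p * real k powr s) \<le> a k" using alow that by auto
    moreover have "Cl * exp (- p * real k powr s) > 0" using Cl by simp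
    ultimately show ?thesis by linarith
  qed
  have eq: "exp (- (1/2) * L) \<le> Cq * L powr (-2 * \<beta> / s)"
  proof -
    define P where "P = L powr (2 * \<beta> / s)"
    define E where "E = exp (1/2 * L)"
    have q: "P \<le> Cq * E" using Cq Lpos by (auto simp: P_def E_def)
    have P0: "P > 0" using Lpos by (simp add: P_def)
    have E0: "E > 0" by (simp add: E_def)
    have "P / E \<le> Cq" using q E0 by (simp add: divide_le_eq)
    then have "(1 / E) * P \<le> Cq" by simp
    then have "1 / E \<le> Cq / P" using P0 by (simp add: le_divide_eq)
    moreover have "L powr (-2 * \<beta> / s) = 1 / P" using Lpos by (simp add: P_def powr_minus_divide[symmetric])
    moreover have "exp (- (1/2) * L) = 1 / E" by (simp add: E_def exp_minus field_simps)
    ultimately show ?thesis by simp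
  qed
  show "\<forall>k\<in>{1..<n}. 1 / (real k powr (2 * \<beta>) * (1 + real n * (a k)\<^sup>2 * exp (- \<alpha> * real k powr s)))
            \<le> (Cq / Cl\<^sup>2 + (2 * (2 * p + \<alpha>)) powr (2 * \<beta> / s)) * L powr (-2 * \<beta> / s)"
  proof
    fix k assume kk: "k \<in> {1..<n}"
    then have k1: "k \<ge> 1" by simp
    define t where "t = (L / (2 * (2 * p + \<alpha>))) powr (1 / s)"
    have D0: "2 * (2 * p + \<alpha>) > 0" using p al by simp
    have t1: "t \<ge> 1" unfolding t_def using L2 D0 s0 by (intro ge_one_powr_ge_zero) (auto simp: field_simps)
    have ts: "t powr s = L / (2 * (2 * p + \<alpha>))" unfolding t_def using Lpos D0 s0 by (simp add: powr_powr)
    define x where "x = real n * (a k)\<^sup>2 * exp (- \<alpha> * real k powr s)"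
    have x0: "x > 0" using apos[OF k1] n by (simp add: x_def)
    have kb: "real k powr (2 * \<beta>) \<ge> 1" using k1 b by (intro ge_one_powr_ge_zero) auto
    have kb0: "real k powr (2 * \<beta>) > 0" using kb by linarith
    have Lb0: "L powr (-2 * \<beta> / s) > 0" using Lpos by simp
    have "1 / (real k powr (2 * \<beta>) * (1 + x)) \<le> (Cq / Cl\<^sup>2 + (2 * (2 * p + \<alpha>)) powr (2 * \<beta> / s)) * L powr (-2 * \<beta> / s)"
    proof (cases "real k \<le> t")
      case True
      have d: "x \<le> real k powr (2 * \<beta>) * (1 + x)"
      proof -
        have "1 * (1 + x) \<le> real k powr (2 * \<beta>) * (1 + x)" using kb x0 by (intro mult_right_mono) auto
        then show ?thesis by simp
      qed
      have "1 / (real k powr (2 * \<beta>) * (1 + x)) \<le> 1 / x"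
        by (rule divide_left_mono[OF d]) (use x0 kb0 in \<open>auto intro!: mult_pos_pos\<close>)
      also have "1 / x \<le> exp (- (1/2) * L) / Cl\<^sup>2"
      proof -
        have ia: "1 / (a k)\<^sup>2 \<le> exp (2 * p * real k powr s) / Cl\<^sup>2" using inv_a_sq[OF Cl] alow k1 by auto
        have ks: "real k powr s \<le> t powr s" using True k1 s0 by (intro powr_mono2) auto
        have "1 / x = (1 / (a k)\<^sup>2) * exp (\<alpha> * real k powr s) / real n"
          using apos[OF k1] n by (simp add: x_def exp_minus field_simps)
        also have "\<dots> \<le> (exp (2 * p * real k powr s) / Cl\<^sup>2) * exp (\<alpha> * real k powr s) / real n"
          using ia n by (intro divide_right_mono mult_right_mono) auto
        also have "\<dots> = exp ((2 * p + \<alpha>) * real k powr s - L) / Cl\<^sup>2"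
          using eL[symmetric] by (simp add: exp_diff exp_add[symmetric] algebra_simps)
        also have "exp ((2 * p + \<alpha>) * real k powr s - L) \<le> exp (- (1/2) * L)"
        proof -
          have "(2 * p + \<alpha>) * real k powr s \<le> (2 * p + \<alpha>) * (L / (2 * (2 * p + \<alpha>)))"
            using ks ts p al by (intro mult_left_mono) auto
          also have "\<dots> = L / 2" using D0 by (simp add: field_simps)
          finally show ?thesis by simp
        qed
        then have "exp ((2 * p + \<alpha>) * real k powr s - L) / Cl\<^sup>2 \<le> exp (- (1/2) * L) / Cl\<^sup>2"
          by (intro divide_right_mono) auto
        finally show ?thesis .
      qed
      also have "\<dots> \<le> Cq * L powr (-2 * \<beta> / s) / Cl\<^sup>2" using eq by (intro divide_right_mono) auto
      also have "\<dots> \<le> (Cq / Cl\<^sup>2 + (2 * (2 * p + \<alpha>)) powr (2 * \<beta> / s)) * L powr (-2 * \<beta> / s)"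
        using Lb0 by (simp add: field_simps)
      finally show ?thesis .
    next
      case False
      have d2: "real k powr (2 * \<beta>) \<le> real k powr (2 * \<beta>) * (1 + x)"
      proof -
        have "real k powr (2 * \<beta>) * 1 \<le> real k powr (2 * \<beta>) * (1 + x)" using kb x0 by (intro mult_left_mono) auto
        then show ?thesis by simp
      qed
      have "1 / (real k powr (2 * \<beta>) * (1 + x)) \<le> 1 / real k powr (2 * \<beta>)"
        by (rule divide_left_mono[OF d2]) (use x0 kb0 in \<open>auto intro!: mult_pos_pos\<close>)
      also have "\<dots> = real k powr (-2 * \<beta>)" using k1 by (simp add: powr_minus_divide)
      also have "\<dots> \<le> t powr (-2 * \<beta>)" using False t1 b by (intro powr_mono2') auto
      also have "t powr (-2 * \<beta>) = (2 * (2 * p + \<alpha>)) powr (2 * \<beta> / s) * L powr (-2 * \<beta> / s)"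
        unfolding t_def using powr_tD[OF Lpos D0 s0, of "-2 * \<beta>"] by simp
      also have "\<dots> \<le> (Cq / Cl\<^sup>2 + (2 * (2 * p + \<alpha>)) powr (2 * \<beta> / s)) * L powr (-2 * \<beta> / s)"
        using Lb0 Cl Cpos by (intro mult_right_mono) auto
      finally show ?thesis .
    qed
    then show "1 / (real k powr (2 * \<beta>) * (1 + real n * (a k)\<^sup>2 * exp (- \<alpha> * real k powr s)))
            \<le> (Cq / Cl\<^sup>2 + (2 * (2 * p + \<alpha>)) powr (2 * \<beta> / s)) * L powr (-2 * \<beta> / s)"
      by (simp add: x_def)
  qed
  show "(\<Sum>k\<in>{1..<n}. exp (- \<alpha> * real k powr s) / (real n * (a k)\<^sup>2 * exp (- \<alpha> * real k powr s) + 1))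
            \<le> (Cw * (4 * p) powr (- 1 / s) / Cl\<^sup>2 + Ce * (2 powr (2 * \<beta>) / (2 * \<beta>)) * (4 * p) powr (2 * \<beta> / s)) * L powr (-2 * \<beta> / s)"
  proof -
    define t where "t = (L / (4 * p)) powr (1 / s)"
    have D0: "4 * p > 0" using p by simp
    have t1: "t \<ge> 1" unfolding t_def using L4 p s0 by (intro ge_one_powr_ge_zero) (auto simp: field_simps)
    have ts: "t powr s = L / (4 * p)" unfolding t_def using Lpos p s0 by (simp add: powr_powr)
    define h1 where "h1 k = (if real k \<le> t then exp (- (1/2) * L) / Cl\<^sup>2 else 0)" for k :: nat
    define h2 where "h2 k = (if t < real k then Ce * real k powr (-1 - 2 * \<beta>) else 0)" for k :: nat
    have le: "exp (- \<alpha> * real k powr s) / (real n * (a k)\<^sup>2 * exp (- \<alpha> * real k powr s) + 1) \<le> h1 k + h2 k"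
      if kk: "k \<in> {1..<n}" for k
    proof -
      have k1: "k \<ge> 1" using kk by simp
      define lk where "lk = exp (- \<alpha> * real k powr s)"
      have lk0: "lk > 0" by (simp add: lk_def)
      have d0: "real n * (a k)\<^sup>2 * lk > 0" using apos[OF k1] n lk0 by simp
      show ?thesis
      proof (cases "real k \<le> t")
        case True
        have "lk / (real n * (a k)\<^sup>2 * lk + 1) \<le> lk / (real n * (a k)\<^sup>2 * lk)"
          using d0 lk0 by (intro divide_left_mono) auto
        also have "\<dots> = (1 / (a k)\<^sup>2) / real n" using lk0 by simp
        also have "\<dots> \<le> (exp (2 * p * real k powr s) / Cl\<^sup>2) / real n"
          using inv_a_sq[OF Cl] alow k1 n by (intro divide_right_mono) auto
        also have "\<dots> \<le> exp (- (1/2) * L) / Cl\<^sup>2"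
        proof -
          have ks: "real k powr s \<le> t powr s" using True k1 s0 by (intro powr_mono2) auto
          have "exp (2 * p * real k powr s) \<le> exp (1/2 * L)"
          proof -
            have "2 * p * real k powr s \<le> 2 * p * (L / (4 * p))" using ks ts p by (intro mult_left_mono) auto
            then show ?thesis using p by simp
          qed
          then have "(exp (2 * p * real k powr s) / Cl\<^sup>2) / real n \<le> (exp (1/2 * L) / Cl\<^sup>2) / real n"
            using n by (intro divide_right_mono) auto
          also have "(exp (1/2 * L) / Cl\<^sup>2) / real n = exp (- (1/2) * L) / Cl\<^sup>2"
          proof -
            have eh: "exp L = exp (1/2 * L) * exp (1/2 * L)" by (simp add: exp_add[symmetric])
            have em: "exp (- (1/2) * L) = 1 / exp (1/2 * L)" by (simp add: exp_minus field_simps)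
            show ?thesis unfolding eL[symmetric] eh em by (simp add: field_simps)
          qed
          finally show ?thesis .
        qed
        finally show ?thesis unfolding lk_def using True by (simp add: h1_def h2_def)
      next
        case False
        have "lk / (real n * (a k)\<^sup>2 * lk + 1) \<le> lk / 1"
          using d0 lk0 by (intro divide_left_mono) auto
        also have "lk \<le> exp (- \<alpha> * real k)"
          unfolding lk_def using powr_mono[of 1 s "real k"] k1 s al by simp
        also have "exp (- \<alpha> * real k) \<le> Ce * real k powr (-1 - 2 * \<beta>)"
        proof -
          have "real k powr (1 + 2 * \<beta>) \<le> Ce * exp (\<alpha> * real k)" using Ce by simp
          then have "1 / exp (\<alpha> * real k) \<le> Ce * (1 / real k powr (1 + 2 * \<beta>))"
            using k1 by (intro inv_le) auto
          moreover have "real k powr (-1 - 2 * \<beta>) = 1 / real k powr (1 + 2 * \<beta>)"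
            using k1 by (simp add: powr_minus_divide[symmetric])
          moreover have "exp (- \<alpha> * real k) = 1 / exp (\<alpha> * real k)" by (simp add: exp_minus field_simps)
          ultimately show ?thesis by simp
        qed
        finally show ?thesis unfolding lk_def using False by (simp add: h1_def h2_def)
      qed
    qed
    have "(\<Sum>k\<in>{1..<n}. exp (- \<alpha> * real k powr s) / (real n * (a k)\<^sup>2 * exp (- \<alpha> * real k powr s) + 1))
       \<le> (\<Sum>k\<in>{1..<n}. h1 k) + (\<Sum>k\<in>{1..<n}. h2 k)"
      unfolding sum.distrib[symmetric] by (rule sum_mono) (rule le)
    also have "(\<Sum>k\<in>{1..<n}. h1 k) = (\<Sum>k\<in>{k\<in>{1..<n}. real k \<le> t}. exp (- (1/2) * L) / Cl\<^sup>2)"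
      unfolding h1_def by (rule sum.inter_filter[symmetric]) simp
    also have "\<dots> \<le> t * (exp (- (1/2) * L) / Cl\<^sup>2)"
      using t1 by (intro count_sum) auto
    also have "\<dots> \<le> Cw * (4 * p) powr (- 1 / s) / Cl\<^sup>2 * L powr (-2 * \<beta> / s)"
    proof -
      have tt: "t = (4 * p) powr (- 1 / s) * L powr (1 / s)"
        unfolding t_def using powr_tD[OF Lpos D0 s0, of 1] by simp
      have w: "L powr ((1 + 2 * \<beta>) / s) \<le> Cw * exp (1/2 * L)" using Cw Lpos by auto
      have "L powr (1 / s) = L powr ((1 + 2 * \<beta>) / s) * L powr (-2 * \<beta> / s)"
        using Lpos by (simp add: powr_add[symmetric] add_divide_distrib)
      also have "\<dots> \<le> Cw * exp (1/2 * L) * L powr (-2 * \<beta> / s)" using w by (intro mult_right_mono) auto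
      finally have "L powr (1 / s) \<le> Cw * exp (1/2 * L) * L powr (-2 * \<beta> / s)" .
      then have "t * (exp (- (1/2) * L) / Cl\<^sup>2) \<le> (4 * p) powr (- 1 / s) * (Cw * exp (1/2 * L) * L powr (-2 * \<beta> / s)) * (exp (- (1/2) * L) / Cl\<^sup>2)"
        unfolding tt by (intro mult_right_mono mult_left_mono) auto
      also have "\<dots> = Cw * (4 * p) powr (- 1 / s) / Cl\<^sup>2 * L powr (-2 * \<beta> / s) * (exp (1/2 * L) * exp (- (1/2) * L))"
        by (simp add: field_simps)
      also have "exp (1/2 * L) * exp (- (1/2) * L) = 1" by (simp add: exp_add[symmetric])
      finally show ?thesis by simp
    qed
    also have "(\<Sum>k\<in>{1..<n}. h2 k) = Ce * (\<Sum>k\<in>{k\<in>{1..<n}. t < real k}. real k powr (-1 - 2 * \<beta>))"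
      unfolding h2_def sum_distrib_left by (rule sum.inter_filter[symmetric]) simp
    also have "\<dots> \<le> Ce * ((2 powr (2 * \<beta>) / (2 * \<beta>)) * t powr (-(2 * \<beta>)))"
    proof -
      have C0: "Ce \<ge> 0" using Cpos by simp
      show ?thesis using tail_sum[of "2 * \<beta>" t n] b t1 C0 by (intro mult_left_mono) (auto simp: algebra_simps)
    qed
    also have "t powr (-(2 * \<beta>)) = (4 * p) powr (2 * \<beta> / s) * L powr (-2 * \<beta> / s)"
      unfolding t_def using powr_tD[OF Lpos D0 s0, of "-(2 * \<beta>)"] by simp
    finally show ?thesis by (simp add: algebra_simps)
  qed
qed


lemma R4_an:
  fixes a :: "nat \<Rightarrow> real" and p s \<beta> \<alpha> Cl :: real
  assumes p: "p > 0" and s: "s \<ge> 1" and b: "\<beta> > 0" and al: "\<alpha> > 0" and Cl: "Cl > 0"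
    and alow: "\<forall>k\<ge>1. Cl * exp (- p * real k powr s) \<le> a k"
  shows "\<exists>C>0. eventually (\<lambda>n.
      (\<forall>k\<in>{1..<n}. 1 / (real k powr (2 * \<beta>) * (1 + real n * (a k)\<^sup>2 * exp (- \<alpha> * real k powr s)))
          \<le> C * (ln (real n) powr (- \<beta> / s))\<^sup>2)
    \<and> (\<Sum>k\<in>{1..<n}. exp (- \<alpha> * real k powr s) / (real n * (a k)\<^sup>2 * exp (- \<alpha> * real k powr s) + 1))
          \<le> C * (ln (real n) powr (- \<beta> / s))\<^sup>2
    \<and> real n powr (-2 * \<beta>) \<le> C * (ln (real n) powr (- \<beta> / s))\<^sup>2
    \<and> ln (real n) powr (- \<beta> / s) > 0) sequentially"
proof -
  have s0: "s > 0" using s by simp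
  obtain Cq where Cq: "Cq > 0" "\<forall>y::real\<ge>0. y powr (2 * \<beta> / s) \<le> Cq * exp (1/2 * y)"
    using PE[of "2 * \<beta> / s" "1/2"] b s0 by auto
  obtain Cw where Cw: "Cw > 0" "\<forall>y::real\<ge>0. y powr ((1 + 2 * \<beta>) / s) \<le> Cw * exp (1/2 * y)"
    using PE[of "(1 + 2 * \<beta>) / s" "1/2"] b s0 by auto
  obtain Ce where Ce: "Ce > 0" "\<forall>y::real\<ge>0. y powr (1 + 2 * \<beta>) \<le> Ce * exp (\<alpha> * y)"
    using PE[of "1 + 2 * \<beta>" \<alpha>] b al by auto
  define Ca where "Ca = Cq / Cl\<^sup>2 + (2 * (2 * p + \<alpha>)) powr (2 * \<beta> / s)"
  define Cb where "Cb = Cw * (4 * p) powr (- 1 / s) / Cl\<^sup>2 + Ce * (2 powr (2 * \<beta>) / (2 * \<beta>)) * (4 * p) powr (2 * \<beta> / s)"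
  have Ca: "Ca > 0"
  proof -
    have "Cq / Cl\<^sup>2 > 0" using Cq Cl by simp
    moreover have "(2 * (2 * p + \<alpha>)) powr (2 * \<beta> / s) \<ge> 0" by simp
    ultimately show ?thesis unfolding Ca_def by linarith
  qed
  have Cb: "Cb > 0"
  proof -
    have "Cw * (4 * p) powr (- 1 / s) / Cl\<^sup>2 > 0" using Cw Cl p by simp
    moreover have "Ce * (2 powr (2 * \<beta>) / (2 * \<beta>)) * (4 * p) powr (2 * \<beta> / s) \<ge> 0" using Ce b by simp
    ultimately show ?thesis unfolding Cb_def by linarith
  qed
  define C where "C = Ca + Cb + 1"
  have C: "C > 0" using Ca Cb by (simp add: C_def)
  have Llim: "filterlim (\<lambda>n. ln (real n)) at_top sequentially"
    by (rule filterlim_compose[OF ln_at_top filterlim_real_sequentially])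
  have evL: "eventually (\<lambda>n. max (4 * p) (2 * (2 * p + \<alpha>)) \<le> ln (real n)) sequentially"
    using Llim unfolding filterlim_at_top by blast
  have "eventually (\<lambda>n.
      (\<forall>k\<in>{1..<n}. 1 / (real k powr (2 * \<beta>) * (1 + real n * (a k)\<^sup>2 * exp (- \<alpha> * real k powr s)))
          \<le> C * (ln (real n) powr (- \<beta> / s))\<^sup>2)
    \<and> (\<Sum>k\<in>{1..<n}. exp (- \<alpha> * real k powr s) / (real n * (a k)\<^sup>2 * exp (- \<alpha> * real k powr s) + 1))
          \<le> C * (ln (real n) powr (- \<beta> / s))\<^sup>2
    \<and> real n powr (-2 * \<beta>) \<le> C * (ln (real n) powr (- \<beta> / s))\<^sup>2
    \<and> ln (real n) powr (- \<beta> / s) > 0) sequentially"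
    using evL eventually_ge_at_top[of 1]
  proof eventually_elim
    case (elim n)
    define L where "L = ln (real n)"
    have n1: "n \<ge> 1" and L4: "L \<ge> 4 * p" and L2: "L \<ge> 2 * (2 * p + \<alpha>)" using elim by (auto simp: L_def)
    have Lpos: "L > 0" using L4 p by simp
    have sq: "(L powr (- \<beta> / s))\<^sup>2 = L powr (-2 * \<beta> / s)" using Lpos
      by (simp add: power2_eq_square powr_add[symmetric])
    note P = R4_point[OF p s b al Cl alow n1 L_def L4 L2 Cq(2) Cw(2) Ce(2) Cq(1) Cw(1) Ce(1)]
    have Lb0: "L powr (-2 * \<beta> / s) > 0" using Lpos by simp
    have A: "\<forall>k\<in>{1..<n}. 1 / (real k powr (2 * \<beta>) * (1 + real n * (a k)\<^sup>2 * exp (- \<alpha> * real k powr s)))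
          \<le> C * (L powr (- \<beta> / s))\<^sup>2"
    proof
      fix k assume "k \<in> {1..<n}"
      then have "1 / (real k powr (2 * \<beta>) * (1 + real n * (a k)\<^sup>2 * exp (- \<alpha> * real k powr s))) \<le> Ca * L powr (-2 * \<beta> / s)"
        using P(1) by (simp add: Ca_def)
      also have "\<dots> \<le> C * L powr (-2 * \<beta> / s)" using Lb0 Cb by (intro mult_right_mono) (auto simp: C_def)
      finally show "1 / (real k powr (2 * \<beta>) * (1 + real n * (a k)\<^sup>2 * exp (- \<alpha> * real k powr s))) \<le> C * (L powr (- \<beta> / s))\<^sup>2"
        unfolding sq .
    qed
    have B: "(\<Sum>k\<in>{1..<n}. exp (- \<alpha> * real k powr s) / (real n * (a k)\<^sup>2 * exp (- \<alpha> * real k powr s) + 1))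
          \<le> C * (L powr (- \<beta> / s))\<^sup>2"
    proof -
      have "(\<Sum>k\<in>{1..<n}. exp (- \<alpha> * real k powr s) / (real n * (a k)\<^sup>2 * exp (- \<alpha> * real k powr s) + 1))
          \<le> Cb * L powr (-2 * \<beta> / s)" using P(2) by (simp add: Cb_def)
      also have "\<dots> \<le> C * L powr (-2 * \<beta> / s)" using Lb0 Ca by (intro mult_right_mono) (auto simp: C_def)
      finally show ?thesis unfolding sq .
    qed
    have N: "real n powr (-2 * \<beta>) \<le> C * (L powr (- \<beta> / s))\<^sup>2"
    proof -
      have "L \<le> real n" using ln_le_minus_one[of "real n"] n1 by (simp add: L_def)
      also have "real n \<le> real n powr s" using powr_mono[of 1 s "real n"] n1 s by simp
      finally have Ln: "L \<le> real n powr s" .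
      have "real n powr (-2 * \<beta>) = (real n powr s) powr (-2 * \<beta> / s)" using s0 by (simp add: powr_powr)
      also have "\<dots> \<le> L powr (-2 * \<beta> / s)" using Ln Lpos b s0 by (intro powr_mono2') (auto simp: divide_nonpos_pos)
      also have "\<dots> = 1 * L powr (-2 * \<beta> / s)" by simp
      also have "\<dots> \<le> C * L powr (-2 * \<beta> / s)" using Lb0 Ca Cb by (intro mult_right_mono) (auto simp: C_def)
      finally show ?thesis unfolding sq .
    qed
    have E: "L powr (- \<beta> / s) > 0" using Lpos by simp
    show ?case using A B N E by (simp add: L_def)
  qed
  then show ?thesis using C by blast
qed

lemma an_transfer:
  fixes ea eb :: "nat \<Rightarrow> real"
  assumes H: "\<exists>C>0. eventually (\<lambda>n. (\<forall>k\<in>{1..<n}. A n k \<le> C * (ea n)\<^sup>2) \<and> B n \<le> C * (ea n)\<^sup>2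
                  \<and> N n \<le> C * (ea n)\<^sup>2 \<and> ea n > 0) sequentially"
    and le: "eventually (\<lambda>n. ea n \<le> c * eb n) sequentially" and c: "c > 0"
  shows "\<exists>C. eventually (\<lambda>n. (\<forall>k\<in>{1..<n}. A n k \<le> C * (eb n)\<^sup>2) \<and> B n \<le> C * (eb n)\<^sup>2
                  \<and> N n \<le> C * (eb n)\<^sup>2) sequentially"
    and "eventually (\<lambda>n. eb n > 0) sequentially"
proof -
  obtain C where C: "C > 0" and ev: "eventually (\<lambda>n. (\<forall>k\<in>{1..<n}. A n k \<le> C * (ea n)\<^sup>2) \<and> B n \<le> C * (ea n)\<^sup>2
                  \<and> N n \<le> C * (ea n)\<^sup>2 \<and> ea n > 0) sequentially" using H by blast
  have ev2: "eventually (\<lambda>n. (\<forall>k\<in>{1..<n}. A n k \<le> (C * c\<^sup>2) * (eb n)\<^sup>2) \<and> B n \<le> (C * c\<^sup>2) * (eb n)\<^sup>2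
                  \<and> N n \<le> (C * c\<^sup>2) * (eb n)\<^sup>2 \<and> eb n > 0) sequentially"
    using ev le
  proof eventually_elim
    case (elim n)
    have ea: "ea n > 0" using elim by simp
    have "c * eb n > 0" using elim ea by linarith
    then have eb: "eb n > 0" using c by (simp add: zero_less_mult_iff)
    have "(ea n)\<^sup>2 \<le> (c * eb n)\<^sup>2" using elim ea by (intro power_mono) auto
    then have sq: "C * (ea n)\<^sup>2 \<le> (C * c\<^sup>2) * (eb n)\<^sup>2" using C by (simp add: power_mult_distrib mult_ac)
    have a: "\<forall>k\<in>{1..<n}. A n k \<le> (C * c\<^sup>2) * (eb n)\<^sup>2" using elim sq by (auto intro: order.trans[OF _ sq])
    have b: "B n \<le> (C * c\<^sup>2) * (eb n)\<^sup>2" using elim sq by linarith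
    have d: "N n \<le> (C * c\<^sup>2) * (eb n)\<^sup>2" using elim sq by linarith
    show ?case using a b d eb by blast
  qed
  then show "\<exists>C. eventually (\<lambda>n. (\<forall>k\<in>{1..<n}. A n k \<le> C * (eb n)\<^sup>2) \<and> B n \<le> C * (eb n)\<^sup>2
                  \<and> N n \<le> C * (eb n)\<^sup>2) sequentially"
    by (intro exI[of _ "C * c\<^sup>2"]) (auto elim: eventually_mono)
  show "eventually (\<lambda>n. eb n > 0) sequentially" using ev2 by (auto elim: eventually_mono)
qed


context
  fixes a :: "nat \<Rightarrow> real" and \<psi> :: "nat \<Rightarrow> real \<Rightarrow> real" and p s \<beta> :: real
  assumes a_pos: "\<forall>k\<ge>1. a k > 0"
    and design: "design_cond \<psi>"
    and Af_def: "\<forall>f. in_Sb \<beta> f \<longrightarrow> (\<forall>x\<in>{0..1}. summable (\<lambda>j. f (Suc j) * a (Suc j) * \<psi> (Suc j) x))"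
    and p_pos: "p > 0" and s_ge: "s \<ge> 1"
    and a_rate: "a \<in> \<Theta>(\<lambda>k. exp (- p * real k powr s))"
    and beta_pos: "\<beta> > 0"
begin

lemma alow_ex: "\<exists>Cl>0. \<forall>k\<ge>1. Cl * exp (- p * real k powr s) \<le> a k"
  using a_bounds[OF a_pos a_rate] by blast

lemma part1:
  fixes \<alpha> K :: real and \<rho> M :: "nat \<Rightarrow> real"
  assumes al: "\<alpha> > 0" and rho: "\<forall>n. \<rho> n > 0"
    and rlim: "filterlim (\<lambda>n. (\<rho> n)\<^sup>2 * real n) at_top sequentially"
    and K: "K > 0" and Mlim: "filterlim M at_top sequentially"
  shows "contracts a \<psi> \<beta> (\<lambda>n k. (\<rho> n)\<^sup>2 * real k powr (-1 - 2 * \<alpha>))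
            (\<lambda>n. max (ln ((\<rho> n)\<^sup>2 * real n) powr (- \<beta> / s))
                      (\<rho> n * ln ((\<rho> n)\<^sup>2 * real n) powr (- \<alpha> / s))) M K"
proof -
  obtain Cl where Cl: "Cl > 0" and alow: "\<forall>k\<ge>1. Cl * exp (- p * real k powr s) \<le> a k"
    using alow_ex by blast
  obtain C where C: "C > 0" and ev: "eventually (\<lambda>n.
      (\<forall>k\<in>{1..<n}. 1 / (real k powr (2 * \<beta>) * (1 + real n * (a k)\<^sup>2 * ((\<rho> n)\<^sup>2 * real k powr (-1 - 2 * \<alpha>))))
          \<le> C * (max (ln ((\<rho> n)\<^sup>2 * real n) powr (- \<beta> / s)) (\<rho> n * ln ((\<rho> n)\<^sup>2 * real n) powr (- \<alpha> / s)))\<^sup>2)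
    \<and> (\<Sum>k\<in>{1..<n}. ((\<rho> n)\<^sup>2 * real k powr (-1 - 2 * \<alpha>)) / (real n * (a k)\<^sup>2 * ((\<rho> n)\<^sup>2 * real k powr (-1 - 2 * \<alpha>)) + 1))
          \<le> C * (max (ln ((\<rho> n)\<^sup>2 * real n) powr (- \<beta> / s)) (\<rho> n * ln ((\<rho> n)\<^sup>2 * real n) powr (- \<alpha> / s)))\<^sup>2
    \<and> real n powr (-2 * \<beta>) \<le> C * (max (ln ((\<rho> n)\<^sup>2 * real n) powr (- \<beta> / s)) (\<rho> n * ln ((\<rho> n)\<^sup>2 * real n) powr (- \<alpha> / s)))\<^sup>2
    \<and> max (ln ((\<rho> n)\<^sup>2 * real n) powr (- \<beta> / s)) (\<rho> n * ln ((\<rho> n)\<^sup>2 * real n) powr (- \<alpha> / s)) > 0) sequentially"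
    using R1_an[OF p_pos s_ge beta_pos al Cl alow rho rlim] by blast
  show ?thesis
  proof (rule contracts_gen[OF a_pos design Af_def p_pos s_ge a_rate beta_pos K Mlim])
    show "\<forall>n\<ge>2. \<forall>k\<in>{1..<n}. (\<rho> n)\<^sup>2 * real k powr (-1 - 2 * \<alpha>) > 0"
    proof (intro allI impI ballI)
      fix n k :: nat assume "k \<in> {1..<n}"
      then have "real k powr (-1 - 2 * \<alpha>) > 0" by simp
      moreover have "(\<rho> n)\<^sup>2 > 0" using rho[rule_format, of n] by simp
      ultimately show "(\<rho> n)\<^sup>2 * real k powr (-1 - 2 * \<alpha>) > 0" by simp
    qed
    show "eventually (\<lambda>n. max (ln ((\<rho> n)\<^sup>2 * real n) powr (- \<beta> / s)) (\<rho> n * ln ((\<rho> n)\<^sup>2 * real n) powr (- \<alpha> / s)) > 0) sequentially"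
      using ev by (rule eventually_mono) simp
    show "\<exists>C. eventually (\<lambda>n. (\<forall>k\<in>{1..<n}. 1 / (real k powr (2 * \<beta>) * (1 + real n * (a k)\<^sup>2 * ((\<rho> n)\<^sup>2 * real k powr (-1 - 2 * \<alpha>))))
          \<le> C * (max (ln ((\<rho> n)\<^sup>2 * real n) powr (- \<beta> / s)) (\<rho> n * ln ((\<rho> n)\<^sup>2 * real n) powr (- \<alpha> / s)))\<^sup>2)
       \<and> (\<Sum>k\<in>{1..<n}. post_var a (\<lambda>n k. (\<rho> n)\<^sup>2 * real k powr (-1 - 2 * \<alpha>)) n k)
          \<le> C * (max (ln ((\<rho> n)\<^sup>2 * real n) powr (- \<beta> / s)) (\<rho> n * ln ((\<rho> n)\<^sup>2 * real n) powr (- \<alpha> / s)))\<^sup>2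
       \<and> real n powr (-2 * \<beta>) \<le> C * (max (ln ((\<rho> n)\<^sup>2 * real n) powr (- \<beta> / s)) (\<rho> n * ln ((\<rho> n)\<^sup>2 * real n) powr (- \<alpha> / s)))\<^sup>2) sequentially"
      unfolding post_var_def by (rule exI[of _ C]) (use ev in \<open>auto elim: eventually_mono\<close>)
  qed
qed

lemma part4:
  fixes \<alpha> K :: real and M :: "nat \<Rightarrow> real"
  assumes al: "\<alpha> > 0" and K: "K > 0" and Mlim: "filterlim M at_top sequentially"
  shows "contracts a \<psi> \<beta> (\<lambda>n k. exp (- \<alpha> * real k powr s)) (\<lambda>n. ln (real n) powr (- \<beta> / s)) M K"
proof -
  obtain Cl where Cl: "Cl > 0" and alow: "\<forall>k\<ge>1. Cl * exp (- p * real k powr s) \<le> a k"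
    using alow_ex by blast
  obtain C where C: "C > 0" and ev: "eventually (\<lambda>n.
      (\<forall>k\<in>{1..<n}. 1 / (real k powr (2 * \<beta>) * (1 + real n * (a k)\<^sup>2 * exp (- \<alpha> * real k powr s)))
          \<le> C * (ln (real n) powr (- \<beta> / s))\<^sup>2)
    \<and> (\<Sum>k\<in>{1..<n}. exp (- \<alpha> * real k powr s) / (real n * (a k)\<^sup>2 * exp (- \<alpha> * real k powr s) + 1))
          \<le> C * (ln (real n) powr (- \<beta> / s))\<^sup>2
    \<and> real n powr (-2 * \<beta>) \<le> C * (ln (real n) powr (- \<beta> / s))\<^sup>2
    \<and> ln (real n) powr (- \<beta> / s) > 0) sequentially"
    using R4_an[OF p_pos s_ge beta_pos al Cl alow] by blast
  show ?thesis
  proof (rule contracts_gen[OF a_pos design Af_def p_pos s_ge a_rate beta_pos K Mlim])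
    show "\<forall>n\<ge>2. \<forall>k\<in>{1..<n}. exp (- \<alpha> * real k powr s) > 0" by auto
    show "eventually (\<lambda>n. ln (real n) powr (- \<beta> / s) > 0) sequentially"
      using ev by (rule eventually_mono) simp
    show "\<exists>C. eventually (\<lambda>n. (\<forall>k\<in>{1..<n}. 1 / (real k powr (2 * \<beta>) * (1 + real n * (a k)\<^sup>2 * exp (- \<alpha> * real k powr s)))
          \<le> C * (ln (real n) powr (- \<beta> / s))\<^sup>2)
       \<and> (\<Sum>k\<in>{1..<n}. post_var a (\<lambda>n k. exp (- \<alpha> * real k powr s)) n k) \<le> C * (ln (real n) powr (- \<beta> / s))\<^sup>2
       \<and> real n powr (-2 * \<beta>) \<le> C * (ln (real n) powr (- \<beta> / s))\<^sup>2) sequentially"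
      unfolding post_var_def by (rule exI[of _ C]) (use ev in \<open>auto elim: eventually_mono\<close>)
  qed
qed


lemma part_gen:
  fixes \<alpha> K c :: real and \<rho> M eps :: "nat \<Rightarrow> real"
  assumes al: "\<alpha> > 0" and rho: "\<forall>n. \<rho> n > 0"
    and rlim: "filterlim (\<lambda>n. (\<rho> n)\<^sup>2 * real n) at_top sequentially"
    and K: "K > 0" and Mlim: "filterlim M at_top sequentially"
    and c: "c > 0"
    and le: "eventually (\<lambda>n. max (ln ((\<rho> n)\<^sup>2 * real n) powr (- \<beta> / s))
                      (\<rho> n * ln ((\<rho> n)\<^sup>2 * real n) powr (- \<alpha> / s)) \<le> c * eps n) sequentially"
  shows "contracts a \<psi> \<beta> (\<lambda>n k. (\<rho> n)\<^sup>2 * real k powr (-1 - 2 * \<alpha>)) eps M K"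
proof -
  obtain Cl where Cl: "Cl > 0" and alow: "\<forall>k\<ge>1. Cl * exp (- p * real k powr s) \<le> a k"
    using alow_ex by blast
  note H = R1_an[OF p_pos s_ge beta_pos al Cl alow rho rlim]
  note T = an_transfer[where A="\<lambda>n k. 1 / (real k powr (2 * \<beta>) * (1 + real n * (a k)\<^sup>2 * ((\<rho> n)\<^sup>2 * real k powr (-1 - 2 * \<alpha>))))"
      and B="\<lambda>n. (\<Sum>k\<in>{1..<n}. ((\<rho> n)\<^sup>2 * real k powr (-1 - 2 * \<alpha>)) / (real n * (a k)\<^sup>2 * ((\<rho> n)\<^sup>2 * real k powr (-1 - 2 * \<alpha>)) + 1))"
      and N="\<lambda>n. real n powr (-2 * \<beta>)"
      and ea="\<lambda>n. max (ln ((\<rho> n)\<^sup>2 * real n) powr (- \<beta> / s)) (\<rho> n * ln ((\<rho> n)\<^sup>2 * real n) powr (- \<alpha> / s))"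
      and eb=eps, OF H le c]
  show ?thesis
  proof (rule contracts_gen[OF a_pos design Af_def p_pos s_ge a_rate beta_pos K Mlim])
    show "\<forall>n\<ge>2. \<forall>k\<in>{1..<n}. (\<rho> n)\<^sup>2 * real k powr (-1 - 2 * \<alpha>) > 0"
    proof (intro allI impI ballI)
      fix n k :: nat assume "k \<in> {1..<n}"
      then have "real k powr (-1 - 2 * \<alpha>) > 0" by simp
      moreover have "(\<rho> n)\<^sup>2 > 0" using rho[rule_format, of n] by simp
      ultimately show "(\<rho> n)\<^sup>2 * real k powr (-1 - 2 * \<alpha>) > 0" by simp
    qed
    show "eventually (\<lambda>n. eps n > 0) sequentially" by (rule T(2))
    show "\<exists>C. eventually (\<lambda>n. (\<forall>k\<in>{1..<n}. 1 / (real k powr (2 * \<beta>) * (1 + real n * (a k)\<^sup>2 * ((\<rho> n)\<^sup>2 * real k powr (-1 - 2 * \<alpha>))))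
          \<le> C * (eps n)\<^sup>2)
       \<and> (\<Sum>k\<in>{1..<n}. post_var a (\<lambda>n k. (\<rho> n)\<^sup>2 * real k powr (-1 - 2 * \<alpha>)) n k) \<le> C * (eps n)\<^sup>2
       \<and> real n powr (-2 * \<beta>) \<le> C * (eps n)\<^sup>2) sequentially"
      unfolding post_var_def by (rule T(1))
  qed
qed


lemma part2:
  fixes \<alpha> K :: real and M :: "nat \<Rightarrow> real"
  assumes al: "\<alpha> > 0" and K: "K > 0" and Mlim: "filterlim M at_top sequentially"
  shows "contracts a \<psi> \<beta> (\<lambda>n k. real k powr (-1 - 2 * \<alpha>))
            (\<lambda>n. ln (real n) powr (- min \<alpha> \<beta> / s)) M K"
proof -
  have s0: "s > 0" using s_ge by simp
  have eqlam: "(\<lambda>n k. real k powr (-1 - 2 * \<alpha>)) = (\<lambda>n k::nat. ((\<lambda>_::nat. 1::real) n)\<^sup>2 * real k powr (-1 - 2 * \<alpha>))"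
    by simp
  have Llim: "filterlim (\<lambda>n. ln (real n)) at_top sequentially"
    by (rule filterlim_compose[OF ln_at_top filterlim_real_sequentially])
  have ev1: "eventually (\<lambda>n. 1 \<le> ln (real n)) sequentially"
    using Llim unfolding filterlim_at_top by blast
  have le: "eventually (\<lambda>n. max (ln (((\<lambda>_::nat. 1::real) n)\<^sup>2 * real n) powr (- \<beta> / s))
                      ((\<lambda>_::nat. 1::real) n * ln (((\<lambda>_::nat. 1::real) n)\<^sup>2 * real n) powr (- \<alpha> / s))
             \<le> 1 * ln (real n) powr (- min \<alpha> \<beta> / s)) sequentially"
    using ev1
  proof eventually_elim
    case (elim n)
    define L where "L = ln (real n)"
    have L1: "1 \<le> L" using elim by (simp add: L_def)
    have "L powr (- \<beta> / s) \<le> L powr (- min \<alpha> \<beta> / s)"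
      using L1 s0 by (intro powr_mono) (auto intro!: divide_right_mono)
    moreover have "L powr (- \<alpha> / s) \<le> L powr (- min \<alpha> \<beta> / s)"
      using L1 s0 by (intro powr_mono) (auto intro!: divide_right_mono)
    ultimately show ?case by (simp add: L_def)
  qed
  have rlim: "filterlim (\<lambda>n. ((\<lambda>_::nat. 1::real) n)\<^sup>2 * real n) at_top sequentially"
    using filterlim_real_sequentially by simp
  show ?thesis unfolding eqlam
    by (rule part_gen[OF al _ rlim K Mlim _ le]) auto
qed

lemma part3:
  fixes \<alpha> \<delta> K :: real and \<rho> M :: "nat \<Rightarrow> real"
  assumes al: "\<alpha> > 0" and de: "\<delta> > 0" and rho: "\<forall>n. \<rho> n > 0"
    and lo: "\<exists>C>0. \<forall>n\<ge>2. real n powr (-1/2 + \<delta>) \<le> C * \<rho> n"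
    and up: "\<exists>C>0. \<forall>n\<ge>2. \<rho> n \<le> C * ln (real n) powr ((\<alpha> - \<beta>) / s)"
    and K: "K > 0" and Mlim: "filterlim M at_top sequentially"
  shows "contracts a \<psi> \<beta> (\<lambda>n k. (\<rho> n)\<^sup>2 * real k powr (-1 - 2 * \<alpha>))
            (\<lambda>n. ln (real n) powr (- \<beta> / s)) M K"
proof -
  have s0: "s > 0" using s_ge by simp
  obtain C1 where C1: "C1 > 0" "\<forall>n\<ge>2. real n powr (-1/2 + \<delta>) \<le> C1 * \<rho> n" using lo by blast
  obtain C2 where C2: "C2 > 0" "\<forall>n\<ge>2. \<rho> n \<le> C2 * ln (real n) powr ((\<alpha> - \<beta>) / s)" using up by blast
  have Llim: "filterlim (\<lambda>n. ln (real n)) at_top sequentially"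
    by (rule filterlim_compose[OF ln_at_top filterlim_real_sequentially])
  have key: "ln ((\<rho> n)\<^sup>2 * real n) \<ge> 2 * \<delta> * ln (real n) - 2 * ln C1" if n: "n \<ge> 2" for n
  proof -
    have np: "real n > 0" using n by simp
    have r: "real n powr (-1/2 + \<delta>) / C1 \<le> \<rho> n" using C1 n by (simp add: divide_le_eq mult.commute)
    have r0: "real n powr (-1/2 + \<delta>) / C1 > 0" using C1 np by simp
    have "(real n powr (-1/2 + \<delta>) / C1)\<^sup>2 \<le> (\<rho> n)\<^sup>2" using r r0 by (intro power_mono) auto
    then have "(real n powr (-1/2 + \<delta>) / C1)\<^sup>2 * real n \<le> (\<rho> n)\<^sup>2 * real n" using np by (intro mult_right_mono) auto
    moreover have "(real n powr (-1/2 + \<delta>) / C1)\<^sup>2 * real n = real n powr (2 * \<delta>) / C1\<^sup>2"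
    proof -
      have "(real n powr (-1/2 + \<delta>))\<^sup>2 * real n = real n powr (-1/2 + \<delta>) * real n powr (-1/2 + \<delta>) * real n powr 1"
        using np by (simp add: power2_eq_square)
      also have "\<dots> = real n powr ((-1/2 + \<delta>) + (-1/2 + \<delta>) + 1)"
        by (simp only: powr_add[symmetric])
      also have "(-1/2 + \<delta>) + (-1/2 + \<delta>) + 1 = 2 * \<delta>" by simp
      finally show ?thesis by (simp add: power_divide)
    qed
    ultimately have ge: "real n powr (2 * \<delta>) / C1\<^sup>2 \<le> (\<rho> n)\<^sup>2 * real n" by simp
    have gp: "real n powr (2 * \<delta>) / C1\<^sup>2 > 0" using np C1 by simp
    have "ln (real n powr (2 * \<delta>) / C1\<^sup>2) \<le> ln ((\<rho> n)\<^sup>2 * real n)" using ge gp by simp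
    moreover have "ln (real n powr (2 * \<delta>) / C1\<^sup>2) = 2 * \<delta> * ln (real n) - 2 * ln C1"
      using np C1 by (simp add: ln_div ln_powr ln_mult power2_eq_square)
    ultimately show ?thesis by simp
  qed
  have evZ: "eventually (\<lambda>n. max 1 (2 * ln C1 / \<delta>) \<le> ln (real n)) sequentially"
    using Llim unfolding filterlim_at_top by blast
  have evL: "eventually (\<lambda>n. \<delta> * ln (real n) \<le> ln ((\<rho> n)\<^sup>2 * real n) \<and> 1 \<le> ln (real n)) sequentially"
    using evZ eventually_ge_at_top[of 2]
  proof eventually_elim
    case (elim n)
    have "2 * ln C1 / \<delta> \<le> ln (real n)" using elim by simp
    then have "2 * ln C1 \<le> \<delta> * ln (real n)" using de by (simp add: divide_le_eq mult.commute)
    then show ?case using key[of n] elim by auto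
  qed
  have Lr: "filterlim (\<lambda>n. ln ((\<rho> n)\<^sup>2 * real n)) at_top sequentially"
  proof (rule filterlim_at_top_mono)
    show "filterlim (\<lambda>n. \<delta> * ln (real n)) at_top sequentially"
      by (rule filterlim_tendsto_pos_mult_at_top[OF tendsto_const de Llim])
    show "eventually (\<lambda>n. \<delta> * ln (real n) \<le> ln ((\<rho> n)\<^sup>2 * real n)) sequentially"
      using evL by (rule eventually_mono) simp
  qed
  have rlim: "filterlim (\<lambda>n. (\<rho> n)\<^sup>2 * real n) at_top sequentially"
  proof -
    have X: "filterlim (\<lambda>n. exp (ln ((\<rho> n)\<^sup>2 * real n))) at_top sequentially"
      by (rule filterlim_compose[OF exp_at_top Lr])
    have Ev: "eventually (\<lambda>n. exp (ln ((\<rho> n)\<^sup>2 * real n)) = (\<rho> n)\<^sup>2 * real n) sequentially"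
      using eventually_ge_at_top[of 1]
    proof eventually_elim
      case (elim n)
      have "(\<rho> n)\<^sup>2 * real n > 0" using rho[rule_format, of n] elim by simp
      then show ?case by simp
    qed
    show ?thesis using X filterlim_cong[OF refl refl Ev] by blast
  qed
  define c where "c = max (\<delta> powr (- \<beta> / s)) (C2 * \<delta> powr (- \<alpha> / s))"
  have c: "c > 0"
  proof -
    have "\<delta> powr (- \<beta> / s) > 0" using de by simp
    then show ?thesis unfolding c_def using max.cobounded1[of "\<delta> powr (- \<beta> / s)" "C2 * \<delta> powr (- \<alpha> / s)"] by linarith
  qed
  have le: "eventually (\<lambda>n. max (ln ((\<rho> n)\<^sup>2 * real n) powr (- \<beta> / s))
                      (\<rho> n * ln ((\<rho> n)\<^sup>2 * real n) powr (- \<alpha> / s))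
             \<le> c * ln (real n) powr (- \<beta> / s)) sequentially"
    using evL eventually_ge_at_top[of 2]
  proof eventually_elim
    case (elim n)
    define L where "L = ln ((\<rho> n)\<^sup>2 * real n)"
    define L' where "L' = ln (real n)"
    have L1: "1 \<le> L'" and LL: "\<delta> * L' \<le> L" using elim by (auto simp: L_def L'_def)
    have dL: "\<delta> * L' > 0" using L1 de by simp
    have a1: "L powr (- \<beta> / s) \<le> \<delta> powr (- \<beta> / s) * L' powr (- \<beta> / s)"
    proof -
      have "L powr (- \<beta> / s) \<le> (\<delta> * L') powr (- \<beta> / s)"
        using LL dL beta_pos s0 by (intro powr_mono2') (auto simp: divide_nonpos_pos)
      also have "\<dots> = \<delta> powr (- \<beta> / s) * L' powr (- \<beta> / s)" using de L1 by (simp add: powr_mult)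
      finally show ?thesis .
    qed
    have a2: "\<rho> n * L powr (- \<alpha> / s) \<le> C2 * \<delta> powr (- \<alpha> / s) * L' powr (- \<beta> / s)"
    proof -
      have r: "\<rho> n \<le> C2 * L' powr ((\<alpha> - \<beta>) / s)" using C2 elim by (simp add: L'_def)
      have l: "L powr (- \<alpha> / s) \<le> \<delta> powr (- \<alpha> / s) * L' powr (- \<alpha> / s)"
      proof -
        have "L powr (- \<alpha> / s) \<le> (\<delta> * L') powr (- \<alpha> / s)"
          using LL dL al s0 by (intro powr_mono2') (auto simp: divide_nonpos_pos)
        also have "\<dots> = \<delta> powr (- \<alpha> / s) * L' powr (- \<alpha> / s)" using de L1 by (simp add: powr_mult)
        finally show ?thesis .
      qed
      have "\<rho> n * L powr (- \<alpha> / s) \<le> (C2 * L' powr ((\<alpha> - \<beta>) / s)) * (\<delta> powr (- \<alpha> / s) * L' powr (- \<alpha> / s))"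
        using r l rho C2(1) by (intro mult_mono) (auto intro: less_imp_le)
      also have "\<dots> = C2 * \<delta> powr (- \<alpha> / s) * (L' powr ((\<alpha> - \<beta>) / s) * L' powr (- \<alpha> / s))" by (simp add: mult_ac)
      also have "L' powr ((\<alpha> - \<beta>) / s) * L' powr (- \<alpha> / s) = L' powr (- \<beta> / s)"
        using L1 by (simp add: powr_add[symmetric] diff_divide_distrib)
      finally show ?thesis .
    qed
    have Lb: "L' powr (- \<beta> / s) \<ge> 0" by simp
    have m1: "\<delta> powr (- \<beta> / s) * L' powr (- \<beta> / s) \<le> c * L' powr (- \<beta> / s)"
      using Lb by (intro mult_right_mono) (auto simp: c_def)
    have m2: "C2 * \<delta> powr (- \<alpha> / s) * L' powr (- \<beta> / s) \<le> c * L' powr (- \<beta> / s)"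
      using Lb by (intro mult_right_mono) (auto simp: c_def)
    have "L powr (- \<beta> / s) \<le> c * L' powr (- \<beta> / s)" using a1 m1 by linarith
    moreover have "\<rho> n * L powr (- \<alpha> / s) \<le> c * L' powr (- \<beta> / s)" using a2 m2 by linarith
    ultimately show ?case by (simp add: L_def L'_def)
  qed
  show ?thesis by (rule part_gen[OF al rho rlim K Mlim c le])
qed

end


theorem mainTheorem3:
  fixes a :: "nat \<Rightarrow> real" and \<psi> :: "nat \<Rightarrow> real \<Rightarrow> real" and p s \<beta> :: real
  assumes a_pos: "\<forall>k\<ge>1. a k > 0"
    and design: "design_cond \<psi>"
    and Af_def: "\<forall>f. in_Sb \<beta> f \<longrightarrow> (\<forall>x\<in>{0..1}. summable (\<lambda>j. f (Suc j) * a (Suc j) * \<psi> (Suc j) x))"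
    and p_pos: "p > 0" and s_ge: "s \<ge> 1"
    and a_rate: "a \<in> \<Theta>(\<lambda>k. exp (- p * real k powr s))"
    and beta_pos: "\<beta> > 0"
  shows
    "(\<forall>\<alpha>>0. \<forall>\<rho> :: nat \<Rightarrow> real. (\<forall>n. \<rho> n > 0) \<longrightarrow>
        filterlim (\<lambda>n. (\<rho> n)\<^sup>2 * real n) at_top sequentially \<longrightarrow>
        (\<forall>K>0. \<forall>M :: nat \<Rightarrow> real. filterlim M at_top sequentially \<longrightarrow>
          contracts a \<psi> \<beta> (\<lambda>n k. (\<rho> n)\<^sup>2 * real k powr (-1 - 2 * \<alpha>))
            (\<lambda>n. max (ln ((\<rho> n)\<^sup>2 * real n) powr (- \<beta> / s))
                      (\<rho> n * ln ((\<rho> n)\<^sup>2 * real n) powr (- \<alpha> / s))) M K))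
   \<and> (\<forall>\<alpha>>0. \<forall>K>0. \<forall>M :: nat \<Rightarrow> real. filterlim M at_top sequentially \<longrightarrow>
          contracts a \<psi> \<beta> (\<lambda>n k. real k powr (-1 - 2 * \<alpha>))
            (\<lambda>n. ln (real n) powr (- min \<alpha> \<beta> / s)) M K)
   \<and> (\<forall>\<alpha>>0. \<forall>\<rho> :: nat \<Rightarrow> real. \<forall>\<delta>>0. (\<forall>n. \<rho> n > 0) \<longrightarrow>
        (\<exists>C>0. \<forall>n\<ge>2. real n powr (-1/2 + \<delta>) \<le> C * \<rho> n) \<longrightarrow>
        (\<exists>C>0. \<forall>n\<ge>2. \<rho> n \<le> C * ln (real n) powr ((\<alpha> - \<beta>) / s)) \<longrightarrow>
        (\<forall>K>0. \<forall>M :: nat \<Rightarrow> real. filterlim M at_top sequentially \<longrightarrow>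
          contracts a \<psi> \<beta> (\<lambda>n k. (\<rho> n)\<^sup>2 * real k powr (-1 - 2 * \<alpha>))
            (\<lambda>n. ln (real n) powr (- \<beta> / s)) M K))
   \<and> (\<forall>\<alpha>>0. \<forall>K>0. \<forall>M :: nat \<Rightarrow> real. filterlim M at_top sequentially \<longrightarrow>
          contracts a \<psi> \<beta> (\<lambda>n k. exp (- \<alpha> * real k powr s))
            (\<lambda>n. ln (real n) powr (- \<beta> / s)) M K)"
    apply (intro conjI allI impI)
     apply (rule part1[OF a_pos design Af_def p_pos s_ge a_rate beta_pos]; assumption)
    apply (rule part2[OF a_pos design Af_def p_pos s_ge a_rate beta_pos]; assumption)
   apply (rule part3[OF a_pos design Af_def p_pos s_ge a_rate beta_pos]; assumption)
  apply (rule part4[OF a_pos design Af_def p_pos s_ge a_rate beta_pos]; assumption)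
  done

end
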